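(* Let $G$ be a GP 2 host graph (node labels arbitrary lists) such that every node is marked grey, exactly one node $r$ is a root, every edge is unmarked and labelled with an integer (its weight), and there are no loops. Then the execution of the GP 2 program bellman-ford on $G$ terminates, and: if $G$ contains a directed cycle whose sum of edge labels is negative and which is reachable by a directed path from $r$, the program fails; otherwise it returns the graph obtained from $G$ by (1) appending to the label of each node $v$ reachable from $r$ by a directed path the minimum, over all directed paths from $r$ to $v$, of the sum of the edge labels along the path (this is $0$ for $v=r$), (2) appending the string "f" to the label of every other node, and (3) marking all edges blue.
   Context: GP 2 semantics. Host graphs are finite directed graphs whose nodes and edges carry labels (lists of integers and strings; "x:s" denotes the list x followed by the atom s) and marks (nodes: unmarked, red, green, blue, grey; edges: unmarked, red, green, blue, dashed); some nodes are roots. A rule (with typed variables, here list variables x,y and integer variables i,s,t,w) is applied by finding an injective match of its left-hand side compatible with labels (for some instantiation of variables of the right types) and marks (mark "any" matches every mark; roots match roots), satisfying the dangling condition (a left-hand node that is not kept must have no incident edges outside the match) and the rule's condition, then deleting/changing/adding items as prescribed by the right-hand side. Commands: a rule set call $\{r_1,\dots,r_k\}$ applies one applicable rule, failing if none applies; $P;Q$ sequencing (failure of $P$ or $Q$ makes $P;Q$ fail); $P!$ iterates $P$ until it fails, returning the graph on which $P$ was last entered; "try $C$ then $P$ else $Q$" runs $C$ and continues with $P$ on its result if it succeeded, else $Q$ on the original graph (missing branches do nothing); "if $C$ then $P$ else $Q$" runs $C$ on a copy then $P$ (if $C$ succeeded) or $Q$ on the original; fail causes failure. The program bellman-ford: Main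 = set_counter; count!; (decrement; Relax!; Clean!)!; Final Relax = root1; try no_deg else ((unmarked_edge; try {unvisited, reduce}; finish)!; unroot1) Clean = root2; unmark_edge!; unroot2 Final = (root1; (unmarked_edge; if reduce then set_flag; finish)!; unroot1)!; if flag then fail; delete_counter; no_deg_inv! Rules (edges directed from node 1 to node 2; labels unchanged unless stated): - set_counter(x): a grey root labelled x becomes a blue non-root labelled x:0; a new green non-root node labelled 0 is created, with a new dashed edge (empty label) from it to node 1. - count(x; i): a grey node 1 labelled x and a green node 2 labelled i; node 1 becomes blue labelled x:"f", node 2 gets label i+1. - decrement(i): a green node labelled i, where i>0; its label becomes i−1. - root1(x): a blue node becomes a blue root. - no_deg(x): a blue root labelled x is deleted (so by the dangling condition only if it has no incident edges) and replaced by an unmarked non-root node labelled x. - unmarked_edge: blue root 1, node 2 of any mark, unmarked edge 1→2; the edge becomes red. - unvisited(x,y; s,w): blue root 1 labelled x:s, node 2 (any mark) labelled y:"f", red edge 1→2 labelled w; node 2's label becomes y:(s+w). - reduce(x,y; s,t,w): blue root 1 labelled x:s, node 2 (any mark) labelled y:t, red edge 1→2 labelled w, condition s+w<t; node 2's label becomes y:(s+w). - finish: blue root 1, node 2 any mark, red edge 1→2; edge becomes blue. - unroot1: blue root becomes a grey non-root. - root2: grey node becomes a blue root. - unmark_edge: blue root 1, node 2 any mark, blue edge 1→2; edge becomes unmarked. - unroot2: blue root becomes a blue non-root. - set_flag(x): a green node; its label becomes −1. - flag(): a green node labelled −1; no change (test). - delete_counter(x,y): a grey node 1 labelled x, a green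 node labelled y and a dashed edge from the green node to node 1; the green node and dashed edge are deleted and node 1 becomes a grey root. - no_deg_inv(x): an unmarked node becomes grey. *)

theory Defs
  imports Main
begin

datatype atom = AInt int | AStr string
type_synonym label = "atom list"

datatype nmark = NUnmarked | NRed | NGreen | NBlue | NGrey
datatype emark = EUnmarked | ERed | EGreen | EBlue | EDashed

text \<open>A host graph. Items are natural numbers; the functions are only relevant
  on the node set / edge set (values outside are junk and ignored by isomorphism).\<close>
record hgraph =
  nodes :: "nat set"
  edges :: "nat set"
  src :: "nat \<Rightarrow> nat"
  tgt :: "nat \<Rightarrow> nat"
  nlab :: "nat \<Rightarrow> label"
  nmark :: "nat \<Rightarrow> nmark"
  isroot :: "nat \<Rightarrow> bool"
  elab :: "nat \<Rightarrow> label"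
  emark :: "nat \<Rightarrow> emark"

definition wf_hgraph :: "hgraph \<Rightarrow> bool" where
  "wf_hgraph G \<longleftrightarrow> finite (nodes G) \<and> finite (edges G) \<and>
     (\<forall>e\<in>edges G. src G e \<in> nodes G \<and> tgt G e \<in> nodes G)"

definition iso :: "hgraph \<Rightarrow> hgraph \<Rightarrow> bool" where
  "iso G H \<longleftrightarrow> (\<exists>f g. bij_betw f (nodes G) (nodes H) \<and> bij_betw g (edges G) (edges H) \<and>
     (\<forall>e\<in>edges G. src H (g e) = f (src G e) \<and> tgt H (g e) = f (tgt G e) \<and>
                    elab H (g e) = elab G e \<and> emark H (g e) = emark G e) \<and>
     (\<forall>v\<in>nodes G. nlab H (f v) = nlab G v \<and> nmark H (f v) = nmark G v \<and>
                    isroot H (f v) = isroot G v))"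

datatype rule =
  set_counter | count | decrement | root1 | no_deg | unmarked_edge | unvisited | reduce
  | finish | unroot1 | root2 | unmark_edge | unroot2 | set_flag | flag | delete_counter
  | no_deg_inv

text \<open>Matches are injective (distinct rule nodes are distinct host nodes), respect marks
  ("any" = no constraint), rule roots match only roots, and satisfy the dangling condition.
  Unmentioned labels are list variables (match anything, kept unchanged).\<close>
fun apply_rule :: "rule \<Rightarrow> hgraph \<Rightarrow> hgraph \<Rightarrow> bool" where
  "apply_rule set_counter G H = (\<exists>n m d. n \<in> nodes G \<and> nmark G n = NGrey \<and> isroot G n \<and>
      m \<notin> nodes G \<and> d \<notin> edges G \<and>
      H = G\<lparr>nodes := insert m (nodes G), edges := insert d (edges G),
            src := (src G)(d := m), tgt := (tgt G)(d := n),
            nlab := (nlab G)(n := nlab G n @ [AInt 0], m := [AInt 0]),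
            nmark := (nmark G)(n := NBlue, m := NGreen),
            isroot := (isroot G)(n := False, m := False),
            elab := (elab G)(d := []), emark := (emark G)(d := EDashed)\<rparr>)"
| "apply_rule count G H = (\<exists>n m i. n \<in> nodes G \<and> m \<in> nodes G \<and> n \<noteq> m \<and>
      nmark G n = NGrey \<and> nmark G m = NGreen \<and> nlab G m = [AInt i] \<and>
      H = G\<lparr>nlab := (nlab G)(n := nlab G n @ [AStr ''f''], m := [AInt (i + 1)]),
            nmark := (nmark G)(n := NBlue)\<rparr>)"
| "apply_rule decrement G H = (\<exists>n i. n \<in> nodes G \<and> nmark G n = NGreen \<and>
      nlab G n = [AInt i] \<and> i > 0 \<and>
      H = G\<lparr>nlab := (nlab G)(n := [AInt (i - 1)])\<rparr>)"
| "apply_rule root1 G H = (\<exists>n. n \<in> nodes G \<and> nmark G n = NBlue \<and>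
      H = G\<lparr>isroot := (isroot G)(n := True)\<rparr>)"
| "apply_rule no_deg G H = (\<exists>n m. n \<in> nodes G \<and> nmark G n = NBlue \<and> isroot G n \<and>
      (\<forall>e\<in>edges G. src G e \<noteq> n \<and> tgt G e \<noteq> n) \<and> m \<notin> nodes G - {n} \<and>
      H = G\<lparr>nodes := insert m (nodes G - {n}), nlab := (nlab G)(m := nlab G n),
            nmark := (nmark G)(m := NUnmarked), isroot := (isroot G)(m := False)\<rparr>)"
| "apply_rule unmarked_edge G H = (\<exists>n m e. n \<in> nodes G \<and> m \<in> nodes G \<and> n \<noteq> m \<and>
      e \<in> edges G \<and> src G e = n \<and> tgt G e = m \<and> nmark G n = NBlue \<and> isroot G n \<and>
      emark G e = EUnmarked \<and> H = G\<lparr>emark := (emark G)(e := ERed)\<rparr>)"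
| "apply_rule unvisited G H = (\<exists>n m e x y s w. n \<in> nodes G \<and> m \<in> nodes G \<and> n \<noteq> m \<and>
      e \<in> edges G \<and> src G e = n \<and> tgt G e = m \<and> nmark G n = NBlue \<and> isroot G n \<and>
      emark G e = ERed \<and> nlab G n = x @ [AInt s] \<and> nlab G m = y @ [AStr ''f''] \<and>
      elab G e = [AInt w] \<and> H = G\<lparr>nlab := (nlab G)(m := y @ [AInt (s + w)])\<rparr>)"
| "apply_rule reduce G H = (\<exists>n m e x y s t w. n \<in> nodes G \<and> m \<in> nodes G \<and> n \<noteq> m \<and>
      e \<in> edges G \<and> src G e = n \<and> tgt G e = m \<and> nmark G n = NBlue \<and> isroot G n \<and>
      emark G e = ERed \<and> nlab G n = x @ [AInt s] \<and> nlab G m = y @ [AInt t] \<and>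
      elab G e = [AInt w] \<and> s + w < t \<and> H = G\<lparr>nlab := (nlab G)(m := y @ [AInt (s + w)])\<rparr>)"
| "apply_rule finish G H = (\<exists>n m e. n \<in> nodes G \<and> m \<in> nodes G \<and> n \<noteq> m \<and>
      e \<in> edges G \<and> src G e = n \<and> tgt G e = m \<and> nmark G n = NBlue \<and> isroot G n \<and>
      emark G e = ERed \<and> H = G\<lparr>emark := (emark G)(e := EBlue)\<rparr>)"
| "apply_rule unroot1 G H = (\<exists>n. n \<in> nodes G \<and> nmark G n = NBlue \<and> isroot G n \<and>
      H = G\<lparr>nmark := (nmark G)(n := NGrey), isroot := (isroot G)(n := False)\<rparr>)"
| "apply_rule root2 G H = (\<exists>n. n \<in> nodes G \<and> nmark G n = NGrey \<and>
      H = G\<lparr>nmark := (nmark G)(n := NBlue), isroot := (isroot G)(n := True)\<rparr>)"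
| "apply_rule unmark_edge G H = (\<exists>n m e. n \<in> nodes G \<and> m \<in> nodes G \<and> n \<noteq> m \<and>
      e \<in> edges G \<and> src G e = n \<and> tgt G e = m \<and> nmark G n = NBlue \<and> isroot G n \<and>
      emark G e = EBlue \<and> H = G\<lparr>emark := (emark G)(e := EUnmarked)\<rparr>)"
| "apply_rule unroot2 G H = (\<exists>n. n \<in> nodes G \<and> nmark G n = NBlue \<and> isroot G n \<and>
      H = G\<lparr>isroot := (isroot G)(n := False)\<rparr>)"
| "apply_rule set_flag G H = (\<exists>n. n \<in> nodes G \<and> nmark G n = NGreen \<and>
      H = G\<lparr>nlab := (nlab G)(n := [AInt (-1)])\<rparr>)"
| "apply_rule flag G H = (\<exists>n. n \<in> nodes G \<and> nmark G n = NGreen \<and>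
      nlab G n = [AInt (-1)] \<and> H = G)"
| "apply_rule delete_counter G H = (\<exists>n m d. n \<in> nodes G \<and> m \<in> nodes G \<and> n \<noteq> m \<and>
      d \<in> edges G \<and> src G d = m \<and> tgt G d = n \<and> nmark G n = NGrey \<and> nmark G m = NGreen \<and>
      emark G d = EDashed \<and> (\<forall>e\<in>edges G. (src G e = m \<or> tgt G e = m) \<longrightarrow> e = d) \<and>
      H = G\<lparr>nodes := nodes G - {m}, edges := edges G - {d},
            isroot := (isroot G)(n := True)\<rparr>)"
| "apply_rule no_deg_inv G H = (\<exists>n. n \<in> nodes G \<and> nmark G n = NUnmarked \<and>
      H = G\<lparr>nmark := (nmark G)(n := NGrey)\<rparr>)"

datatype cmd = Call "rule list" | Seq cmd cmd | Loop cmd | Try cmd cmd cmd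
  | If cmd cmd cmd | Skip | FailC

datatype result = Ok hgraph | Fail

inductive exec :: "cmd \<Rightarrow> hgraph \<Rightarrow> result \<Rightarrow> bool" where
  call_ok: "r \<in> set rs \<Longrightarrow> apply_rule r G H \<Longrightarrow> exec (Call rs) G (Ok H)"
| call_fail: "(\<forall>r\<in>set rs. \<not> (\<exists>H. apply_rule r G H)) \<Longrightarrow> exec (Call rs) G Fail"
| skip: "exec Skip G (Ok G)"
| failc: "exec FailC G Fail"
| seq_ok: "exec P G (Ok H) \<Longrightarrow> exec Q H R \<Longrightarrow> exec (Seq P Q) G R"
| seq_fail: "exec P G Fail \<Longrightarrow> exec (Seq P Q) G Fail"
| loop_step: "exec P G (Ok H) \<Longrightarrow> exec (Loop P) H R \<Longrightarrow> exec (Loop P) G R"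
| loop_end: "exec P G Fail \<Longrightarrow> exec (Loop P) G (Ok G)"
| try_ok: "exec C G (Ok H) \<Longrightarrow> exec P H R \<Longrightarrow> exec (Try C P Q) G R"
| try_fail: "exec C G Fail \<Longrightarrow> exec Q G R \<Longrightarrow> exec (Try C P Q) G R"
| if_ok: "exec C G (Ok H) \<Longrightarrow> exec P G R \<Longrightarrow> exec (If C P Q) G R"
| if_fail: "exec C G Fail \<Longrightarrow> exec Q G R \<Longrightarrow> exec (If C P Q) G R"

text \<open>Termination: every execution of P on G is finite (no divergent computation).\<close>
inductive terminates :: "cmd \<Rightarrow> hgraph \<Rightarrow> bool" where
  "terminates (Call rs) G"
| "terminates Skip G"
| "terminates FailC G"
| "terminates P G \<Longrightarrow> (\<forall>H. exec P G (Ok H) \<longrightarrow> terminates Q H) \<Longrightarrow> terminates (Seq P Q) G"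
| "terminates P G \<Longrightarrow> (\<forall>H. exec P G (Ok H) \<longrightarrow> terminates (Loop P) H) \<Longrightarrow> terminates (Loop P) G"
| "terminates C G \<Longrightarrow> (\<forall>H. exec C G (Ok H) \<longrightarrow> terminates P H) \<Longrightarrow>
     (exec C G Fail \<longrightarrow> terminates Q G) \<Longrightarrow> terminates (Try C P Q) G"
| "terminates C G \<Longrightarrow> ((\<exists>H. exec C G (Ok H)) \<longrightarrow> terminates P G) \<Longrightarrow>
     (exec C G Fail \<longrightarrow> terminates Q G) \<Longrightarrow> terminates (If C P Q) G"

abbreviation R :: "rule \<Rightarrow> cmd" where "R r \<equiv> Call [r]"

definition Relax :: cmd where
  "Relax = Seq (R root1)
     (Try (R no_deg) Skip
        (Seq (Loop (Seq (R unmarked_edge)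
                        (Seq (Try (Call [unvisited, reduce]) Skip Skip) (R finish))))
             (R unroot1)))"

definition Clean :: cmd where
  "Clean = Seq (R root2) (Seq (Loop (R unmark_edge)) (R unroot2))"

definition Final :: cmd where
  "Final = Seq (Loop (Seq (R root1)
                   (Seq (Loop (Seq (R unmarked_edge) (Seq (If (R reduce) (R set_flag) Skip) (R finish))))
                        (R unroot1))))
           (Seq (If (R flag) FailC Skip)
                (Seq (R delete_counter) (Loop (R no_deg_inv))))"

definition bellman_ford :: cmd where
  "bellman_ford = Seq (R set_counter) (Seq (Loop (R count))
      (Seq (Loop (Seq (R decrement) (Seq (Loop Relax) (Loop Clean)))) Final))"

definition wt :: "hgraph \<Rightarrow> nat \<Rightarrow> int" where
  "wt G e = (case elab G e of [AInt w] \<Rightarrow> w | _ \<Rightarrow> 0)"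

fun walk :: "hgraph \<Rightarrow> nat \<Rightarrow> nat list \<Rightarrow> nat \<Rightarrow> bool" where
  "walk G u [] v = (u \<in> nodes G \<and> u = v)"
| "walk G u (e # es) v = (u \<in> nodes G \<and> e \<in> edges G \<and> src G e = u \<and> walk G (tgt G e) es v)"

definition dpath :: "hgraph \<Rightarrow> nat \<Rightarrow> nat list \<Rightarrow> nat \<Rightarrow> bool" where
  "dpath G u es v \<longleftrightarrow> walk G u es v \<and> distinct (u # map (tgt G) es)"

definition dcycle :: "hgraph \<Rightarrow> nat \<Rightarrow> nat list \<Rightarrow> bool" where
  "dcycle G u es \<longleftrightarrow> es \<noteq> [] \<and> walk G u es u \<and> distinct (map (tgt G) es)"

definition reachable :: "hgraph \<Rightarrow> nat \<Rightarrow> nat \<Rightarrow> bool" where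
  "reachable G r v \<longleftrightarrow> (\<exists>es. dpath G r es v)"

definition path_weight :: "hgraph \<Rightarrow> nat list \<Rightarrow> int" where
  "path_weight G es = sum_list (map (wt G) es)"

definition neg_cycle_reachable :: "hgraph \<Rightarrow> nat \<Rightarrow> bool" where
  "neg_cycle_reachable G r \<longleftrightarrow>
     (\<exists>u es. dcycle G u es \<and> path_weight G es < 0 \<and> reachable G r u)"

definition dist :: "hgraph \<Rightarrow> nat \<Rightarrow> nat \<Rightarrow> int" where
  "dist G r v = Min {path_weight G es | es. dpath G r es v}"

definition bf_output :: "hgraph \<Rightarrow> nat \<Rightarrow> hgraph" where
  "bf_output G r = G\<lparr>nlab := (\<lambda>v. if reachable G r v then nlab G v @ [AInt (dist G r v)]
                                    else nlab G v @ [AStr ''f'']),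
                     emark := (\<lambda>e. EBlue)\<rparr>"

end

theory Submission
  imports Defs
begin
definition hoare :: "(hgraph \<Rightarrow> bool) \<Rightarrow> cmd \<Rightarrow> (result \<Rightarrow> bool) \<Rightarrow> bool" where
  "hoare P c Q \<longleftrightarrow> (\<forall>G. P G \<longrightarrow> terminates c G \<and> (\<exists>Res. exec c G Res) \<and> (\<forall>Res. exec c G Res \<longrightarrow> Q Res))"

inductive_cases exec_CallE: "exec (Call rs) G Res"
inductive_cases exec_SkipE: "exec Skip G Res"
inductive_cases exec_FailE: "exec FailC G Res"
inductive_cases exec_SeqE: "exec (Seq P Q) G Res"
inductive_cases exec_LoopE: "exec (Loop P) G Res"
inductive_cases exec_TryE: "exec (Try C P Q) G Res"
inductive_cases exec_IfE: "exec (If C P Q) G Res"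

lemma hoare_call:
  assumes "\<And>G. P G \<Longrightarrow> (\<forall>r\<in>set rs. \<forall>H. apply_rule r G H \<longrightarrow> Q (Ok H)) \<and>
      ((\<forall>r\<in>set rs. \<not> (\<exists>H. apply_rule r G H)) \<longrightarrow> Q Fail)"
  shows "hoare P (Call rs) Q"
  unfolding hoare_def
proof (intro allI impI, intro conjI)
  fix G assume "P G"
  show "terminates (Call rs) G" by (rule terminates.intros)
  show "\<exists>Res. exec (Call rs) G Res"
    by (cases "\<exists>r\<in>set rs. \<exists>H. apply_rule r G H") (auto intro: exec.intros)
  show "\<forall>Res. exec (Call rs) G Res \<longrightarrow> Q Res"
    using assms[OF \<open>P G\<close>] by (auto elim!: exec_CallE)
qed

lemma hoare_call1:
  assumes "\<And>G. P G \<Longrightarrow> (\<forall>H. apply_rule r G H \<longrightarrow> Q (Ok H)) \<and>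
      ((\<not> (\<exists>H. apply_rule r G H)) \<longrightarrow> Q Fail)"
  shows "hoare P (Call [r]) Q"
  using assms by (intro hoare_call) auto

lemma hoare_skip:
  assumes "\<And>G. P G \<Longrightarrow> Q (Ok G)"
  shows "hoare P Skip Q"
  using assms unfolding hoare_def by (auto intro: exec.intros terminates.intros elim: exec_SkipE)

lemma hoare_failc:
  assumes "\<And>G. P G \<Longrightarrow> Q Fail"
  shows "hoare P FailC Q"
  using assms unfolding hoare_def by (auto intro: exec.intros terminates.intros elim: exec_FailE)

lemma hoare_seq:
  assumes 1: "hoare P c1 (\<lambda>Res. case Res of Ok H \<Rightarrow> M H | Fail \<Rightarrow> Q Fail)"
    and 2: "hoare M c2 Q"
  shows "hoare P (Seq c1 c2) Q"
  unfolding hoare_def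
proof (intro allI impI, intro conjI)
  fix G assume "P G"
  then have a: "terminates c1 G" "\<exists>Res. exec c1 G Res"
    "\<And>Res. exec c1 G Res \<Longrightarrow> (case Res of Ok H \<Rightarrow> M H | Fail \<Rightarrow> Q Fail)"
    using 1 unfolding hoare_def by blast+
  have b: "\<And>H. M H \<Longrightarrow> terminates c2 H \<and> (\<exists>Res. exec c2 H Res) \<and> (\<forall>Res. exec c2 H Res \<longrightarrow> Q Res)"
    using 2 unfolding hoare_def by blast
  show "terminates (Seq c1 c2) G"
    using a b by (force intro: terminates.intros)
  show "\<exists>Res. exec (Seq c1 c2) G Res"
  proof -
    obtain Res where Res: "exec c1 G Res" using a by blast
    show ?thesis
    proof (cases Res)
      case (Ok H)
      then have "M H" using a(3)[OF Res] by simp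
      then obtain Res' where "exec c2 H Res'" using b by blast
      then show ?thesis using Res Ok by (blast intro: exec.intros)
    next
      case Fail
      then show ?thesis using Res by (blast intro: exec.intros)
    qed
  qed
  show "\<forall>Res. exec (Seq c1 c2) G Res \<longrightarrow> Q Res"
  proof (intro allI impI)
    fix Res assume "exec (Seq c1 c2) G Res"
    then show "Q Res"
      by (rule exec_SeqE) (use a(3)[of Fail] a(3) b in \<open>fastforce+\<close>)
  qed
qed

lemma loop_no_fail: "exec (Loop c) G Res \<Longrightarrow> Res \<noteq> Fail"
  by (induction "Loop c" G Res rule: exec.induct) auto

lemma hoare_loop:
  fixes I :: "'a \<Rightarrow> hgraph \<Rightarrow> bool" and \<mu> :: "'a \<Rightarrow> nat"
  assumes body: "\<And>a G. I a G \<Longrightarrow> hoare ((=) G) c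
     (\<lambda>Res. case Res of Ok H \<Rightarrow> (\<exists>a'. I a' H \<and> \<mu> a' < \<mu> a) | Fail \<Rightarrow> X a G)"
  shows "hoare (\<lambda>G. \<exists>a. I a G) (Loop c) (\<lambda>Res. \<exists>a H. Res = Ok H \<and> I a H \<and> X a H)"
proof -
  have main: "\<And>a G. \<mu> a = n \<Longrightarrow> I a G \<Longrightarrow> terminates (Loop c) G \<and> (\<exists>Res. exec (Loop c) G Res) \<and>
     (\<forall>Res. exec (Loop c) G Res \<longrightarrow> (\<exists>a H. Res = Ok H \<and> I a H \<and> X a H))" for n
  proof (induction n rule: less_induct)
    case (less n)
    fix a G assume mu: "\<mu> a = n" and IG: "I a G"
    have h: "terminates c G" "\<exists>Res. exec c G Res"
      "\<And>Res. exec c G Res \<Longrightarrow> (case Res of Ok H \<Rightarrow> (\<exists>a'. I a' H \<and> \<mu> a' < \<mu> a) | Fail \<Rightarrow> X a G)"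
      using body[OF IG] unfolding hoare_def by blast+
    have ih: "\<And>H. exec c G (Ok H) \<Longrightarrow> terminates (Loop c) H \<and> (\<exists>Res. exec (Loop c) H Res) \<and>
      (\<forall>Res. exec (Loop c) H Res \<longrightarrow> (\<exists>a H'. Res = Ok H' \<and> I a H' \<and> X a H'))"
    proof -
      fix H assume "exec c G (Ok H)"
      then obtain a' where "I a' H" "\<mu> a' < \<mu> a" using h(3) by fastforce
      then show "?thesis H" using less.IH mu by blast
    qed
    show "terminates (Loop c) G \<and> (\<exists>Res. exec (Loop c) G Res) \<and>
     (\<forall>Res. exec (Loop c) G Res \<longrightarrow> (\<exists>a H. Res = Ok H \<and> I a H \<and> X a H))"
    proof (intro conjI allI impI)
      show "terminates (Loop c) G" using h(1) ih by (blast intro: terminates.intros)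
      show "\<exists>Res. exec (Loop c) G Res"
      proof -
        obtain Res where Res: "exec c G Res" using h(2) by blast
        show ?thesis
        proof (cases Res)
          case (Ok H) then show ?thesis using ih Res by (blast intro: exec.intros)
        next
          case Fail then show ?thesis using Res by (blast intro: exec.intros)
        qed
      qed
      fix Res assume "exec (Loop c) G Res"
      then show "\<exists>a H. Res = Ok H \<and> I a H \<and> X a H"
        by (rule exec_LoopE) (use ih h(3)[of Fail] IG in auto)
    qed
  qed
  show ?thesis unfolding hoare_def using main by blast
qed

lemma hoare_try:
  assumes C: "\<And>G. P G \<Longrightarrow> hoare ((=) G) C (\<lambda>Res. case Res of Ok H \<Rightarrow> M H | Fail \<Rightarrow> F G)"
    and 1: "hoare M c1 Q"
    and 2: "\<And>G. P G \<Longrightarrow> F G \<Longrightarrow> hoare ((=) G) c2 Q"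
  shows "hoare P (Try C c1 c2) Q"
  unfolding hoare_def
proof (intro allI impI, intro conjI)
  fix G assume PG: "P G"
  then have a: "terminates C G" "\<exists>Res. exec C G Res"
    "\<And>Res. exec C G Res \<Longrightarrow> (case Res of Ok H \<Rightarrow> M H | Fail \<Rightarrow> F G)"
    using C[OF PG] unfolding hoare_def by blast+
  have b: "\<And>H. M H \<Longrightarrow> terminates c1 H \<and> (\<exists>Res. exec c1 H Res) \<and> (\<forall>Res. exec c1 H Res \<longrightarrow> Q Res)"
    using 1 unfolding hoare_def by blast
  have c: "F G \<Longrightarrow> terminates c2 G \<and> (\<exists>Res. exec c2 G Res) \<and> (\<forall>Res. exec c2 G Res \<longrightarrow> Q Res)"
    using 2[OF PG] unfolding hoare_def by blast
  show "terminates (Try C c1 c2) G"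
    using a b c by (force intro: terminates.intros)
  show "\<exists>Res. exec (Try C c1 c2) G Res"
  proof -
    obtain Res where Res: "exec C G Res" using a by blast
    show ?thesis
    proof (cases Res)
      case (Ok H)
      then show ?thesis using a(3)[OF Res] b Res by (force intro: exec.intros)
    next
      case Fail
      then show ?thesis using a(3)[OF Res] c Res by (force intro: exec.intros)
    qed
  qed
  show "\<forall>Res. exec (Try C c1 c2) G Res \<longrightarrow> Q Res"
  proof (intro allI impI)
    fix Res assume "exec (Try C c1 c2) G Res"
    then show "Q Res"
      by (rule exec_TryE) (use a(3)[of Fail] a(3) b c in \<open>fastforce+\<close>)
  qed
qed

lemma hoare_if:
  assumes C: "\<And>G. P G \<Longrightarrow> hoare ((=) G) C (\<lambda>Res. case Res of Ok H \<Rightarrow> T G | Fail \<Rightarrow> F G)"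
    and 1: "\<And>G. P G \<Longrightarrow> T G \<Longrightarrow> hoare ((=) G) c1 Q"
    and 2: "\<And>G. P G \<Longrightarrow> F G \<Longrightarrow> hoare ((=) G) c2 Q"
  shows "hoare P (If C c1 c2) Q"
  unfolding hoare_def
proof (intro allI impI, intro conjI)
  fix G assume PG: "P G"
  then have a: "terminates C G" "\<exists>Res. exec C G Res"
    "\<And>Res. exec C G Res \<Longrightarrow> (case Res of Ok H \<Rightarrow> T G | Fail \<Rightarrow> F G)"
    using C[OF PG] unfolding hoare_def by blast+
  have b: "T G \<Longrightarrow> terminates c1 G \<and> (\<exists>Res. exec c1 G Res) \<and> (\<forall>Res. exec c1 G Res \<longrightarrow> Q Res)"
    using 1[OF PG] unfolding hoare_def by blast
  have c: "F G \<Longrightarrow> terminates c2 G \<and> (\<exists>Res. exec c2 G Res) \<and> (\<forall>Res. exec c2 G Res \<longrightarrow> Q Res)"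
    using 2[OF PG] unfolding hoare_def by blast
  show "terminates (If C c1 c2) G"
    using a b c by (force intro: terminates.intros)
  show "\<exists>Res. exec (If C c1 c2) G Res"
  proof -
    obtain Res where Res: "exec C G Res" using a by blast
    show ?thesis
    proof (cases Res)
      case (Ok H)
      then show ?thesis using a(3)[OF Res] b Res by (force intro: exec.intros)
    next
      case Fail
      then show ?thesis using a(3)[OF Res] c Res by (force intro: exec.intros)
    qed
  qed
  show "\<forall>Res. exec (If C c1 c2) G Res \<longrightarrow> Q Res"
  proof (intro allI impI)
    fix Res assume "exec (If C c1 c2) G Res"
    then show "Q Res"
      by (rule exec_IfE) (use a(3)[of Fail] a(3) b c in \<open>fastforce+\<close>)
  qed
qed

lemma hoare_pre: "(\<And>G. P G \<Longrightarrow> hoare ((=) G) c Q) \<Longrightarrow> hoare P c Q"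
  unfolding hoare_def by blast

lemma hoare_post: "hoare P c Q \<Longrightarrow> (\<And>Res. Q Res \<Longrightarrow> Q' Res) \<Longrightarrow> hoare P c Q'"
  unfolding hoare_def by blast

lemma hoare_strengthen: "hoare P c Q \<Longrightarrow> (\<And>G. P' G \<Longrightarrow> P G) \<Longrightarrow> hoare P' c Q"
  unfolding hoare_def by blast

fun enc :: "int option \<Rightarrow> atom" where
  "enc None = AStr ''f''" | "enc (Some i) = AInt i"

record ast = af :: "nat \<Rightarrow> nat" alb :: "nat \<Rightarrow> label" amk :: "nat \<Rightarrow> nmark"
  art :: "nat \<Rightarrow> bool" aem :: "nat \<Rightarrow> emark" acv :: int

locale bf0 =
  fixes G0 :: hgraph and r :: nat
  assumes wf: "wf_hgraph G0"
    and allgrey: "\<forall>v\<in>nodes G0. nmark G0 v = NGrey"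
    and rV: "r \<in> nodes G0" and rroot: "isroot G0 r" and onlyroot: "\<forall>v\<in>nodes G0. isroot G0 v \<longrightarrow> v = r"
    and unm: "\<forall>e\<in>edges G0. emark G0 e = EUnmarked"
    and wlab: "\<forall>e\<in>edges G0. \<exists>w. elab G0 e = [AInt w]"
    and noloop: "\<forall>e\<in>edges G0. src G0 e \<noteq> tgt G0 e"
begin

abbreviation "V \<equiv> nodes G0"
abbreviation "E \<equiv> edges G0"

definition Iso :: "nat set" where
  "Iso = {v\<in>V. v \<noteq> r \<and> (\<forall>e\<in>E. src G0 e \<noteq> v \<and> tgt G0 e \<noteq> v)}"

lemma finV: "finite V" and finE: "finite E"
  using wf unfolding wf_hgraph_def by auto

lemma eV: "e \<in> E \<Longrightarrow> src G0 e \<in> V" "e \<in> E \<Longrightarrow> tgt G0 e \<in> V"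
  using wf unfolding wf_hgraph_def by auto

lemma eIso: "e \<in> E \<Longrightarrow> src G0 e \<notin> Iso" "e \<in> E \<Longrightarrow> tgt G0 e \<notin> Iso"
  unfolding Iso_def by auto

lemma rIso: "r \<notin> Iso" unfolding Iso_def by auto

lemma eloop: "e \<in> E \<Longrightarrow> src G0 e \<noteq> tgt G0 e" using noloop by auto

lemma elab0: "e \<in> E \<Longrightarrow> elab G0 e = [AInt (wt G0 e)]"
  using wlab unfolding wt_def by fastforce

definition St :: "nat \<Rightarrow> nat \<Rightarrow> ast \<Rightarrow> hgraph \<Rightarrow> bool" where
  "St c d A H \<longleftrightarrow> nodes H = insert c (af A ` V) \<and> c \<notin> af A ` V \<and> inj_on (af A) V \<and>
     (\<forall>v\<in>V. v \<notin> Iso \<longrightarrow> af A v = v) \<and>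
     edges H = insert d E \<and> d \<notin> E \<and>
     (\<forall>e\<in>E. src H e = src G0 e \<and> tgt H e = tgt G0 e \<and> elab H e = elab G0 e \<and> emark H e = aem A e) \<and>
     src H d = c \<and> tgt H d = r \<and> emark H d = EDashed \<and>
     nlab H c = [AInt (acv A)] \<and> nmark H c = NGreen \<and> \<not> isroot H c \<and>
     (\<forall>v\<in>V. nlab H (af A v) = alb A v \<and> nmark H (af A v) = amk A v \<and> isroot H (af A v) = art A v
        \<and> amk A v \<noteq> NGreen)"

definition FinSt :: "ast \<Rightarrow> hgraph \<Rightarrow> bool" where
  "FinSt A H \<longleftrightarrow> nodes H = af A ` V \<and> inj_on (af A) V \<and>
     (\<forall>v\<in>V. v \<notin> Iso \<longrightarrow> af A v = v) \<and> edges H = E \<and>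
     (\<forall>e\<in>E. src H e = src G0 e \<and> tgt H e = tgt G0 e \<and> elab H e = elab G0 e \<and> emark H e = aem A e) \<and>
     (\<forall>v\<in>V. nlab H (af A v) = alb A v \<and> nmark H (af A v) = amk A v \<and> isroot H (af A v) = art A v)"

lemma St_fix: "St c d A H \<Longrightarrow> v \<in> V \<Longrightarrow> v \<notin> Iso \<Longrightarrow> af A v = v"
  unfolding St_def by blast

lemma St_fix_src: "St c d A H \<Longrightarrow> e \<in> E \<Longrightarrow> af A (src G0 e) = src G0 e"
  and St_fix_tgt: "St c d A H \<Longrightarrow> e \<in> E \<Longrightarrow> af A (tgt G0 e) = tgt G0 e"
  and St_fix_r: "St c d A H \<Longrightarrow> af A r = r"
  using St_fix eV eIso rIso rV by auto

lemma St_node: "St c d A H \<Longrightarrow> n \<in> nodes H \<Longrightarrow> n \<noteq> c \<Longrightarrow> \<exists>v\<in>V. n = af A v"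
  unfolding St_def by auto

lemma St_nodeG: "St c d A H \<Longrightarrow> n \<in> nodes H \<Longrightarrow> nmark H n \<noteq> NGreen \<Longrightarrow> \<exists>v\<in>V. n = af A v"
  unfolding St_def by auto

lemma St_green: "St c d A H \<Longrightarrow> n \<in> nodes H \<Longrightarrow> nmark H n = NGreen \<Longrightarrow> n = c"
  unfolding St_def by auto

lemma St_edge: "St c d A H \<Longrightarrow> e \<in> edges H \<Longrightarrow> emark H e \<noteq> EDashed \<Longrightarrow> e \<in> E"
  unfolding St_def by auto

lemma St_inj: "St c d A H \<Longrightarrow> u \<in> V \<Longrightarrow> v \<in> V \<Longrightarrow> af A u = af A v \<longleftrightarrow> u = v"
  unfolding St_def by (meson inj_on_eq_iff)

lemma St_nc: "St c d A H \<Longrightarrow> v \<in> V \<Longrightarrow> af A v \<noteq> c"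
  unfolding St_def by auto

lemma St_cong:
  assumes "St c d A H" "af A' = af A"
    "\<forall>v\<in>V. alb A' v = alb A v \<and> amk A' v = amk A v \<and> art A' v = art A v"
    "\<forall>e\<in>E. aem A' e = aem A e" "acv A' = acv A"
  shows "St c d A' H"
  using assms unfolding St_def by auto

lemma FinSt_cong:
  assumes "FinSt A H" "af A' = af A"
    "\<forall>v\<in>V. alb A' v = alb A v \<and> amk A' v = amk A v \<and> art A' v = art A v"
    "\<forall>e\<in>E. aem A' e = aem A e"
  shows "FinSt A' H"
  using assms unfolding FinSt_def by auto

end

context bf0 begin


lemma root1_step:
  assumes St: "St c d A H" and ap: "apply_rule root1 H H'"
  shows "\<exists>v\<in>V. amk A v = NBlue \<and> St c d (A\<lparr>art := (art A)(v := True)\<rparr>) H'"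
proof -
  from ap obtain n where n: "n \<in> nodes H" "nmark H n = NBlue" and H': "H' = H\<lparr>isroot := (isroot H)(n := True)\<rparr>" by auto
  obtain v where v: "v \<in> V" "n = af A v" using St_nodeG[OF St n(1)] n by auto
  have "amk A v = NBlue" using St v n unfolding St_def by auto
  moreover have "St c d (A\<lparr>art := (art A)(v := True)\<rparr>) H'"
    using St v St_inj[OF St] St_nc[OF St] unfolding St_def H' by auto
  ultimately show ?thesis using v by blast
qed

lemma root1_app: "St c d A H \<Longrightarrow> v \<in> V \<Longrightarrow> amk A v = NBlue \<Longrightarrow> \<exists>H'. apply_rule root1 H H'"
  unfolding St_def by auto



lemma unroot1_step:
  assumes St: "St c d A H" and ap: "apply_rule unroot1 H H'"
  shows "\<exists>v\<in>V. amk A v = NBlue \<and> art A v \<and>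
     St c d (A\<lparr>amk := (amk A)(v := NGrey), art := (art A)(v := False)\<rparr>) H'"
proof -
  from ap obtain n where n: "n \<in> nodes H" "nmark H n = NBlue" "isroot H n"
    and H': "H' = H\<lparr>nmark := (nmark H)(n := NGrey), isroot := (isroot H)(n := False)\<rparr>" by auto
  obtain v where v: "v \<in> V" "n = af A v" using St_nodeG[OF St n(1)] n by auto
  have "amk A v = NBlue" "art A v" using St v n unfolding St_def by auto
  moreover have "St c d (A\<lparr>amk := (amk A)(v := NGrey), art := (art A)(v := False)\<rparr>) H'"
    using St v St_inj[OF St] St_nc[OF St] unfolding St_def H' by auto
  ultimately show ?thesis using v by blast
qed

lemma unroot1_app: "St c d A H \<Longrightarrow> v \<in> V \<Longrightarrow> amk A v = NBlue \<Longrightarrow> art A v \<Longrightarrow> \<exists>H'. apply_rule unroot1 H H'"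
  unfolding St_def by auto

lemma root2_step:
  assumes St: "St c d A H" and ap: "apply_rule root2 H H'"
  shows "\<exists>v\<in>V. amk A v = NGrey \<and>
     St c d (A\<lparr>amk := (amk A)(v := NBlue), art := (art A)(v := True)\<rparr>) H'"
proof -
  from ap obtain n where n: "n \<in> nodes H" "nmark H n = NGrey"
    and H': "H' = H\<lparr>nmark := (nmark H)(n := NBlue), isroot := (isroot H)(n := True)\<rparr>" by auto
  obtain v where v: "v \<in> V" "n = af A v" using St_nodeG[OF St n(1)] n by auto
  have "amk A v = NGrey" using St v n unfolding St_def by auto
  moreover have "St c d (A\<lparr>amk := (amk A)(v := NBlue), art := (art A)(v := True)\<rparr>) H'"
    using St v St_inj[OF St] St_nc[OF St] unfolding St_def H' by auto
  ultimately show ?thesis using v by blast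
qed

lemma root2_app: "St c d A H \<Longrightarrow> v \<in> V \<Longrightarrow> amk A v = NGrey \<Longrightarrow> \<exists>H'. apply_rule root2 H H'"
  unfolding St_def by auto

lemma unroot2_step:
  assumes St: "St c d A H" and ap: "apply_rule unroot2 H H'"
  shows "\<exists>v\<in>V. amk A v = NBlue \<and> art A v \<and> St c d (A\<lparr>art := (art A)(v := False)\<rparr>) H'"
proof -
  from ap obtain n where n: "n \<in> nodes H" "nmark H n = NBlue" "isroot H n"
    and H': "H' = H\<lparr>isroot := (isroot H)(n := False)\<rparr>" by auto
  obtain v where v: "v \<in> V" "n = af A v" using St_nodeG[OF St n(1)] n by auto
  have "amk A v = NBlue" "art A v" using St v n unfolding St_def by auto
  moreover have "St c d (A\<lparr>art := (art A)(v := False)\<rparr>) H'"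
    using St v St_inj[OF St] St_nc[OF St] unfolding St_def H' by auto
  ultimately show ?thesis using v by blast
qed

lemma unroot2_app: "St c d A H \<Longrightarrow> v \<in> V \<Longrightarrow> amk A v = NBlue \<Longrightarrow> art A v \<Longrightarrow> \<exists>H'. apply_rule unroot2 H H'"
  unfolding St_def by auto



lemma count_step:
  assumes St: "St c d A H" and ap: "apply_rule count H H'"
  shows "\<exists>v\<in>V. amk A v = NGrey \<and>
     St c d (A\<lparr>alb := (alb A)(v := alb A v @ [AStr ''f'']), amk := (amk A)(v := NBlue), acv := acv A + 1\<rparr>) H'"
proof -
  from ap obtain n m i where n: "n \<in> nodes H" "m \<in> nodes H" "n \<noteq> m" "nmark H n = NGrey" "nmark H m = NGreen"
    "nlab H m = [AInt i]"
    and H': "H' = H\<lparr>nlab := (nlab H)(n := nlab H n @ [AStr ''f''], m := [AInt (i + 1)]),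
            nmark := (nmark H)(n := NBlue)\<rparr>" by auto
  obtain v where v: "v \<in> V" "n = af A v" using St_nodeG[OF St n(1)] n by auto
  have m: "m = c" using St_green[OF St n(2) n(5)] .
  have i: "i = acv A" using St n m unfolding St_def by auto
  have "amk A v = NGrey" using St v n unfolding St_def by auto
  moreover have "St c d (A\<lparr>alb := (alb A)(v := alb A v @ [AStr ''f'']), amk := (amk A)(v := NBlue), acv := acv A + 1\<rparr>) H'"
    using St v St_inj[OF St] St_nc[OF St] unfolding St_def H' m i by auto
  ultimately show ?thesis using v by blast
qed

lemma count_app: assumes St: "St c d A H" and v: "v \<in> V" "amk A v = NGrey" shows "\<exists>H'. apply_rule count H H'"
proof -
  have "af A v \<in> nodes H" "c \<in> nodes H" "af A v \<noteq> c" "nmark H (af A v) = NGrey" "nmark H c = NGreen"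
    "nlab H c = [AInt (acv A)]" using St v unfolding St_def by auto
  then show ?thesis by (simp only: apply_rule.simps) blast
qed

lemma decrement_step:
  assumes St: "St c d A H" and ap: "apply_rule decrement H H'"
  shows "acv A > 0 \<and> St c d (A\<lparr>acv := acv A - 1\<rparr>) H'"
proof -
  from ap obtain n i where n: "n \<in> nodes H" "nmark H n = NGreen" "nlab H n = [AInt i]" "i > 0"
    and H': "H' = H\<lparr>nlab := (nlab H)(n := [AInt (i - 1)])\<rparr>" by auto
  have m: "n = c" using St_green[OF St n(1) n(2)] .
  have i: "i = acv A" using St n m unfolding St_def by auto
  show ?thesis
    using St St_nc[OF St] n unfolding St_def H' m i by auto
qed

lemma decrement_app: assumes St: "St c d A H" and v: "acv A > 0" shows "\<exists>H'. apply_rule decrement H H'"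
proof -
  have "c \<in> nodes H" "nmark H c = NGreen"
    "nlab H c = [AInt (acv A)]" using St v unfolding St_def by auto
  then show ?thesis using v by (simp only: apply_rule.simps) blast
qed

lemma set_flag_step:
  assumes St: "St c d A H" and ap: "apply_rule set_flag H H'"
  shows "St c d (A\<lparr>acv := -1\<rparr>) H'"
proof -
  from ap obtain n where n: "n \<in> nodes H" "nmark H n = NGreen"
    and H': "H' = H\<lparr>nlab := (nlab H)(n := [AInt (-1)])\<rparr>" by auto
  have m: "n = c" using St_green[OF St n(1) n(2)] .
  show ?thesis
    using St St_nc[OF St] n unfolding St_def H' m by auto
qed

lemma set_flag_app: assumes St: "St c d A H" shows "\<exists>H'. apply_rule set_flag H H'"
proof -
  have "c \<in> nodes H" "nmark H c = NGreen" using St unfolding St_def by auto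
  then show ?thesis by (simp only: apply_rule.simps) blast
qed

lemma flag_step:
  assumes St: "St c d A H" and ap: "apply_rule flag H H'"
  shows "acv A = -1 \<and> H' = H"
proof -
  from ap obtain n where n: "n \<in> nodes H" "nmark H n = NGreen" "nlab H n = [AInt (-1)]"
    and H': "H' = H" by auto
  have m: "n = c" using St_green[OF St n(1) n(2)] .
  show ?thesis using St n H' m unfolding St_def by auto
qed

lemma flag_app: assumes St: "St c d A H" and v: "acv A = -1" shows "\<exists>H'. apply_rule flag H H'"
proof -
  have "c \<in> nodes H" "nmark H c = NGreen"
    "nlab H c = [AInt (acv A)]" using St v unfolding St_def by auto
  then show ?thesis using v by (simp only: apply_rule.simps) blast
qed




lemma St_edge_info:
  assumes St: "St c d A H" and e: "e \<in> edges H" "emark H e \<noteq> EDashed"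
  shows "e \<in> E \<and> src H e = src G0 e \<and> tgt H e = tgt G0 e \<and> elab H e = [AInt (wt G0 e)] \<and>
    emark H e = aem A e \<and> nmark H (src G0 e) = amk A (src G0 e) \<and> isroot H (src G0 e) = art A (src G0 e) \<and>
    nlab H (src G0 e) = alb A (src G0 e) \<and> nlab H (tgt G0 e) = alb A (tgt G0 e)"
proof -
  have eE: "e \<in> E" using St_edge[OF St e] .
  have "af A (src G0 e) = src G0 e" "af A (tgt G0 e) = tgt G0 e" using St_fix_src[OF St eE] St_fix_tgt[OF St eE] .
  then show ?thesis using St eE eV[OF eE] elab0[OF eE] unfolding St_def by metis
qed

lemma unmarked_edge_step:
  assumes St: "St c d A H" and ap: "apply_rule unmarked_edge H H'"
  shows "\<exists>e\<in>E. amk A (src G0 e) = NBlue \<and> art A (src G0 e) \<and> aem A e = EUnmarked \<and>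
     St c d (A\<lparr>aem := (aem A)(e := ERed)\<rparr>) H'"
proof -
  from ap obtain n m e where n: "e \<in> edges H" "src H e = n" "nmark H n = NBlue" "isroot H n" "emark H e = EUnmarked"
    and H': "H' = H\<lparr>emark := (emark H)(e := ERed)\<rparr>" by auto
  note i = St_edge_info[OF St n(1)] 
  have "e \<in> E" "amk A (src G0 e) = NBlue" "art A (src G0 e)" "aem A e = EUnmarked" using i n by auto
  moreover have "St c d (A\<lparr>aem := (aem A)(e := ERed)\<rparr>) H'"
    using St \<open>e \<in> E\<close> unfolding St_def H' by auto
  ultimately show ?thesis by blast
qed

lemma unmarked_edge_app:
  assumes St: "St c d A H" and e: "e \<in> E" "amk A (src G0 e) = NBlue" "art A (src G0 e)" "aem A e = EUnmarked"
  shows "\<exists>H'. apply_rule unmarked_edge H H'"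
proof -
  have a: "af A (src G0 e) = src G0 e" "af A (tgt G0 e) = tgt G0 e" using St_fix_src[OF St e(1)] St_fix_tgt[OF St e(1)] .
  have "src G0 e \<in> nodes H" "tgt G0 e \<in> nodes H" "src G0 e \<noteq> tgt G0 e" "e \<in> edges H"
    "src H e = src G0 e" "tgt H e = tgt G0 e" "nmark H (src G0 e) = NBlue" "isroot H (src G0 e)"
    "emark H e = EUnmarked"
    using St e eV[OF e(1)] eloop[OF e(1)] a unfolding St_def by (metis image_eqI insertI2 insertI1)+
  then show ?thesis by (simp only: apply_rule.simps) blast
qed

lemma finish_step:
  assumes St: "St c d A H" and ap: "apply_rule finish H H'"
  shows "\<exists>e\<in>E. amk A (src G0 e) = NBlue \<and> art A (src G0 e) \<and> aem A e = ERed \<and>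
     St c d (A\<lparr>aem := (aem A)(e := EBlue)\<rparr>) H'"
proof -
  from ap obtain n m e where n: "e \<in> edges H" "src H e = n" "nmark H n = NBlue" "isroot H n" "emark H e = ERed"
    and H': "H' = H\<lparr>emark := (emark H)(e := EBlue)\<rparr>" by auto
  note i = St_edge_info[OF St n(1)] 
  have "e \<in> E" "amk A (src G0 e) = NBlue" "art A (src G0 e)" "aem A e = ERed" using i n by auto
  moreover have "St c d (A\<lparr>aem := (aem A)(e := EBlue)\<rparr>) H'"
    using St \<open>e \<in> E\<close> unfolding St_def H' by auto
  ultimately show ?thesis by blast
qed

lemma finish_app:
  assumes St: "St c d A H" and e: "e \<in> E" "amk A (src G0 e) = NBlue" "art A (src G0 e)" "aem A e = ERed"
  shows "\<exists>H'. apply_rule finish H H'"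
proof -
  have a: "af A (src G0 e) = src G0 e" "af A (tgt G0 e) = tgt G0 e" using St_fix_src[OF St e(1)] St_fix_tgt[OF St e(1)] .
  have "src G0 e \<in> nodes H" "tgt G0 e \<in> nodes H" "src G0 e \<noteq> tgt G0 e" "e \<in> edges H"
    "src H e = src G0 e" "tgt H e = tgt G0 e" "nmark H (src G0 e) = NBlue" "isroot H (src G0 e)"
    "emark H e = ERed"
    using St e eV[OF e(1)] eloop[OF e(1)] a unfolding St_def by (metis image_eqI insertI2 insertI1)+
  then show ?thesis by (simp only: apply_rule.simps) blast
qed

lemma unmark_edge_step:
  assumes St: "St c d A H" and ap: "apply_rule unmark_edge H H'"
  shows "\<exists>e\<in>E. amk A (src G0 e) = NBlue \<and> art A (src G0 e) \<and> aem A e = EBlue \<and>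
     St c d (A\<lparr>aem := (aem A)(e := EUnmarked)\<rparr>) H'"
proof -
  from ap obtain n m e where n: "e \<in> edges H" "src H e = n" "nmark H n = NBlue" "isroot H n" "emark H e = EBlue"
    and H': "H' = H\<lparr>emark := (emark H)(e := EUnmarked)\<rparr>" by auto
  note i = St_edge_info[OF St n(1)] 
  have "e \<in> E" "amk A (src G0 e) = NBlue" "art A (src G0 e)" "aem A e = EBlue" using i n by auto
  moreover have "St c d (A\<lparr>aem := (aem A)(e := EUnmarked)\<rparr>) H'"
    using St \<open>e \<in> E\<close> unfolding St_def H' by auto
  ultimately show ?thesis by blast
qed

lemma unmark_edge_app:
  assumes St: "St c d A H" and e: "e \<in> E" "amk A (src G0 e) = NBlue" "art A (src G0 e)" "aem A e = EBlue"
  shows "\<exists>H'. apply_rule unmark_edge H H'"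
proof -
  have a: "af A (src G0 e) = src G0 e" "af A (tgt G0 e) = tgt G0 e" using St_fix_src[OF St e(1)] St_fix_tgt[OF St e(1)] .
  have "src G0 e \<in> nodes H" "tgt G0 e \<in> nodes H" "src G0 e \<noteq> tgt G0 e" "e \<in> edges H"
    "src H e = src G0 e" "tgt H e = tgt G0 e" "nmark H (src G0 e) = NBlue" "isroot H (src G0 e)"
    "emark H e = EBlue"
    using St e eV[OF e(1)] eloop[OF e(1)] a unfolding St_def by (metis image_eqI insertI2 insertI1)+
  then show ?thesis by (simp only: apply_rule.simps) blast
qed

lemma unvisited_step:
  assumes St: "St c d A H" and ap: "apply_rule unvisited H H'"
  shows "\<exists>e\<in>E. amk A (src G0 e) = NBlue \<and> art A (src G0 e) \<and> aem A e = ERed \<and>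
     (\<exists>x y s. alb A (src G0 e) = x @ [AInt s] \<and> alb A (tgt G0 e) = y @ [AStr ''f''] \<and>
     St c d (A\<lparr>alb := (alb A)(tgt G0 e := y @ [AInt (s + wt G0 e)])\<rparr>) H')"
proof -
  from ap obtain n m e x y s w where n: "e \<in> edges H" "src H e = n" "tgt H e = m" "nmark H n = NBlue" "isroot H n"
    "emark H e = ERed" "nlab H n = x @ [AInt s]" "nlab H m = y @ [AStr ''f'']" "elab H e = [AInt w]"
    and H': "H' = H\<lparr>nlab := (nlab H)(m := y @ [AInt (s + w)])\<rparr>" by auto
  note i = St_edge_info[OF St n(1)] 
  have eE: "e \<in> E" using i n by auto
  have w: "w = wt G0 e" using i n by auto
  have a: "af A (tgt G0 e) = tgt G0 e" using St_fix_tgt[OF St eE] .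
  have "amk A (src G0 e) = NBlue" "art A (src G0 e)" "aem A e = ERed"
    "alb A (src G0 e) = x @ [AInt s]" "alb A (tgt G0 e) = y @ [AStr ''f'']" using i n by auto
  moreover have "St c d (A\<lparr>alb := (alb A)(tgt G0 e := y @ [AInt (s + wt G0 e)])\<rparr>) H'"
  proof -
    have m: "m = af A (tgt G0 e)" using a i n by auto
    show ?thesis
      using St eE eV[OF eE] St_inj[OF St] St_nc[OF St] unfolding St_def H' m w by auto
  qed
  ultimately show ?thesis using eE by blast
qed

lemma unvisited_app:
  assumes St: "St c d A H" and e: "e \<in> E" "amk A (src G0 e) = NBlue" "art A (src G0 e)" "aem A e = ERed"
    "alb A (src G0 e) = x @ [AInt s]" "alb A (tgt G0 e) = y @ [AStr ''f'']"
  shows "\<exists>H'. apply_rule unvisited H H'"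
proof -
  have a: "af A (src G0 e) = src G0 e" "af A (tgt G0 e) = tgt G0 e" using St_fix_src[OF St e(1)] St_fix_tgt[OF St e(1)] .
  have "src G0 e \<in> nodes H" "tgt G0 e \<in> nodes H" "src G0 e \<noteq> tgt G0 e" "e \<in> edges H"
    "src H e = src G0 e" "tgt H e = tgt G0 e" "nmark H (src G0 e) = NBlue" "isroot H (src G0 e)"
    "emark H e = ERed" "nlab H (src G0 e) = x @ [AInt s]" "nlab H (tgt G0 e) = y @ [AStr ''f'']"
    "elab H e = [AInt (wt G0 e)]"
    using St e eV[OF e(1)] eloop[OF e(1)] a elab0[OF e(1)] unfolding St_def by (metis image_eqI insertI2 insertI1)+
  then show ?thesis by (simp only: apply_rule.simps) blast
qed

lemma reduce_step:
  assumes St: "St c d A H" and ap: "apply_rule reduce H H'"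
  shows "\<exists>e\<in>E. amk A (src G0 e) = NBlue \<and> art A (src G0 e) \<and> aem A e = ERed \<and>
     (\<exists>x y s t. alb A (src G0 e) = x @ [AInt s] \<and> alb A (tgt G0 e) = y @ [AInt t] \<and> s + wt G0 e < t \<and>
     St c d (A\<lparr>alb := (alb A)(tgt G0 e := y @ [AInt (s + wt G0 e)])\<rparr>) H')"
proof -
  from ap obtain n m e x y s t w where n: "e \<in> edges H" "src H e = n" "tgt H e = m" "nmark H n = NBlue" "isroot H n"
    "emark H e = ERed" "nlab H n = x @ [AInt s]" "nlab H m = y @ [AInt t]" "elab H e = [AInt w]" "s + w < t"
    and H': "H' = H\<lparr>nlab := (nlab H)(m := y @ [AInt (s + w)])\<rparr>" by auto
  note i = St_edge_info[OF St n(1)] 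
  have eE: "e \<in> E" using i n by auto
  have w: "w = wt G0 e" using i n by auto
  have a: "af A (tgt G0 e) = tgt G0 e" using St_fix_tgt[OF St eE] .
  have "amk A (src G0 e) = NBlue" "art A (src G0 e)" "aem A e = ERed"
    "alb A (src G0 e) = x @ [AInt s]" "alb A (tgt G0 e) = y @ [AInt t]" "s + wt G0 e < t" using i n w by auto
  moreover have "St c d (A\<lparr>alb := (alb A)(tgt G0 e := y @ [AInt (s + wt G0 e)])\<rparr>) H'"
  proof -
    have m: "m = af A (tgt G0 e)" using a i n by auto
    show ?thesis
      using St eE eV[OF eE] St_inj[OF St] St_nc[OF St] unfolding St_def H' m w by auto
  qed
  ultimately show ?thesis using eE by blast
qed

lemma reduce_app:
  assumes St: "St c d A H" and e: "e \<in> E" "amk A (src G0 e) = NBlue" "art A (src G0 e)" "aem A e = ERed"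
    "alb A (src G0 e) = x @ [AInt s]" "alb A (tgt G0 e) = y @ [AInt t]" "s + wt G0 e < t"
  shows "\<exists>H'. apply_rule reduce H H'"
proof -
  have a: "af A (src G0 e) = src G0 e" "af A (tgt G0 e) = tgt G0 e" using St_fix_src[OF St e(1)] St_fix_tgt[OF St e(1)] .
  have "src G0 e \<in> nodes H" "tgt G0 e \<in> nodes H" "src G0 e \<noteq> tgt G0 e" "e \<in> edges H"
    "src H e = src G0 e" "tgt H e = tgt G0 e" "nmark H (src G0 e) = NBlue" "isroot H (src G0 e)"
    "emark H e = ERed" "nlab H (src G0 e) = x @ [AInt s]" "nlab H (tgt G0 e) = y @ [AInt t]"
    "elab H e = [AInt (wt G0 e)]"
    using St e eV[OF e(1)] eloop[OF e(1)] a elab0[OF e(1)] unfolding St_def by (metis image_eqI insertI2 insertI1)+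
  then show ?thesis using e(7) by (simp only: apply_rule.simps) blast
qed



lemma no_deg_step:
  assumes St: "St c d A H" and ap: "apply_rule no_deg H H'"
  shows "\<exists>v\<in>V. amk A v = NBlue \<and> art A v \<and> v \<in> Iso \<and> (\<exists>m.
     St c d (A\<lparr>af := (af A)(v := m), amk := (amk A)(v := NUnmarked), art := (art A)(v := False)\<rparr>) H')"
proof -
  from ap obtain n m where n: "n \<in> nodes H" "nmark H n = NBlue" "isroot H n"
    "\<forall>e\<in>edges H. src H e \<noteq> n \<and> tgt H e \<noteq> n" "m \<notin> nodes H - {n}"
    and H': "H' = H\<lparr>nodes := insert m (nodes H - {n}), nlab := (nlab H)(m := nlab H n),
            nmark := (nmark H)(m := NUnmarked), isroot := (isroot H)(m := False)\<rparr>" by auto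
  obtain v where v: "v \<in> V" "n = af A v" using St_nodeG[OF St n(1)] n by auto
  have mk: "amk A v = NBlue" "art A v" using St v n unfolding St_def by auto
  have vIso: "v \<in> Iso"
  proof (rule ccontr)
    assume "v \<notin> Iso"
    then have fv: "af A v = v" using St_fix[OF St v(1)] by blast
    have "v = r \<or> (\<exists>e\<in>E. src G0 e = v \<or> tgt G0 e = v)" using \<open>v \<notin> Iso\<close> v(1) unfolding Iso_def by auto
    then show False
    proof
      assume "v = r"
      then show False using St n(4) v fv unfolding St_def by auto
    next
      assume "\<exists>e\<in>E. src G0 e = v \<or> tgt G0 e = v"
      then obtain e where "e \<in> E" "src G0 e = v \<or> tgt G0 e = v" by blast
      then show False using St n(4) v fv unfolding St_def by auto
    qed
  qed
  define f' where "f' = (af A)(v := m)"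
  have nc: "n \<noteq> c" using St_nc[OF St v(1)] v by simp
  have mc: "m \<noteq> c" using n(5) nc St unfolding St_def by auto
  have mo: "\<And>u. u \<in> V \<Longrightarrow> u \<noteq> v \<Longrightarrow> af A u \<noteq> m"
    using n(5) St v St_inj[OF St] unfolding St_def by auto
  have img: "f' ` V = insert m (af A ` V - {n})"
  proof -
    have "f' ` V = insert m (af A ` (V - {v}))" unfolding f'_def using v(1) by auto
    also have "af A ` (V - {v}) = af A ` V - {n}" using v St_inj[OF St] by auto
    finally show ?thesis .
  qed
  have inj': "inj_on f' V"
    unfolding inj_on_def f'_def using St_inj[OF St] mo by auto
  have "St c d (A\<lparr>af := f', amk := (amk A)(v := NUnmarked), art := (art A)(v := False)\<rparr>) H'"
  proof -
    have A1: "nodes H' = insert c (f' ` V)" using img St nc unfolding H' St_def by auto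
    have A2: "c \<notin> f' ` V" using img mc St unfolding St_def by auto
    have A3: "\<forall>u\<in>V. u \<notin> Iso \<longrightarrow> f' u = u" using St vIso unfolding f'_def St_def by auto
    have A4: "\<forall>u\<in>V. nlab H' (f' u) = alb A u \<and> nmark H' (f' u) = ((amk A)(v := NUnmarked)) u \<and>
       isroot H' (f' u) = ((art A)(v := False)) u \<and> ((amk A)(v := NUnmarked)) u \<noteq> NGreen"
    proof
      fix u assume u: "u \<in> V"
      show "nlab H' (f' u) = alb A u \<and> nmark H' (f' u) = ((amk A)(v := NUnmarked)) u \<and>
       isroot H' (f' u) = ((art A)(v := False)) u \<and> ((amk A)(v := NUnmarked)) u \<noteq> NGreen"
      proof (cases "u = v")
        case True then show ?thesis using St v unfolding H' f'_def St_def by auto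
      next
        case False then show ?thesis using St u mo[OF u False] unfolding H' f'_def St_def by auto
      qed
    qed
    show ?thesis using A1 A2 A3 A4 inj' St mc unfolding St_def H' by auto
  qed
  then show ?thesis using v(1) mk vIso unfolding f'_def by blast
qed



lemma no_deg_app:
  assumes St: "St c d A H" and v: "v \<in> V" "amk A v = NBlue" "art A v" "v \<in> Iso"
  shows "\<exists>H'. apply_rule no_deg H H'"
proof -
  have "v \<noteq> r" using v rIso by auto
  have a: "af A v \<in> nodes H" "nmark H (af A v) = NBlue" "isroot H (af A v)" "af A v \<notin> nodes H - {af A v}"
    using St v unfolding St_def by auto
  have b: "\<forall>e\<in>edges H. src H e \<noteq> af A v \<and> tgt H e \<noteq> af A v"
  proof
    fix e assume e: "e \<in> edges H"
    show "src H e \<noteq> af A v \<and> tgt H e \<noteq> af A v"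
    proof (cases "e = d")
      case True
      then show ?thesis using St v St_nc[OF St v(1)] St_inj[OF St v(1) rV] St_fix_r[OF St] \<open>v \<noteq> r\<close>
        unfolding St_def by auto
    next
      case False
      then have eE: "e \<in> E" using e St unfolding St_def by auto
      have "src G0 e \<noteq> v" "tgt G0 e \<noteq> v" using v(4) eE unfolding Iso_def by auto
      then show ?thesis using St eE St_fix_src[OF St eE] St_fix_tgt[OF St eE] St_inj[OF St] eV[OF eE] v(1)
        unfolding St_def by metis
    qed
  qed
  show ?thesis using a b by (simp only: apply_rule.simps) blast
qed



lemma delete_counter_step:
  assumes St: "St c d A H" and ap: "apply_rule delete_counter H H'"
  shows "amk A r = NGrey \<and> FinSt (A\<lparr>art := (art A)(r := True)\<rparr>) H'"
proof -
  from ap obtain n m d' where n: "n \<in> nodes H" "m \<in> nodes H" "n \<noteq> m" "d' \<in> edges H"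
    "src H d' = m" "tgt H d' = n" "nmark H n = NGrey" "nmark H m = NGreen" "emark H d' = EDashed"
    and H': "H' = H\<lparr>nodes := nodes H - {m}, edges := edges H - {d'},
            isroot := (isroot H)(n := True)\<rparr>" by auto
  have mc: "m = c" using St_green[OF St n(2) n(8)] .
  have dd: "d' = d"
  proof (rule ccontr)
    assume "d' \<noteq> d"
    then have eE: "d' \<in> E" using n St unfolding St_def by auto
    have "src H d' = src G0 d'" using St eE unfolding St_def by blast
    then show False using n(5) mc St_fix_src[OF St eE] St_nc[OF St eV(1)[OF eE]] by simp
  qed
  have nr: "n = r" using St n(6) dd unfolding St_def by simp
  have fr: "af A r = r" using St_fix_r[OF St] .
  have "nmark H (af A r) = amk A r" using St rV unfolding St_def by blast
  then have "amk A r = NGrey" using n nr fr by simp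
  moreover have "FinSt (A\<lparr>art := (art A)(r := True)\<rparr>) H'"
    unfolding FinSt_def
  proof (intro conjI)
    show "nodes H' = af (A\<lparr>art := (art A)(r := True)\<rparr>) ` V"
      using St unfolding St_def H' mc by auto
    show "edges H' = E" using St unfolding St_def H' dd by auto
    show "\<forall>v\<in>V. nlab H' (af (A\<lparr>art := (art A)(r := True)\<rparr>) v) = alb (A\<lparr>art := (art A)(r := True)\<rparr>) v \<and>
       nmark H' (af (A\<lparr>art := (art A)(r := True)\<rparr>) v) = amk (A\<lparr>art := (art A)(r := True)\<rparr>) v \<and>
       isroot H' (af (A\<lparr>art := (art A)(r := True)\<rparr>) v) = art (A\<lparr>art := (art A)(r := True)\<rparr>) v"
    proof
      fix v assume v: "v \<in> V"
      have "af A v = r \<longleftrightarrow> v = r" using St_inj[OF St v rV] fr by simp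
      then show "nlab H' (af (A\<lparr>art := (art A)(r := True)\<rparr>) v) = alb (A\<lparr>art := (art A)(r := True)\<rparr>) v \<and>
       nmark H' (af (A\<lparr>art := (art A)(r := True)\<rparr>) v) = amk (A\<lparr>art := (art A)(r := True)\<rparr>) v \<and>
       isroot H' (af (A\<lparr>art := (art A)(r := True)\<rparr>) v) = art (A\<lparr>art := (art A)(r := True)\<rparr>) v"
        using St v unfolding St_def H' nr by auto
    qed
  qed (use St in \<open>auto simp: St_def H'\<close>)
  ultimately show ?thesis by blast
qed



lemma delete_counter_app:
  assumes St: "St c d A H" and g: "amk A r = NGrey"
  shows "\<exists>H'. apply_rule delete_counter H H'"
proof -
  have fr: "af A r = r" using St_fix_r[OF St] .
  have nm: "nmark H (af A r) = amk A r" using St rV unfolding St_def by blast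
  have rim: "r \<in> af A ` V" using rV fr by (metis image_eqI)
  have rc: "r \<noteq> c" using St_nc[OF St rV] fr by simp
  have "nodes H = insert c (af A ` V)" "edges H = insert d E" "src H d = c" "tgt H d = r"
    "nmark H c = NGreen" "emark H d = EDashed" using St unfolding St_def by blast+
  then have F: "r \<in> nodes H" "c \<in> nodes H" "r \<noteq> c" "d \<in> edges H" "src H d = c" "tgt H d = r"
    "nmark H r = NGrey" "nmark H c = NGreen" "emark H d = EDashed"
    using rim rc nm fr g by auto
  moreover have F2: "\<forall>e\<in>edges H. (src H e = c \<or> tgt H e = c) \<longrightarrow> e = d"
  proof (intro ballI impI)
    fix e assume e: "e \<in> edges H" "src H e = c \<or> tgt H e = c"
    show "e = d"
    proof (rule ccontr)
      assume "e \<noteq> d"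
      then have eE: "e \<in> E" using e St unfolding St_def by auto
      have "src H e = src G0 e" "tgt H e = tgt G0 e" using St eE unfolding St_def by blast+
      then show False using e(2) St_fix_src[OF St eE] St_fix_tgt[OF St eE] St_nc[OF St eV(1)[OF eE]]
        St_nc[OF St eV(2)[OF eE]] by auto
    qed
  qed
  have "apply_rule delete_counter H (H\<lparr>nodes := nodes H - {c}, edges := edges H - {d},
            isroot := (isroot H)(r := True)\<rparr>)"
    unfolding apply_rule.simps
    by (rule exI[of _ r], rule exI[of _ c], rule exI[of _ d]) (use F F2 in blast)
  then show ?thesis by blast
qed



lemma no_deg_inv_step:
  assumes St: "FinSt A H" and ap: "apply_rule no_deg_inv H H'"
  shows "\<exists>v\<in>V. amk A v = NUnmarked \<and> FinSt (A\<lparr>amk := (amk A)(v := NGrey)\<rparr>) H'"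
proof -
  from ap obtain n where n: "n \<in> nodes H" "nmark H n = NUnmarked"
    and H': "H' = H\<lparr>nmark := (nmark H)(n := NGrey)\<rparr>" by auto
  obtain v where v: "v \<in> V" "n = af A v" using St n unfolding FinSt_def by auto
  have "amk A v = NUnmarked" using St v n unfolding FinSt_def by auto
  moreover have "FinSt (A\<lparr>amk := (amk A)(v := NGrey)\<rparr>) H'"
    using St v unfolding FinSt_def H' by (auto simp: inj_on_eq_iff)
  ultimately show ?thesis using v by blast
qed

lemma no_deg_inv_app: "FinSt A H \<Longrightarrow> v \<in> V \<Longrightarrow> amk A v = NUnmarked \<Longrightarrow> \<exists>H'. apply_rule no_deg_inv H H'"
  unfolding FinSt_def by auto



definition A0 :: ast where
  "A0 = \<lparr>af = id, alb = (\<lambda>v. if v = r then nlab G0 r @ [AInt 0] else nlab G0 v),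
     amk = (\<lambda>v. if v = r then NBlue else NGrey), art = (\<lambda>v. False), aem = (\<lambda>e. EUnmarked), acv = 0\<rparr>"

lemma set_counter_step:
  assumes ap: "apply_rule set_counter G0 H"
  shows "\<exists>c d. St c d A0 H"
proof -
  from ap obtain n m d where n: "n \<in> V" "nmark G0 n = NGrey" "isroot G0 n" "m \<notin> V" "d \<notin> E"
    and H: "H = G0\<lparr>nodes := insert m (nodes G0), edges := insert d (edges G0),
            src := (src G0)(d := m), tgt := (tgt G0)(d := n),
            nlab := (nlab G0)(n := nlab G0 n @ [AInt 0], m := [AInt 0]),
            nmark := (nmark G0)(n := NBlue, m := NGreen),
            isroot := (isroot G0)(n := False, m := False),
            elab := (elab G0)(d := []), emark := (emark G0)(d := EDashed)\<rparr>" by auto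
  have nr: "n = r" using onlyroot n by auto
  have mr: "m \<noteq> r" using n rV by auto
  have "St m d A0 H"
    unfolding St_def
  proof (intro conjI)
    show "\<forall>e\<in>E. src H e = src G0 e \<and> tgt H e = tgt G0 e \<and> elab H e = elab G0 e \<and> emark H e = aem A0 e"
      using n(5) unm unfolding H A0_def by auto
    show "\<forall>v\<in>V. nlab H (af A0 v) = alb A0 v \<and> nmark H (af A0 v) = amk A0 v \<and> isroot H (af A0 v) = art A0 v
        \<and> amk A0 v \<noteq> NGreen"
    proof
      fix v assume v: "v \<in> V"
      then have "v \<noteq> m" using n by auto
      then show "nlab H (af A0 v) = alb A0 v \<and> nmark H (af A0 v) = amk A0 v \<and> isroot H (af A0 v) = art A0 v
        \<and> amk A0 v \<noteq> NGreen"
        using v allgrey onlyroot nr unfolding H A0_def by auto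
    qed
  qed (use n nr mr in \<open>simp_all add: H A0_def\<close>)
  then show ?thesis by blast
qed

lemma set_counter_app: "\<exists>H. apply_rule set_counter G0 H"
proof -
  obtain m where m: "m \<notin> V" using ex_new_if_finite[OF infinite_UNIV_nat finV] by blast
  obtain d where d: "d \<notin> E" using ex_new_if_finite[OF infinite_UNIV_nat finE] by blast
  show ?thesis using m d rV rroot allgrey by (simp only: apply_rule.simps) blast
qed



end

lemma walk_start: "walk G u es v \<Longrightarrow> u \<in> nodes G"
  by (cases es) auto

lemma walk_end: "walk G u es v \<Longrightarrow> v \<in> nodes G"
  by (induction es arbitrary: u) auto

lemma walk_append: "walk G u (xs @ ys) v \<longleftrightarrow> (\<exists>m. walk G u xs m \<and> walk G m ys v)"
  by (induction xs arbitrary: u) (auto dest: walk_start)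

lemma walk_nodes: "walk G u es v \<Longrightarrow> u \<in> nodes G \<and> v \<in> nodes G \<and> set (map (tgt G) es) \<subseteq> nodes G"
  by (induction es arbitrary: u) (auto dest: walk_start walk_end)

lemma walk_snoc: "walk G u (xs @ [e]) v \<longleftrightarrow> walk G u xs (src G e) \<and> e \<in> edges G \<and> tgt G e = v \<and> v \<in> nodes G"
  unfolding walk_append by (auto dest: walk_end)

lemma path_weight_append: "path_weight G (xs @ ys) = path_weight G xs + path_weight G ys"
  unfolding path_weight_def by simp

lemma path_weight_Cons: "path_weight G (e # ys) = wt G e + path_weight G ys"
  unfolding path_weight_def by simp

lemma path_weight_Nil: "path_weight G [] = 0"
  unfolding path_weight_def by simp

lemma telescope:
  "walk G u es v \<Longrightarrow> (\<forall>e\<in>set es. h (tgt G e) \<le> h (src G e) + wt G e) \<Longrightarrow>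
    h v \<le> h u + path_weight G es"
proof (induction es arbitrary: u)
  case Nil then show ?case by (simp add: path_weight_Nil)
next
  case (Cons e es)
  then have "h v \<le> h (tgt G e) + path_weight G es" by auto
  moreover have "h (tgt G e) \<le> h u + wt G e" using Cons.prems by auto
  ultimately show ?case by (simp add: path_weight_Cons)
qed

lemma walk_split: "walk G u es v \<Longrightarrow> e \<in> set es \<Longrightarrow>
   \<exists>a b. es = a @ e # b \<and> walk G u a (src G e) \<and> walk G (tgt G e) b v"
proof -
  assume w: "walk G u es v" and e: "e \<in> set es"
  obtain a b where es: "es = a @ e # b" using split_list[OF e] by blast
  then obtain m where "walk G u a m" "walk G m (e # b) v" using w walk_append by metis
  then show ?thesis using es by auto
qed

lemma dpath_length:
  assumes "finite (nodes G)" "dpath G u es v"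
  shows "length es < card (nodes G)"
proof -
  have "set (u # map (tgt G) es) \<subseteq> nodes G" using walk_nodes[of G u es v] assms(2)
    unfolding dpath_def by auto
  then have "card (set (u # map (tgt G) es)) \<le> card (nodes G)" using assms(1) card_mono by blast
  moreover have "card (set (u # map (tgt G) es)) = length es + 1"
    using assms(2) distinct_card unfolding dpath_def by fastforce
  ultimately show ?thesis by simp
qed

lemma dpath_split:
  "dpath G u p z \<Longrightarrow> y \<in> set (u # map (tgt G) p) \<Longrightarrow>
   \<exists>p1 p2. p = p1 @ p2 \<and> dpath G u p1 y \<and> walk G y p2 z \<and> y \<notin> set (map (tgt G) p2) \<and> distinct (map (tgt G) p2)"
proof (induction p arbitrary: u)
  case Nil
  then show ?case unfolding dpath_def by auto
next
  case (Cons e p)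
  show ?case
  proof (cases "y = u")
    case True
    then show ?thesis using Cons.prems unfolding dpath_def
      by (intro exI[of _ "[]"] exI[of _ "e # p"]) auto
  next
    case False
    then have y: "y \<in> set (tgt G e # map (tgt G) p)" using Cons.prems by auto
    have dp: "dpath G (tgt G e) p z" using Cons.prems(1) unfolding dpath_def by auto
    obtain p1 p2 where pp: "p = p1 @ p2" "dpath G (tgt G e) p1 y" "walk G y p2 z"
      "y \<notin> set (map (tgt G) p2)" "distinct (map (tgt G) p2)"
      using Cons.IH[OF dp y] by blast
    have "dpath G u (e # p1) y"
      using Cons.prems(1) pp(1,2) unfolding dpath_def by auto
    then show ?thesis using pp by (intro exI[of _ "e # p1"] exI[of _ p2]) auto
  qed
qed

definition NC :: "hgraph \<Rightarrow> nat \<Rightarrow> bool" where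
  "NC G u \<longleftrightarrow> (\<exists>x cs. dcycle G x cs \<and> path_weight G cs < 0 \<and> reachable G u x)"

lemma walk_to_dpath:
  "walk G u es v \<Longrightarrow> \<exists>es'. dpath G u es' v \<and> length es' \<le> length es \<and>
     (path_weight G es' \<le> path_weight G es \<or> NC G u)"
proof (induction es arbitrary: v rule: rev_induct)
  case Nil
  then show ?case unfolding dpath_def by auto
next
  case (snoc e es)
  have w: "walk G u es (src G e)" "e \<in> edges G" "tgt G e = v" "v \<in> nodes G"
    using snoc.prems walk_snoc by metis+
  obtain p where p: "dpath G u p (src G e)" "length p \<le> length es"
    "path_weight G p \<le> path_weight G es \<or> NC G u"
    using snoc.IH[OF w(1)] by blast
  show ?case
  proof (cases "v \<in> set (u # map (tgt G) p)")
    case False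
    have "dpath G u (p @ [e]) v"
      using p(1) w False unfolding dpath_def by (auto simp: walk_snoc)
    then show ?thesis using p by (intro exI[of _ "p @ [e]"]) (auto simp: path_weight_append)
  next
    case True
    obtain p1 p2 where pp: "p = p1 @ p2" "dpath G u p1 v" "walk G v p2 (src G e)"
      "v \<notin> set (map (tgt G) p2)" "distinct (map (tgt G) p2)"
      using dpath_split[OF p(1) True] by blast
    have cyc: "dcycle G v (p2 @ [e])"
      unfolding dcycle_def using pp(3,4,5) w by (auto simp: walk_snoc)
    have "path_weight G p1 \<le> path_weight G (es @ [e]) \<or> NC G u"
    proof (cases "path_weight G (p2 @ [e]) < 0")
      case True
      then have "NC G u" unfolding NC_def reachable_def using cyc pp(2) by blast
      then show ?thesis by blast
    next
      case False
      then show ?thesis using p(3) pp(1) by (auto simp: path_weight_append)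
    qed
    then show ?thesis using pp p(2) by (intro exI[of _ p1]) auto
  qed
qed

lemma finite_dpaths:
  assumes "finite (edges G)"
  shows "finite {es. dpath G u es v}"
proof -
  have "{es. dpath G u es v} \<subseteq> {xs. set xs \<subseteq> edges G \<and> distinct xs}"
  proof
    fix es assume "es \<in> {es. dpath G u es v}"
    then have d: "dpath G u es v" by simp
    have "distinct es" using d unfolding dpath_def by (auto simp: distinct_map)
    moreover have "set es \<subseteq> edges G"
    proof -
      have "walk G u es v" using d unfolding dpath_def by simp
      then show ?thesis by (induction es arbitrary: u) auto
    qed
    ultimately show "es \<in> {xs. set xs \<subseteq> edges G \<and> distinct xs}" by simp
  qed
  then show ?thesis using finite_subset_distinct[OF assms] finite_subset by blast
qed

context bf0 begin

abbreviation "n0 \<equiv> card V"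

definition lbl :: "(nat \<Rightarrow> int option) \<Rightarrow> nat \<Rightarrow> label" where
  "lbl D v = nlab G0 v @ [enc (D v)]"

definition Q :: "nat \<Rightarrow> (nat \<Rightarrow> int option) \<Rightarrow> bool" where
  "Q k D \<longleftrightarrow> (\<forall>v es. walk G0 r es v \<and> length es \<le> k \<longrightarrow> (\<exists>t. D v = Some t \<and> t \<le> path_weight G0 es))"

definition S :: "(nat \<Rightarrow> int option) \<Rightarrow> bool" where
  "S D \<longleftrightarrow> (\<forall>v t. D v = Some t \<longrightarrow> (\<exists>es. walk G0 r es v \<and> path_weight G0 es = t))"

definition dle :: "(nat \<Rightarrow> int option) \<Rightarrow> (nat \<Rightarrow> int option) \<Rightarrow> bool" where
  "dle D' D \<longleftrightarrow> (\<forall>z t. D z = Some t \<longrightarrow> (\<exists>s. D' z = Some s \<and> s \<le> t))"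

definition Bnd :: "nat \<Rightarrow> (nat \<Rightarrow> int option) \<Rightarrow> nat \<Rightarrow> bool" where
  "Bnd k D e \<longleftrightarrow> (\<forall>es. walk G0 r es (src G0 e) \<and> length es \<le> k \<longrightarrow>
      (\<exists>t. D (tgt G0 e) = Some t \<and> t \<le> path_weight G0 es + wt G0 e))"

definition redE :: "(nat \<Rightarrow> int option) \<Rightarrow> nat \<Rightarrow> bool" where
  "redE D e \<longleftrightarrow> (\<exists>s t. D (src G0 e) = Some s \<and> D (tgt G0 e) = Some t \<and> s + wt G0 e < t)"

lemma lbl_Int: "lbl D v = x @ [AInt s] \<longleftrightarrow> x = nlab G0 v \<and> D v = Some s"
  unfolding lbl_def by (cases "D v") auto

lemma lbl_Str: "lbl D v = x @ [AStr ''f''] \<longleftrightarrow> x = nlab G0 v \<and> D v = None"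
  unfolding lbl_def by (cases "D v") auto

lemma lbl_upd: "(lbl D)(u := nlab G0 u @ [AInt i]) = lbl (D(u := Some i))"
  unfolding lbl_def by auto

lemma dle_refl: "dle D D" unfolding dle_def by auto

lemma dle_trans: "dle D2 D1 \<Longrightarrow> dle D1 D0 \<Longrightarrow> dle D2 D0"
  unfolding dle_def by (meson order_trans)

lemma Q_mono: "Q k D \<Longrightarrow> dle D' D \<Longrightarrow> Q k D'"
  unfolding Q_def dle_def by (meson order_trans)

lemma Bnd_mono: "Bnd k D e \<Longrightarrow> dle D' D \<Longrightarrow> Bnd k D' e"
  unfolding Bnd_def dle_def by (meson order_trans)

lemma relax_dle:
  assumes "D u = None \<or> (\<exists>t. D u = Some t \<and> i < t)"
  shows "dle (D(u := Some i)) D"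
  using assms unfolding dle_def by (auto)

lemma relax_S:
  assumes S: "S D" and e: "e \<in> E" and s: "D (src G0 e) = Some s"
  shows "S (D(tgt G0 e := Some (s + wt G0 e)))"
  unfolding S_def
proof (intro allI impI)
  fix v t assume h: "(D(tgt G0 e := Some (s + wt G0 e))) v = Some t"
  show "\<exists>es. walk G0 r es v \<and> path_weight G0 es = t"
  proof (cases "v = tgt G0 e")
    case True
    obtain es where es: "walk G0 r es (src G0 e)" "path_weight G0 es = s" using S s unfolding S_def by blast
    have "walk G0 r (es @ [e]) v" using es e True eV[OF e] by (simp add: walk_snoc)
    moreover have "path_weight G0 (es @ [e]) = t" using es h True by (simp add: path_weight_append path_weight_def)
    ultimately show ?thesis by blast
  next
    case False
    then show ?thesis using S h unfolding S_def by auto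
  qed
qed

lemma relax_Bnd:
  assumes Q: "Q k D" and e: "e \<in> E"
    and h: "\<And>s. D (src G0 e) = Some s \<Longrightarrow> \<exists>t. D (tgt G0 e) = Some t \<and> t \<le> s + wt G0 e"
  shows "Bnd k D e"
  unfolding Bnd_def
proof (intro allI impI)
  fix es assume es: "walk G0 r es (src G0 e) \<and> length es \<le> k"
  then obtain s where s: "D (src G0 e) = Some s" "s \<le> path_weight G0 es" using Q unfolding Q_def by blast
  then show "\<exists>t. D (tgt G0 e) = Some t \<and> t \<le> path_weight G0 es + wt G0 e" using h[OF s(1)] by force
qed

lemma Q_step:
  assumes Q: "Q k D" and B: "\<forall>e\<in>E. Bnd k D e"
  shows "Q (Suc k) D"
  unfolding Q_def
proof (intro allI impI)
  fix v es assume h: "walk G0 r es v \<and> length es \<le> Suc k"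
  show "\<exists>t. D v = Some t \<and> t \<le> path_weight G0 es"
  proof (cases "length es \<le> k")
    case True then show ?thesis using Q h unfolding Q_def by blast
  next
    case False
    then have "es \<noteq> []" by auto
    then obtain es' e where es: "es = es' @ [e]" by (metis rev_exhaust)
    have w: "walk G0 r es' (src G0 e)" "e \<in> E" "tgt G0 e = v" using h es by (auto simp: walk_snoc)
    have "length es' \<le> k" using h es by simp
    then obtain t where "D (tgt G0 e) = Some t" "t \<le> path_weight G0 es' + wt G0 e"
      using B w unfolding Bnd_def by blast
    then show ?thesis using w es by (simp add: path_weight_append path_weight_def)
  qed
qed

definition D0 :: "nat \<Rightarrow> int option" where
  "D0 = (\<lambda>v. if v = r then Some 0 else None)"

lemma Q0: "Q 0 D0"
  unfolding Q_def D0_def by (auto simp: path_weight_Nil)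

lemma S0: "S D0"
  unfolding S_def D0_def using rV by (auto intro!: exI[of _ "[]"] simp: path_weight_Nil)

end

context bf0 begin

definition marksR :: "ast \<Rightarrow> bool" where
  "marksR A \<longleftrightarrow> (\<forall>u\<in>V. u \<notin> Iso \<longrightarrow> amk A u \<in> {NBlue, NGrey}) \<and> (\<forall>u\<in>V. u \<in> Iso \<longrightarrow> amk A u \<in> {NBlue, NUnmarked})"
definition onlyr :: "ast \<Rightarrow> nat \<Rightarrow> bool" where "onlyr A v \<longleftrightarrow> (\<forall>u\<in>V. art A u = (u = v))"
definition noroot :: "ast \<Rightarrow> bool" where "noroot A \<longleftrightarrow> (\<forall>u\<in>V. \<not> art A u)"
definition bcount :: "ast \<Rightarrow> nat" where "bcount A = card {u\<in>V. amk A u = NBlue}"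
definition gcount :: "ast \<Rightarrow> nat" where "gcount A = card {u\<in>V. amk A u = NGrey}"
definition ucount :: "ast \<Rightarrow> nat \<Rightarrow> nat" where "ucount A v = card {e\<in>E. src G0 e = v \<and> aem A e = EUnmarked}"
definition becount :: "ast \<Rightarrow> nat \<Rightarrow> nat" where "becount A v = card {e\<in>E. src G0 e = v \<and> aem A e = EBlue}"
definition erule :: "ast \<Rightarrow> nat \<Rightarrow> bool" where
  "erule A e \<longleftrightarrow> aem A e = (if amk A (src G0 e) = NGrey then EBlue else EUnmarked)"

definition RCore :: "nat \<Rightarrow> nat \<Rightarrow> nat \<Rightarrow> ast \<Rightarrow> (nat \<Rightarrow> int option) \<Rightarrow> hgraph \<Rightarrow> bool" where
  "RCore c d k A D H \<longleftrightarrow> St c d A H \<and> (\<forall>u\<in>V. alb A u = lbl D u) \<and> Q k D \<and> S D \<and>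
     acv A = int (n0 - 1 - Suc k) \<and> Suc k \<le> n0 - 1 \<and> marksR A"

definition IR :: "nat \<Rightarrow> nat \<Rightarrow> nat \<Rightarrow> ast \<Rightarrow> (nat \<Rightarrow> int option) \<Rightarrow> hgraph \<Rightarrow> bool" where
  "IR c d k A D H \<longleftrightarrow> RCore c d k A D H \<and> noroot A \<and> (\<forall>e\<in>E. erule A e) \<and>
     (\<forall>e\<in>E. aem A e = EBlue \<longrightarrow> Bnd k D e)"

definition IIn :: "nat \<Rightarrow> nat \<Rightarrow> nat \<Rightarrow> nat \<Rightarrow> nat \<Rightarrow> ast \<Rightarrow> (nat \<Rightarrow> int option) \<Rightarrow> hgraph \<Rightarrow> bool" where
  "IIn c d k v N A D H \<longleftrightarrow> RCore c d k A D H \<and> v \<in> V \<and> v \<notin> Iso \<and> amk A v = NBlue \<and> onlyr A v \<and>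
     bcount A = N \<and> (\<forall>e\<in>E. src G0 e \<noteq> v \<longrightarrow> erule A e) \<and>
     (\<forall>e\<in>E. src G0 e = v \<longrightarrow> aem A e \<in> {EUnmarked, EBlue}) \<and>
     (\<forall>e\<in>E. aem A e = EBlue \<longrightarrow> Bnd k D e)"

definition IRed :: "nat \<Rightarrow> nat \<Rightarrow> nat \<Rightarrow> nat \<Rightarrow> nat \<Rightarrow> nat \<Rightarrow> nat \<Rightarrow> ast \<Rightarrow> (nat \<Rightarrow> int option) \<Rightarrow> hgraph \<Rightarrow> bool" where
  "IRed c d k v N Mx e0 A D H \<longleftrightarrow> RCore c d k A D H \<and> v \<in> V \<and> v \<notin> Iso \<and> amk A v = NBlue \<and> onlyr A v \<and>
     bcount A = N \<and> e0 \<in> E \<and> src G0 e0 = v \<and> aem A e0 = ERed \<and>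
     (\<forall>e\<in>E. src G0 e \<noteq> v \<longrightarrow> erule A e) \<and>
     (\<forall>e\<in>E. src G0 e = v \<and> e \<noteq> e0 \<longrightarrow> aem A e \<in> {EUnmarked, EBlue}) \<and>
     (\<forall>e\<in>E. aem A e = EBlue \<longrightarrow> Bnd k D e) \<and> ucount A v < Mx"

lemma onlyr_eq: "onlyr A v \<Longrightarrow> u \<in> V \<Longrightarrow> art A u \<Longrightarrow> u = v"
  unfolding onlyr_def by auto

lemma IRed_red: "IRed c d k v N Mx e0 A D H \<Longrightarrow> e \<in> E \<Longrightarrow> aem A e = ERed \<Longrightarrow> e = e0"
  unfolding IRed_def erule_def by (metis emark.distinct insertE empty_iff)

lemma ucount_less:
  assumes "e \<in> E" "src G0 e = v" "aem A e = EUnmarked" and that: "m \<noteq> EUnmarked"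
  shows "ucount (A\<lparr>aem := (aem A)(e := m)\<rparr>) v < ucount A v"
proof -
  have eq: "{e'\<in>E. src G0 e' = v \<and> ((aem A)(e := m)) e' = EUnmarked} = {e'\<in>E. src G0 e' = v \<and> aem A e' = EUnmarked} - {e}"
    using that by auto
  have mem: "e \<in> {e'\<in>E. src G0 e' = v \<and> aem A e' = EUnmarked}" using assms by auto
  have fin: "finite {e'\<in>E. src G0 e' = v \<and> aem A e' = EUnmarked}" using finE by auto
  have "card ({e'\<in>E. src G0 e' = v \<and> aem A e' = EUnmarked} - {e}) < card {e'\<in>E. src G0 e' = v \<and> aem A e' = EUnmarked}"
    by (rule card_Diff1_less[OF fin mem])
  then show ?thesis unfolding ucount_def using eq by simp
qed

lemma inner_s1:
  assumes I: "IIn c d k v N A D G"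
  shows "hoare ((=) G) (R unmarked_edge) (\<lambda>Res. case Res of
     Ok H \<Rightarrow> (\<exists>e0 A' D'. IRed c d k v N (ucount A v) e0 A' D' H)
   | Fail \<Rightarrow> (\<forall>e\<in>E. src G0 e = v \<longrightarrow> aem A e \<noteq> EUnmarked))"
proof (rule hoare_call1, simp only: result.case, intro conjI allI impI)
  have St: "St c d A G" using I unfolding IIn_def RCore_def by blast
  fix G' H assume G': "G = G'" and "apply_rule unmarked_edge G' H"
  then obtain e where e: "e \<in> E" "amk A (src G0 e) = NBlue" "art A (src G0 e)" "aem A e = EUnmarked"
    and St': "St c d (A\<lparr>aem := (aem A)(e := ERed)\<rparr>) H"
    using unmarked_edge_step[OF St] by blast
  have sv: "src G0 e = v" using onlyr_eq[of A v "src G0 e"] I e eV unfolding IIn_def by blast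
  let ?A = "A\<lparr>aem := (aem A)(e := ERed)\<rparr>"
  have "ucount ?A v < ucount A v" using ucount_less[OF e(1) sv e(4)] by simp
  then have "IRed c d k v N (ucount A v) e ?A D H"
    using I St' e sv unfolding IIn_def IRed_def RCore_def marksR_def onlyr_def bcount_def erule_def
    by auto
  then show "\<exists>e0 A' D'. IRed c d k v N (ucount A v) e0 A' D' H" by blast
next
  have St: "St c d A G" using I unfolding IIn_def RCore_def by blast
  fix G' assume G': "G = G'" and na: "\<not> (\<exists>H. apply_rule unmarked_edge G' H)"
  show "\<forall>e\<in>E. src G0 e = v \<longrightarrow> aem A e \<noteq> EUnmarked"
  proof (intro ballI impI notI)
    fix e assume "e \<in> E" "src G0 e = v" "aem A e = EUnmarked"
    then have "\<exists>H. apply_rule unmarked_edge G H"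
      using unmarked_edge_app[OF St] I unfolding IIn_def onlyr_def by auto
    then show False using na G' by simp
  qed
qed

end

context bf0 begin

lemma IRed_relab:
  assumes I: "IRed c d k v N Mx e0 A D G" and St': "St c d (A\<lparr>alb := L\<rparr>) H"
    and lab: "\<forall>u\<in>V. L u = lbl D' u" and dl: "dle D' D" and S': "S D'"
  shows "IRed c d k v N Mx e0 (A\<lparr>alb := L\<rparr>) D' H"
proof -
  have Q': "Q k D'" using I dl Q_mono unfolding IRed_def RCore_def by blast
  have B': "\<forall>e\<in>E. aem A e = EBlue \<longrightarrow> Bnd k D' e" using I dl Bnd_mono unfolding IRed_def by blast
  show ?thesis using I St' lab Q' S' B' unfolding IRed_def RCore_def marksR_def onlyr_def bcount_def erule_def ucount_def
    by simp
qed

lemma IRed_facts: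
  assumes I: "IRed c d k v N Mx e0 A D G"
  shows "St c d A G" "e0 \<in> E" "src G0 e0 = v" "v \<in> V" "amk A v = NBlue" "art A v" "aem A e0 = ERed"
    "\<forall>u\<in>V. alb A u = lbl D u" "Q k D" "S D" "tgt G0 e0 \<in> V" "tgt G0 e0 \<noteq> v"
proof -
  have "e0 \<in> E" "src G0 e0 = v" using I unfolding IRed_def by auto
  then show "tgt G0 e0 \<noteq> v" using eloop[of e0] by auto
  show "St c d A G" "e0 \<in> E" "src G0 e0 = v" "v \<in> V" "amk A v = NBlue" "art A v" "aem A e0 = ERed"
    "\<forall>u\<in>V. alb A u = lbl D u" "Q k D" "S D" "tgt G0 e0 \<in> V"
  using I eV unfolding IRed_def RCore_def onlyr_def by auto
qed

lemma inner_s2: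
  assumes I: "IRed c d k v N Mx e0 A D G"
  shows "hoare ((=) G) (Call [unvisited, reduce]) (\<lambda>Res. case Res of
     Ok H \<Rightarrow> (\<exists>A' D'. IRed c d k v N Mx e0 A' D' H \<and> Bnd k D' e0)
   | Fail \<Rightarrow> Bnd k D e0)"
proof -
  note F = IRed_facts[OF I]
  let ?t = "tgt G0 e0" and ?w = "wt G0 e0"
  have upd: "\<exists>A' D'. IRed c d k v N Mx e0 A' D' H \<and> Bnd k D' e0"
    if St': "St c d (A\<lparr>alb := (alb A)(?t := nlab G0 ?t @ [AInt (s + ?w)])\<rparr>) H"
      and s: "D v = Some s" and dl: "dle (D(?t := Some (s + ?w))) D" for H s
  proof -
    let ?D = "D(?t := Some (s + ?w))"
    have lab: "\<forall>u\<in>V. ((alb A)(?t := nlab G0 ?t @ [AInt (s + ?w)])) u = lbl ?D u"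
      using F(8) unfolding lbl_def by auto
    have S': "S ?D" using relax_S[OF F(10) F(2)] s F(3) by simp
    have I': "IRed c d k v N Mx e0 (A\<lparr>alb := (alb A)(?t := nlab G0 ?t @ [AInt (s + ?w)])\<rparr>) ?D H"
      by (rule IRed_relab[OF I St' lab dl S'])
    have "Bnd k ?D e0"
      by (rule relax_Bnd[OF Q_mono[OF F(9) dl] F(2)]) (use s F(3) F(12) in auto)
    then show ?thesis using I' by blast
  qed
  have U: "\<exists>A' D'. IRed c d k v N Mx e0 A' D' H \<and> Bnd k D' e0" if ap: "apply_rule unvisited G H" for H
  proof -
    obtain e x y s where e: "e \<in> E" "aem A e = ERed" "alb A (src G0 e) = x @ [AInt s]"
      "alb A (tgt G0 e) = y @ [AStr ''f'']"
      and St': "St c d (A\<lparr>alb := (alb A)(tgt G0 e := y @ [AInt (s + wt G0 e)])\<rparr>) H"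
      using unvisited_step[OF F(1) ap] by blast
    have ee: "e = e0" using IRed_red[OF I e(1,2)] .
    have s: "D v = Some s" using e(3) ee F(3,4,8) by (auto simp: lbl_Int)
    have tN: "D ?t = None" "y = nlab G0 ?t" using e(4) ee F(8,11) by (auto simp: lbl_Str)
    have dl: "dle (D(?t := Some (s + ?w))) D" by (rule relax_dle) (use tN in auto)
    show ?thesis using upd[OF _ s dl] St' ee tN by simp
  qed
  have Rd: "\<exists>A' D'. IRed c d k v N Mx e0 A' D' H \<and> Bnd k D' e0" if ap: "apply_rule reduce G H" for H
  proof -
    obtain e x y s t where e: "e \<in> E" "aem A e = ERed" "alb A (src G0 e) = x @ [AInt s]"
      "alb A (tgt G0 e) = y @ [AInt t]" "s + wt G0 e < t"
      and St': "St c d (A\<lparr>alb := (alb A)(tgt G0 e := y @ [AInt (s + wt G0 e)])\<rparr>) H"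
      using reduce_step[OF F(1) ap] by blast
    have ee: "e = e0" using IRed_red[OF I e(1,2)] .
    have s: "D v = Some s" using e(3) ee F(3,4,8) by (auto simp: lbl_Int)
    have tN: "D ?t = Some t" "y = nlab G0 ?t" using e(4) ee F(8,11) by (auto simp: lbl_Int)
    have dl: "dle (D(?t := Some (s + ?w))) D" by (rule relax_dle) (use tN e(5) ee in auto)
    show ?thesis using upd[OF _ s dl] St' ee tN by simp
  qed
  have Fl: "Bnd k D e0" if nu: "\<not> (\<exists>H. apply_rule unvisited G H)" and nr: "\<not> (\<exists>H. apply_rule reduce G H)"
  proof (rule relax_Bnd[OF F(9) F(2)])
    fix s assume s: "D (src G0 e0) = Some s"
    have ls: "alb A (src G0 e0) = nlab G0 (src G0 e0) @ [AInt s]" using s F(2,3,4,8) by (simp add: lbl_def)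
    show "\<exists>t. D ?t = Some t \<and> t \<le> s + ?w"
    proof (cases "D ?t")
      case None
      then have "alb A ?t = nlab G0 ?t @ [AStr ''f'']" using F(8,11) by (simp add: lbl_def)
      then have "\<exists>H. apply_rule unvisited G H"
        using unvisited_app[OF F(1) F(2)] F ls by auto
      then show ?thesis using nu by blast
    next
      case (Some t)
      then have lt: "alb A ?t = nlab G0 ?t @ [AInt t]" using F(8,11) by (simp add: lbl_def)
      show ?thesis
      proof (cases "s + ?w < t")
        case True
        then have "\<exists>H. apply_rule reduce G H"
          using reduce_app[OF F(1) F(2)] F ls lt by auto
        then show ?thesis using nr by blast
      next
        case False then show ?thesis using Some by auto
      qed
    qed
  qed
  show ?thesis
    by (rule hoare_call) (use U Rd Fl in auto)
qed

lemma inner_s3: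
  assumes I: "IRed c d k v N Mx e0 A D G" and B: "Bnd k D e0"
  shows "hoare ((=) G) (R finish) (\<lambda>Res. case Res of
     Ok H \<Rightarrow> (\<exists>A' D'. IIn c d k v N A' D' H \<and> ucount A' v < Mx)
   | Fail \<Rightarrow> False)"
proof -
  note F = IRed_facts[OF I]
  have Ok: "\<exists>A' D'. IIn c d k v N A' D' H \<and> ucount A' v < Mx" if ap: "apply_rule finish G H" for H
  proof -
    obtain e where e: "e \<in> E" "aem A e = ERed"
      and St': "St c d (A\<lparr>aem := (aem A)(e := EBlue)\<rparr>) H"
      using finish_step[OF F(1) ap] by blast
    have ee: "e = e0" using IRed_red[OF I e(1,2)] .
    let ?A = "A\<lparr>aem := (aem A)(e0 := EBlue)\<rparr>"
    have uc: "ucount ?A v = ucount A v"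
    proof -
      have "{e\<in>E. src G0 e = v \<and> aem ?A e = EUnmarked} = {e\<in>E. src G0 e = v \<and> aem A e = EUnmarked}"
        using F(7) by auto
      then show ?thesis unfolding ucount_def by simp
    qed
    have "IIn c d k v N ?A D H"
      using I St' ee B unfolding IRed_def IIn_def RCore_def marksR_def onlyr_def bcount_def erule_def
      by auto
    then show ?thesis using uc I unfolding IRed_def by auto
  qed
  have "\<exists>H. apply_rule finish G H"
    using finish_app[OF F(1) F(2)] F by auto
  then show ?thesis
    by (intro hoare_call1) (use Ok in auto)
qed

definition Inner :: cmd where
  "Inner = Seq (R unmarked_edge) (Seq (Try (Call [unvisited, reduce]) Skip Skip) (R finish))"

lemma inner_body:
  assumes I: "IIn c d k v N A D G"
  shows "hoare ((=) G) Inner (\<lambda>Res. case Res of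
     Ok H \<Rightarrow> (\<exists>a'. IIn c d k v N (fst a') (snd a') H \<and> ucount (fst a') v < ucount A v)
   | Fail \<Rightarrow> (\<forall>e\<in>E. src G0 e = v \<longrightarrow> aem A e \<noteq> EUnmarked))"
  unfolding Inner_def
proof (rule hoare_seq)
  let ?Mx = "ucount A v"
  show "hoare ((=) G) (R unmarked_edge) (\<lambda>Res. case Res of
      Ok H \<Rightarrow> (\<exists>e0 A' D'. IRed c d k v N ?Mx e0 A' D' H)
    | Fail \<Rightarrow> (case Fail of Ok H \<Rightarrow> (\<exists>a'. IIn c d k v N (fst a') (snd a') H \<and> ucount (fst a') v < ?Mx)
         | Fail \<Rightarrow> (\<forall>e\<in>E. src G0 e = v \<longrightarrow> aem A e \<noteq> EUnmarked)))"
    by (rule hoare_post[OF inner_s1[OF I]]) (auto split: result.splits)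
  show "hoare (\<lambda>H. \<exists>e0 A' D'. IRed c d k v N ?Mx e0 A' D' H)
     (Seq (Try (Call [unvisited, reduce]) Skip Skip) (R finish))
     (\<lambda>Res. case Res of Ok H \<Rightarrow> (\<exists>a'. IIn c d k v N (fst a') (snd a') H \<and> ucount (fst a') v < ?Mx)
         | Fail \<Rightarrow> (\<forall>e\<in>E. src G0 e = v \<longrightarrow> aem A e \<noteq> EUnmarked))"
  proof (rule hoare_pre)
    fix G1 assume "\<exists>e0 A' D'. IRed c d k v N ?Mx e0 A' D' G1"
    then obtain e0 A1 D1 where I1: "IRed c d k v N ?Mx e0 A1 D1 G1" by blast
    show "hoare ((=) G1) (Seq (Try (Call [unvisited, reduce]) Skip Skip) (R finish))
     (\<lambda>Res. case Res of Ok H \<Rightarrow> (\<exists>a'. IIn c d k v N (fst a') (snd a') H \<and> ucount (fst a') v < ?Mx)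
         | Fail \<Rightarrow> (\<forall>e\<in>E. src G0 e = v \<longrightarrow> aem A e \<noteq> EUnmarked))"
    proof (rule hoare_seq[where M = "\<lambda>H. \<exists>A' D'. IRed c d k v N ?Mx e0 A' D' H \<and> Bnd k D' e0"])
      show "hoare ((=) G1) (Try (Call [unvisited, reduce]) Skip Skip)
        (\<lambda>Res. case Res of Ok H \<Rightarrow> (\<exists>A' D'. IRed c d k v N ?Mx e0 A' D' H \<and> Bnd k D' e0)
           | Fail \<Rightarrow> (case Fail of Ok H \<Rightarrow> (\<exists>a'. IIn c d k v N (fst a') (snd a') H \<and> ucount (fst a') v < ?Mx)
         | Fail \<Rightarrow> (\<forall>e\<in>E. src G0 e = v \<longrightarrow> aem A e \<noteq> EUnmarked)))"
      proof (rule hoare_try[where M = "\<lambda>H. \<exists>A' D'. IRed c d k v N ?Mx e0 A' D' H \<and> Bnd k D' e0"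
            and F = "\<lambda>G'. G' = G1 \<and> Bnd k D1 e0"])
        fix G2 assume "G1 = G2"
        then show "hoare ((=) G2) (Call [unvisited, reduce])
          (\<lambda>Res. case Res of Ok H \<Rightarrow> (\<exists>A' D'. IRed c d k v N ?Mx e0 A' D' H \<and> Bnd k D' e0)
            | Fail \<Rightarrow> G2 = G1 \<and> Bnd k D1 e0)"
          using hoare_post[OF inner_s2[OF I1]] by (auto split: result.splits)
      next
        show "hoare (\<lambda>H. \<exists>A' D'. IRed c d k v N ?Mx e0 A' D' H \<and> Bnd k D' e0) Skip
          (\<lambda>Res. case Res of Ok H \<Rightarrow> (\<exists>A' D'. IRed c d k v N ?Mx e0 A' D' H \<and> Bnd k D' e0)
           | Fail \<Rightarrow> (case Fail of Ok H \<Rightarrow> (\<exists>a'. IIn c d k v N (fst a') (snd a') H \<and> ucount (fst a') v < ?Mx)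
         | Fail \<Rightarrow> (\<forall>e\<in>E. src G0 e = v \<longrightarrow> aem A e \<noteq> EUnmarked)))"
          by (rule hoare_skip) simp
      next
        fix G2 assume "G1 = G2" "G2 = G1 \<and> Bnd k D1 e0"
        then show "hoare ((=) G2) Skip
          (\<lambda>Res. case Res of Ok H \<Rightarrow> (\<exists>A' D'. IRed c d k v N ?Mx e0 A' D' H \<and> Bnd k D' e0)
           | Fail \<Rightarrow> (case Fail of Ok H \<Rightarrow> (\<exists>a'. IIn c d k v N (fst a') (snd a') H \<and> ucount (fst a') v < ?Mx)
         | Fail \<Rightarrow> (\<forall>e\<in>E. src G0 e = v \<longrightarrow> aem A e \<noteq> EUnmarked)))"
          using I1 by (intro hoare_skip) auto
      qed
    next
      show "hoare (\<lambda>H. \<exists>A' D'. IRed c d k v N ?Mx e0 A' D' H \<and> Bnd k D' e0) (R finish)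
        (\<lambda>Res. case Res of Ok H \<Rightarrow> (\<exists>a'. IIn c d k v N (fst a') (snd a') H \<and> ucount (fst a') v < ?Mx)
         | Fail \<Rightarrow> (\<forall>e\<in>E. src G0 e = v \<longrightarrow> aem A e \<noteq> EUnmarked))"
      proof (rule hoare_pre)
        fix G2 assume "\<exists>A' D'. IRed c d k v N ?Mx e0 A' D' G2 \<and> Bnd k D' e0"
        then obtain A2 D2 where I2: "IRed c d k v N ?Mx e0 A2 D2 G2" "Bnd k D2 e0" by blast
        show "hoare ((=) G2) (R finish)
          (\<lambda>Res. case Res of Ok H \<Rightarrow> (\<exists>a'. IIn c d k v N (fst a') (snd a') H \<and> ucount (fst a') v < ?Mx)
         | Fail \<Rightarrow> (\<forall>e\<in>E. src G0 e = v \<longrightarrow> aem A e \<noteq> EUnmarked))"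
          by (rule hoare_post[OF inner_s3[OF I2]]) (auto split: result.splits)
      qed
    qed
  qed
qed

end

lemma hoare_call1I:
  assumes "\<And>H. apply_rule r G H \<Longrightarrow> P H" and "\<not> (\<exists>H. apply_rule r G H) \<Longrightarrow> F"
  shows "hoare ((=) G) (R r) (\<lambda>Res. case Res of Ok H \<Rightarrow> P H | Fail \<Rightarrow> F)"
  using assms by (intro hoare_call1) auto

context bf0 begin

definition IR1 :: "nat \<Rightarrow> nat \<Rightarrow> nat \<Rightarrow> nat \<Rightarrow> nat \<Rightarrow> ast \<Rightarrow> (nat \<Rightarrow> int option) \<Rightarrow> hgraph \<Rightarrow> bool" where
  "IR1 c d k v N A D H \<longleftrightarrow> RCore c d k A D H \<and> v \<in> V \<and> amk A v = NBlue \<and> onlyr A v \<and>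
     bcount A = N \<and> (\<forall>e\<in>E. erule A e) \<and> (\<forall>e\<in>E. aem A e = EBlue \<longrightarrow> Bnd k D e)"

lemma bcount_less:
  assumes "v \<in> V" "amk A v = NBlue" "m \<noteq> NBlue"
  shows "card {u\<in>V. ((amk A)(v := m)) u = NBlue} < card {u\<in>V. amk A u = NBlue}"
proof -
  have eq: "{u\<in>V. ((amk A)(v := m)) u = NBlue} = {u\<in>V. amk A u = NBlue} - {v}" using assms by auto
  have "card ({u\<in>V. amk A u = NBlue} - {v}) < card {u\<in>V. amk A u = NBlue}"
    by (rule card_Diff1_less) (use finV assms in auto)
  then show ?thesis using eq by simp
qed

lemma relax_root1:
  assumes I: "IR c d k A D G"
  shows "hoare ((=) G) (R root1) (\<lambda>Res. case Res of
     Ok H \<Rightarrow> (\<exists>v A'. IR1 c d k v (bcount A) A' D H) | Fail \<Rightarrow> (\<forall>u\<in>V. amk A u \<noteq> NBlue))"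
proof (rule hoare_call1I)
  have St: "St c d A G" using I unfolding IR_def RCore_def by blast
  fix H assume "apply_rule root1 G H"
  then obtain v where v: "v \<in> V" "amk A v = NBlue" and St': "St c d (A\<lparr>art := (art A)(v := True)\<rparr>) H"
    using root1_step[OF St] by blast
  have "IR1 c d k v (bcount A) (A\<lparr>art := (art A)(v := True)\<rparr>) D H"
    using I St' v unfolding IR_def IR1_def RCore_def marksR_def onlyr_def noroot_def bcount_def erule_def
    by auto
  then show "\<exists>v A'. IR1 c d k v (bcount A) A' D H" by blast
next
  have St: "St c d A G" using I unfolding IR_def RCore_def by blast
  assume "\<not> (\<exists>H. apply_rule root1 G H)"
  then show "\<forall>u\<in>V. amk A u \<noteq> NBlue" using root1_app[OF St] by blast
qed

lemma relax_nodeg: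
  assumes I: "IR1 c d k v N A D G"
  shows "hoare ((=) G) (R no_deg) (\<lambda>Res. case Res of
     Ok H \<Rightarrow> (\<exists>a'. IR c d k (fst a') (snd a') H \<and> bcount (fst a') < N) | Fail \<Rightarrow> v \<notin> Iso)"
proof (rule hoare_call1I)
  have St: "St c d A G" using I unfolding IR1_def RCore_def by blast
  fix H assume "apply_rule no_deg G H"
  then obtain v' m where v: "v' \<in> V" "amk A v' = NBlue" "art A v'" "v' \<in> Iso"
    and St': "St c d (A\<lparr>af := (af A)(v' := m), amk := (amk A)(v' := NUnmarked), art := (art A)(v' := False)\<rparr>) H"
    using no_deg_step[OF St] by blast
  have vv: "v' = v" using v I unfolding IR1_def onlyr_def by auto
  let ?A = "A\<lparr>af := (af A)(v := m), amk := (amk A)(v := NUnmarked), art := (art A)(v := False)\<rparr>"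
  have er: "\<forall>e\<in>E. erule ?A e"
  proof
    fix e assume e: "e \<in> E"
    have "src G0 e \<noteq> v" using eIso(1)[OF e] v vv by auto
    then show "erule ?A e" using I e unfolding IR1_def erule_def by auto
  qed
  have "IR c d k ?A D H"
    using I St' v vv er unfolding IR_def IR1_def RCore_def marksR_def onlyr_def noroot_def
    by auto
  moreover have "bcount ?A < N" using bcount_less[of v A NUnmarked] v vv I unfolding IR1_def bcount_def by auto
  ultimately show "\<exists>a'. IR c d k (fst a') (snd a') H \<and> bcount (fst a') < N"
    by (intro exI[of _ "(?A, D)"]) simp
next
  have St: "St c d A G" using I unfolding IR1_def RCore_def by blast
  assume na: "\<not> (\<exists>H. apply_rule no_deg G H)"
  show "v \<notin> Iso"
  proof
    assume "v \<in> Iso"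
    then have "\<exists>H. apply_rule no_deg G H" using no_deg_app[OF St] I unfolding IR1_def onlyr_def by auto
    then show False using na by blast
  qed
qed

lemma relax_inner_loop:
  assumes I: "IR1 c d k v N A D G" and nv: "v \<notin> Iso"
  shows "hoare ((=) G) (Loop Inner) (\<lambda>Res. \<exists>a H. Res = Ok H \<and> IIn c d k v N (fst a) (snd a) H \<and>
     (\<forall>e\<in>E. src G0 e = v \<longrightarrow> aem (fst a) e \<noteq> EUnmarked))"
proof -
  have h: "hoare (\<lambda>G. \<exists>a. IIn c d k v N (fst a) (snd a) G) (Loop Inner) (\<lambda>Res. \<exists>a H. Res = Ok H \<and> IIn c d k v N (fst a) (snd a) H \<and>
     (\<forall>e\<in>E. src G0 e = v \<longrightarrow> aem (fst a) e \<noteq> EUnmarked))"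
    by (rule hoare_loop[where \<mu> = "\<lambda>a. ucount (fst a) v"]) (rule inner_body)
  have i: "IIn c d k v N A D G"
    using I nv unfolding IR1_def IIn_def erule_def by auto
  show ?thesis by (rule hoare_strengthen[OF h]) (use i in \<open>auto intro!: exI[of _ "(A, D)"]\<close>)
qed

lemma relax_unroot1:
  assumes I: "IIn c d k v N A D G" and X: "\<forall>e\<in>E. src G0 e = v \<longrightarrow> aem A e \<noteq> EUnmarked"
  shows "hoare ((=) G) (R unroot1) (\<lambda>Res. case Res of
     Ok H \<Rightarrow> (\<exists>a'. IR c d k (fst a') (snd a') H \<and> bcount (fst a') < N) | Fail \<Rightarrow> False)"
proof (rule hoare_call1I)
  have St: "St c d A G" using I unfolding IIn_def RCore_def by blast
  fix H assume "apply_rule unroot1 G H"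
  then obtain v' where v: "v' \<in> V" "amk A v' = NBlue" "art A v'"
    and St': "St c d (A\<lparr>amk := (amk A)(v' := NGrey), art := (art A)(v' := False)\<rparr>) H"
    using unroot1_step[OF St] by blast
  have vv: "v' = v" using v I unfolding IIn_def onlyr_def by auto
  let ?A = "A\<lparr>amk := (amk A)(v := NGrey), art := (art A)(v := False)\<rparr>"
  have er: "\<forall>e\<in>E. erule ?A e"
  proof
    fix e assume e: "e \<in> E"
    show "erule ?A e"
    proof (cases "src G0 e = v")
      case True
      then have "aem A e = EBlue" using I X e unfolding IIn_def by auto
      then show ?thesis using True unfolding erule_def by simp
    next
      case False
      then show ?thesis using I e unfolding IIn_def erule_def by auto
    qed
  qed
  have "IR c d k ?A D H"
    using I St' v vv er unfolding IR_def IIn_def RCore_def marksR_def onlyr_def noroot_def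
    by auto
  moreover have "bcount ?A < N" using bcount_less[of v A NGrey] v vv I unfolding IIn_def bcount_def by auto
  ultimately show "\<exists>a'. IR c d k (fst a') (snd a') H \<and> bcount (fst a') < N"
    by (intro exI[of _ "(?A, D)"]) simp
next
  have St: "St c d A G" using I unfolding IIn_def RCore_def by blast
  assume na: "\<not> (\<exists>H. apply_rule unroot1 G H)"
  have "\<exists>H. apply_rule unroot1 G H" using unroot1_app[OF St] I unfolding IIn_def onlyr_def by auto
  then show False using na by blast
qed

definition RelaxB :: cmd where
  "RelaxB = Seq (R root1) (Try (R no_deg) Skip (Seq (Loop Inner) (R unroot1)))"

lemma Relax_eq: "Relax = RelaxB"
  unfolding Relax_def RelaxB_def Inner_def by simp

lemma relax_body:
  assumes I: "IR c d k A D G"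
  shows "hoare ((=) G) RelaxB (\<lambda>Res. case Res of
     Ok H \<Rightarrow> (\<exists>a'. IR c d k (fst a') (snd a') H \<and> bcount (fst a') < bcount A)
   | Fail \<Rightarrow> (\<forall>u\<in>V. amk A u \<noteq> NBlue))"
  unfolding RelaxB_def
proof (rule hoare_seq[where M = "\<lambda>H. \<exists>v A'. IR1 c d k v (bcount A) A' D H"])
  show "hoare ((=) G) (R root1) (\<lambda>Res. case Res of Ok H \<Rightarrow> \<exists>v A'. IR1 c d k v (bcount A) A' D H
     | Fail \<Rightarrow> (case Fail of Ok H \<Rightarrow> (\<exists>a'. IR c d k (fst a') (snd a') H \<and> bcount (fst a') < bcount A)
       | Fail \<Rightarrow> (\<forall>u\<in>V. amk A u \<noteq> NBlue)))"
    by (rule hoare_post[OF relax_root1[OF I]]) (auto split: result.splits)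
next
  let ?N = "bcount A"
  let ?Q = "\<lambda>Res. case Res of
     Ok H \<Rightarrow> (\<exists>a'. IR c d k (fst a') (snd a') H \<and> bcount (fst a') < ?N)
   | Fail \<Rightarrow> (\<forall>u\<in>V. amk A u \<noteq> NBlue)"
  show "hoare (\<lambda>H. \<exists>v A'. IR1 c d k v ?N A' D H) (Try (R no_deg) Skip (Seq (Loop Inner) (R unroot1))) ?Q"
  proof (rule hoare_pre)
    fix G1 assume "\<exists>v A'. IR1 c d k v ?N A' D G1"
    then obtain v A1 where I1: "IR1 c d k v ?N A1 D G1" by blast
    show "hoare ((=) G1) (Try (R no_deg) Skip (Seq (Loop Inner) (R unroot1))) ?Q"
    proof (rule hoare_try[where M = "\<lambda>H. \<exists>a'. IR c d k (fst a') (snd a') H \<and> bcount (fst a') < ?N"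
          and F = "\<lambda>G'. G' = G1 \<and> v \<notin> Iso"])
      fix G2 assume h: "G1 = G2"
      show "hoare ((=) G2) (R no_deg) (\<lambda>Res. case Res of Ok H \<Rightarrow> \<exists>a'. IR c d k (fst a') (snd a') H \<and> bcount (fst a') < ?N
          | Fail \<Rightarrow> G2 = G1 \<and> v \<notin> Iso)"
        unfolding h[symmetric] by (rule hoare_post[OF relax_nodeg[OF I1]]) (auto split: result.splits)
    next
      show "hoare (\<lambda>H. \<exists>a'. IR c d k (fst a') (snd a') H \<and> bcount (fst a') < ?N) Skip ?Q"
        by (rule hoare_skip) simp
    next
      fix G2 assume G2: "G1 = G2" "G2 = G1 \<and> v \<notin> Iso"
      show "hoare ((=) G2) (Seq (Loop Inner) (R unroot1)) ?Q"
      proof (rule hoare_seq[where M = "\<lambda>H. \<exists>a. IIn c d k v ?N (fst a) (snd a) H \<and>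
          (\<forall>e\<in>E. src G0 e = v \<longrightarrow> aem (fst a) e \<noteq> EUnmarked)"])
        show "hoare ((=) G2) (Loop Inner) (\<lambda>Res. case Res of Ok H \<Rightarrow> \<exists>a. IIn c d k v ?N (fst a) (snd a) H \<and>
          (\<forall>e\<in>E. src G0 e = v \<longrightarrow> aem (fst a) e \<noteq> EUnmarked) | Fail \<Rightarrow> ?Q Fail)"
          unfolding G2(1)[symmetric] by (rule hoare_post[OF relax_inner_loop[OF I1]]) (use G2 in \<open>auto split: result.splits\<close>)
      next
        show "hoare (\<lambda>H. \<exists>a. IIn c d k v ?N (fst a) (snd a) H \<and>
          (\<forall>e\<in>E. src G0 e = v \<longrightarrow> aem (fst a) e \<noteq> EUnmarked)) (R unroot1) ?Q"
        proof (rule hoare_pre)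
          fix G3 assume "\<exists>a. IIn c d k v ?N (fst a) (snd a) G3 \<and>
            (\<forall>e\<in>E. src G0 e = v \<longrightarrow> aem (fst a) e \<noteq> EUnmarked)"
          then obtain a where a: "IIn c d k v ?N (fst a) (snd a) G3"
            "\<forall>e\<in>E. src G0 e = v \<longrightarrow> aem (fst a) e \<noteq> EUnmarked" by blast
          show "hoare ((=) G3) (R unroot1) ?Q"
            by (rule hoare_post[OF relax_unroot1[OF a]]) (auto split: result.splits)
        qed
      qed
    qed
  qed
qed

lemma relax_loop:
  assumes I: "IR c d k A D G"
  shows "hoare ((=) G) (Loop Relax) (\<lambda>Res. \<exists>a H. Res = Ok H \<and> IR c d k (fst a) (snd a) H \<and>
     (\<forall>u\<in>V. amk (fst a) u \<noteq> NBlue))"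
proof -
  have "hoare (\<lambda>G. \<exists>a. IR c d k (fst a) (snd a) G) (Loop RelaxB) (\<lambda>Res. \<exists>a H. Res = Ok H \<and> IR c d k (fst a) (snd a) H \<and>
     (\<forall>u\<in>V. amk (fst a) u \<noteq> NBlue))"
    by (rule hoare_loop[where \<mu> = "\<lambda>a. bcount (fst a)"]) (rule relax_body)
  then show ?thesis unfolding Relax_eq
    by (rule hoare_strengthen) (use I in \<open>auto intro!: exI[of _ "(A, D)"]\<close>)
qed

end

context bf0 begin

definition IC :: "nat \<Rightarrow> nat \<Rightarrow> nat \<Rightarrow> ast \<Rightarrow> (nat \<Rightarrow> int option) \<Rightarrow> hgraph \<Rightarrow> bool" where
  "IC c d k A D H \<longleftrightarrow> St c d A H \<and> (\<forall>u\<in>V. alb A u = lbl D u) \<and> Q (Suc k) D \<and> S D \<and>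
     acv A = int (n0 - 1 - Suc k) \<and> Suc k \<le> n0 - 1 \<and> marksR A \<and> noroot A \<and> (\<forall>e\<in>E. erule A e)"

definition ICl :: "nat \<Rightarrow> nat \<Rightarrow> nat \<Rightarrow> nat \<Rightarrow> nat \<Rightarrow> ast \<Rightarrow> (nat \<Rightarrow> int option) \<Rightarrow> hgraph \<Rightarrow> bool" where
  "ICl c d k v N A D H \<longleftrightarrow> St c d A H \<and> (\<forall>u\<in>V. alb A u = lbl D u) \<and> Q (Suc k) D \<and> S D \<and>
     acv A = int (n0 - 1 - Suc k) \<and> Suc k \<le> n0 - 1 \<and> marksR A \<and> v \<in> V \<and> v \<notin> Iso \<and> amk A v = NBlue \<and>
     onlyr A v \<and> gcount A = N \<and> (\<forall>e\<in>E. src G0 e \<noteq> v \<longrightarrow> erule A e) \<and>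
     (\<forall>e\<in>E. src G0 e = v \<longrightarrow> aem A e \<in> {EUnmarked, EBlue})"

definition IM :: "nat \<Rightarrow> nat \<Rightarrow> nat \<Rightarrow> ast \<Rightarrow> (nat \<Rightarrow> int option) \<Rightarrow> hgraph \<Rightarrow> bool" where
  "IM c d k A D H \<longleftrightarrow> St c d A H \<and> (\<forall>u\<in>V. alb A u = lbl D u) \<and> Q k D \<and> S D \<and>
     acv A = int (n0 - 1 - k) \<and> k \<le> n0 - 1 \<and> (\<forall>u\<in>V. u \<notin> Iso \<longrightarrow> amk A u = NBlue) \<and>
     (\<forall>u\<in>V. u \<in> Iso \<longrightarrow> amk A u \<in> {NBlue, NUnmarked}) \<and> noroot A \<and> (\<forall>e\<in>E. aem A e = EUnmarked)"

lemma gcount_less: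
  assumes "v \<in> V" "amk A v = NGrey" "m \<noteq> NGrey"
  shows "card {u\<in>V. ((amk A)(v := m)) u = NGrey} < card {u\<in>V. amk A u = NGrey}"
proof -
  have eq: "{u\<in>V. ((amk A)(v := m)) u = NGrey} = {u\<in>V. amk A u = NGrey} - {v}" using assms by auto
  have "card ({u\<in>V. amk A u = NGrey} - {v}) < card {u\<in>V. amk A u = NGrey}"
    by (rule card_Diff1_less) (use finV assms in auto)
  then show ?thesis using eq by simp
qed

lemma becount_less:
  assumes "e \<in> E" "src G0 e = v" "aem A e = EBlue" "m \<noteq> EBlue"
  shows "becount (A\<lparr>aem := (aem A)(e := m)\<rparr>) v < becount A v"
proof -
  have eq: "{e'\<in>E. src G0 e' = v \<and> ((aem A)(e := m)) e' = EBlue} = {e'\<in>E. src G0 e' = v \<and> aem A e' = EBlue} - {e}"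
    using assms by auto
  have "card ({e'\<in>E. src G0 e' = v \<and> aem A e' = EBlue} - {e}) < card {e'\<in>E. src G0 e' = v \<and> aem A e' = EBlue}"
    by (rule card_Diff1_less) (use finE assms in auto)
  then show ?thesis unfolding becount_def using eq by simp
qed

lemma relax_to_clean:
  assumes I: "IR c d k A D H" and nb: "\<forall>u\<in>V. amk A u \<noteq> NBlue"
  shows "IC c d k A D H"
proof -
  have "\<forall>e\<in>E. Bnd k D e"
  proof
    fix e assume e: "e \<in> E"
    have "amk A (src G0 e) = NGrey" using I nb eV(1)[OF e] eIso(1)[OF e] unfolding IR_def RCore_def marksR_def by auto
    then have "aem A e = EBlue" using I e unfolding IR_def erule_def by auto
    then show "Bnd k D e" using I e unfolding IR_def by auto
  qed
  then have "Q (Suc k) D" using Q_step I unfolding IR_def RCore_def by blast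
  then show ?thesis using I unfolding IR_def RCore_def IC_def by auto
qed

lemma clean_root2:
  assumes I: "IC c d k A D G"
  shows "hoare ((=) G) (R root2) (\<lambda>Res. case Res of
     Ok H \<Rightarrow> (\<exists>v A'. ICl c d k v (gcount A') A' D H \<and> gcount A' < gcount A) | Fail \<Rightarrow> (\<forall>u\<in>V. amk A u \<noteq> NGrey))"
proof (rule hoare_call1I)
  have St: "St c d A G" using I unfolding IC_def by blast
  fix H assume "apply_rule root2 G H"
  then obtain v where v: "v \<in> V" "amk A v = NGrey"
    and St': "St c d (A\<lparr>amk := (amk A)(v := NBlue), art := (art A)(v := True)\<rparr>) H"
    using root2_step[OF St] by blast
  let ?A = "A\<lparr>amk := (amk A)(v := NBlue), art := (art A)(v := True)\<rparr>"
  have nv: "v \<notin> Iso" using I v unfolding IC_def marksR_def by auto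
  have "ICl c d k v (gcount ?A) ?A D H"
    using I St' v nv unfolding IC_def ICl_def marksR_def onlyr_def noroot_def erule_def
    by auto
  moreover have "gcount ?A < gcount A" using gcount_less[of v A NBlue] v unfolding gcount_def by auto
  ultimately show "\<exists>v A'. ICl c d k v (gcount A') A' D H \<and> gcount A' < gcount A" by blast
next
  have St: "St c d A G" using I unfolding IC_def by blast
  assume "\<not> (\<exists>H. apply_rule root2 G H)"
  then show "\<forall>u\<in>V. amk A u \<noteq> NGrey" using root2_app[OF St] by blast
qed

lemma clean_unmark:
  assumes I: "ICl c d k v N A D G"
  shows "hoare ((=) G) (R unmark_edge) (\<lambda>Res. case Res of
     Ok H \<Rightarrow> (\<exists>a'. ICl c d k v N (fst a') (snd a') H \<and> becount (fst a') v < becount A v)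
   | Fail \<Rightarrow> (\<forall>e\<in>E. src G0 e = v \<longrightarrow> aem A e \<noteq> EBlue))"
proof (rule hoare_call1I)
  have St: "St c d A G" using I unfolding ICl_def by blast
  fix H assume "apply_rule unmark_edge G H"
  then obtain e where e: "e \<in> E" "amk A (src G0 e) = NBlue" "art A (src G0 e)" "aem A e = EBlue"
    and St': "St c d (A\<lparr>aem := (aem A)(e := EUnmarked)\<rparr>) H"
    using unmark_edge_step[OF St] by blast
  have sv: "src G0 e = v" using onlyr_eq[of A v "src G0 e"] I e eV unfolding ICl_def by blast
  let ?A = "A\<lparr>aem := (aem A)(e := EUnmarked)\<rparr>"
  have "ICl c d k v N ?A D H"
    using I St' e sv unfolding ICl_def marksR_def onlyr_def gcount_def erule_def by auto
  moreover have "becount ?A v < becount A v" using becount_less[OF e(1) sv e(4)] by simp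
  ultimately show "\<exists>a'. ICl c d k v N (fst a') (snd a') H \<and> becount (fst a') v < becount A v"
    by (intro exI[of _ "(?A, D)"]) simp
next
  have St: "St c d A G" using I unfolding ICl_def by blast
  assume na: "\<not> (\<exists>H. apply_rule unmark_edge G H)"
  show "\<forall>e\<in>E. src G0 e = v \<longrightarrow> aem A e \<noteq> EBlue"
  proof (intro ballI impI notI)
    fix e assume "e \<in> E" "src G0 e = v" "aem A e = EBlue"
    then have "\<exists>H. apply_rule unmark_edge G H"
      using unmark_edge_app[OF St] I unfolding ICl_def onlyr_def by auto
    then show False using na by simp
  qed
qed

lemma clean_unroot2:
  assumes I: "ICl c d k v N A D G" and X: "\<forall>e\<in>E. src G0 e = v \<longrightarrow> aem A e \<noteq> EBlue"
  shows "hoare ((=) G) (R unroot2) (\<lambda>Res. case Res of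
     Ok H \<Rightarrow> (\<exists>A'. IC c d k A' D H \<and> gcount A' = N) | Fail \<Rightarrow> False)"
proof (rule hoare_call1I)
  have St: "St c d A G" using I unfolding ICl_def by blast
  fix H assume "apply_rule unroot2 G H"
  then obtain v' where v: "v' \<in> V" "amk A v' = NBlue" "art A v'"
    and St': "St c d (A\<lparr>art := (art A)(v' := False)\<rparr>) H"
    using unroot2_step[OF St] by blast
  have vv: "v' = v" using v I unfolding ICl_def onlyr_def by auto
  let ?A = "A\<lparr>art := (art A)(v := False)\<rparr>"
  have er: "\<forall>e\<in>E. erule ?A e"
  proof
    fix e assume e: "e \<in> E"
    show "erule ?A e"
    proof (cases "src G0 e = v")
      case True
      then have "aem A e = EUnmarked" using I X e unfolding ICl_def by auto
      then show ?thesis using True I unfolding erule_def ICl_def by simp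
    next
      case False
      then show ?thesis using I e unfolding ICl_def erule_def by auto
    qed
  qed
  have "IC c d k ?A D H"
    using I St' v vv er unfolding IC_def ICl_def onlyr_def noroot_def marksR_def by auto
  moreover have "gcount ?A = N" using I unfolding ICl_def gcount_def by simp
  ultimately show "\<exists>A'. IC c d k A' D H \<and> gcount A' = N" by blast
next
  have St: "St c d A G" using I unfolding ICl_def by blast
  assume na: "\<not> (\<exists>H. apply_rule unroot2 G H)"
  have "\<exists>H. apply_rule unroot2 G H" using unroot2_app[OF St] I unfolding ICl_def onlyr_def by auto
  then show False using na by blast
qed

lemma clean_body:
  assumes I: "IC c d k A D G"
  shows "hoare ((=) G) Clean (\<lambda>Res. case Res of
     Ok H \<Rightarrow> (\<exists>a'. IC c d k (fst a') (snd a') H \<and> gcount (fst a') < gcount A)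
   | Fail \<Rightarrow> (\<forall>u\<in>V. amk A u \<noteq> NGrey))"
  unfolding Clean_def
proof (rule hoare_seq[where M = "\<lambda>H. \<exists>v A'. ICl c d k v (gcount A') A' D H \<and> gcount A' < gcount A"])
  show "hoare ((=) G) (R root2) (\<lambda>Res. case Res of Ok H \<Rightarrow> \<exists>v A'. ICl c d k v (gcount A') A' D H \<and> gcount A' < gcount A
     | Fail \<Rightarrow> (case Fail of Ok H \<Rightarrow> (\<exists>a'. IC c d k (fst a') (snd a') H \<and> gcount (fst a') < gcount A)
       | Fail \<Rightarrow> (\<forall>u\<in>V. amk A u \<noteq> NGrey)))"
    by (rule hoare_post[OF clean_root2[OF I]]) (auto split: result.splits)
next
  let ?Q = "\<lambda>Res. case Res of
     Ok H \<Rightarrow> (\<exists>a'. IC c d k (fst a') (snd a') H \<and> gcount (fst a') < gcount A)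
   | Fail \<Rightarrow> (\<forall>u\<in>V. amk A u \<noteq> NGrey)"
  show "hoare (\<lambda>H. \<exists>v A'. ICl c d k v (gcount A') A' D H \<and> gcount A' < gcount A)
     (Seq (Loop (R unmark_edge)) (R unroot2)) ?Q"
  proof (rule hoare_pre)
    fix G1 assume "\<exists>v A'. ICl c d k v (gcount A') A' D G1 \<and> gcount A' < gcount A"
    then obtain v A1 where I1: "ICl c d k v (gcount A1) A1 D G1" "gcount A1 < gcount A" by blast
    let ?N = "gcount A1"
    show "hoare ((=) G1) (Seq (Loop (R unmark_edge)) (R unroot2)) ?Q"
    proof (rule hoare_seq[where M = "\<lambda>H. \<exists>a. ICl c d k v ?N (fst a) (snd a) H \<and>
          (\<forall>e\<in>E. src G0 e = v \<longrightarrow> aem (fst a) e \<noteq> EBlue)"])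
      have h: "hoare (\<lambda>G. \<exists>a. ICl c d k v ?N (fst a) (snd a) G) (Loop (R unmark_edge))
         (\<lambda>Res. \<exists>a H. Res = Ok H \<and> ICl c d k v ?N (fst a) (snd a) H \<and> (\<forall>e\<in>E. src G0 e = v \<longrightarrow> aem (fst a) e \<noteq> EBlue))"
        by (rule hoare_loop[where \<mu> = "\<lambda>a. becount (fst a) v"]) (rule clean_unmark)
      show "hoare ((=) G1) (Loop (R unmark_edge)) (\<lambda>Res. case Res of Ok H \<Rightarrow> \<exists>a. ICl c d k v ?N (fst a) (snd a) H \<and>
          (\<forall>e\<in>E. src G0 e = v \<longrightarrow> aem (fst a) e \<noteq> EBlue) | Fail \<Rightarrow> ?Q Fail)"
        by (rule hoare_post[OF hoare_strengthen[OF h]]) (use I1 in \<open>auto intro!: exI[of _ "(A1, D)"] split: result.splits\<close>)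
    next
      show "hoare (\<lambda>H. \<exists>a. ICl c d k v ?N (fst a) (snd a) H \<and>
          (\<forall>e\<in>E. src G0 e = v \<longrightarrow> aem (fst a) e \<noteq> EBlue)) (R unroot2) ?Q"
      proof (rule hoare_pre)
        fix G3 assume "\<exists>a. ICl c d k v ?N (fst a) (snd a) G3 \<and>
            (\<forall>e\<in>E. src G0 e = v \<longrightarrow> aem (fst a) e \<noteq> EBlue)"
        then obtain a where a: "ICl c d k v ?N (fst a) (snd a) G3"
            "\<forall>e\<in>E. src G0 e = v \<longrightarrow> aem (fst a) e \<noteq> EBlue" by blast
        have aD: "snd a = D \<or> True" by simp
        show "hoare ((=) G3) (R unroot2) ?Q"
          by (rule hoare_post[OF clean_unroot2[OF a]]) (use I1(2) in \<open>auto split: result.splits\<close>)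
      qed
    qed
  qed
qed

lemma clean_loop:
  assumes I: "IC c d k A D G"
  shows "hoare ((=) G) (Loop Clean) (\<lambda>Res. \<exists>a H. Res = Ok H \<and> IC c d k (fst a) (snd a) H \<and>
     (\<forall>u\<in>V. amk (fst a) u \<noteq> NGrey))"
proof -
  have "hoare (\<lambda>G. \<exists>a. IC c d k (fst a) (snd a) G) (Loop Clean) (\<lambda>Res. \<exists>a H. Res = Ok H \<and> IC c d k (fst a) (snd a) H \<and>
     (\<forall>u\<in>V. amk (fst a) u \<noteq> NGrey))"
    by (rule hoare_loop[where \<mu> = "\<lambda>a. gcount (fst a)"]) (rule clean_body)
  then show ?thesis
    by (rule hoare_strengthen) (use I in \<open>auto intro!: exI[of _ "(A, D)"]\<close>)
qed

lemma clean_to_main: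
  assumes I: "IC c d k A D H" and ng: "\<forall>u\<in>V. amk A u \<noteq> NGrey"
  shows "IM c d (Suc k) A D H"
proof -
  have b: "\<forall>u\<in>V. u \<notin> Iso \<longrightarrow> amk A u = NBlue" using I ng unfolding IC_def marksR_def by auto
  have "\<forall>e\<in>E. aem A e = EUnmarked"
  proof
    fix e assume e: "e \<in> E"
    have "amk A (src G0 e) = NBlue" using b eV(1)[OF e] eIso(1)[OF e] by auto
    then show "aem A e = EUnmarked" using I e unfolding IC_def erule_def by auto
  qed
  then show ?thesis using I b unfolding IC_def IM_def marksR_def by auto
qed

lemma main_decrement:
  assumes I: "IM c d k A D G"
  shows "hoare ((=) G) (R decrement) (\<lambda>Res. case Res of
     Ok H \<Rightarrow> IR c d k (A\<lparr>acv := acv A - 1\<rparr>) D H | Fail \<Rightarrow> k = n0 - 1)"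
proof (rule hoare_call1I)
  have St: "St c d A G" using I unfolding IM_def by blast
  fix H assume "apply_rule decrement G H"
  then have pos: "acv A > 0" and St': "St c d (A\<lparr>acv := acv A - 1\<rparr>) H"
    using decrement_step[OF St] by auto
  have k: "Suc k \<le> n0 - 1" using pos I unfolding IM_def by auto
  have ac: "acv A - 1 = int (n0 - 1 - Suc k)" using I k unfolding IM_def by auto
  have er: "\<forall>e\<in>E. erule (A\<lparr>acv := acv A - 1\<rparr>) e"
  proof
    fix e assume e: "e \<in> E"
    have "amk A (src G0 e) = NBlue" using I eV(1)[OF e] eIso(1)[OF e] unfolding IM_def by auto
    then show "erule (A\<lparr>acv := acv A - 1\<rparr>) e" using I e unfolding IM_def erule_def by auto
  qed
  show "IR c d k (A\<lparr>acv := acv A - 1\<rparr>) D H"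
    using I St' k ac er unfolding IM_def IR_def RCore_def marksR_def noroot_def by auto
next
  have St: "St c d A G" using I unfolding IM_def by blast
  assume na: "\<not> (\<exists>H. apply_rule decrement G H)"
  then have "\<not> acv A > 0" using decrement_app[OF St] by blast
  then show "k = n0 - 1" using I unfolding IM_def by auto
qed

definition MainB :: cmd where
  "MainB = Seq (R decrement) (Seq (Loop Relax) (Loop Clean))"

lemma main_body:
  assumes I: "IM c d k A D G"
  shows "hoare ((=) G) MainB (\<lambda>Res. case Res of
     Ok H \<Rightarrow> (\<exists>a'. IM c d (snd (snd a')) (fst a') (fst (snd a')) H \<and> n0 - 1 - snd (snd a') < n0 - 1 - k)
   | Fail \<Rightarrow> k = n0 - 1)"
  unfolding MainB_def
proof (rule hoare_seq[where M = "\<lambda>H. IR c d k (A\<lparr>acv := acv A - 1\<rparr>) D H"])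
  show "hoare ((=) G) (R decrement) (\<lambda>Res. case Res of Ok H \<Rightarrow> IR c d k (A\<lparr>acv := acv A - 1\<rparr>) D H
     | Fail \<Rightarrow> (case Fail of Ok H \<Rightarrow> (\<exists>a'. IM c d (snd (snd a')) (fst a') (fst (snd a')) H \<and> n0 - 1 - snd (snd a') < n0 - 1 - k)
       | Fail \<Rightarrow> k = n0 - 1))"
    by (rule hoare_post[OF main_decrement[OF I]]) (auto split: result.splits)
next
  let ?Q = "\<lambda>Res. case Res of
     Ok H \<Rightarrow> (\<exists>a'. IM c d (snd (snd a')) (fst a') (fst (snd a')) H \<and> n0 - 1 - snd (snd a') < n0 - 1 - k)
   | Fail \<Rightarrow> k = n0 - 1"
  show "hoare (\<lambda>H. IR c d k (A\<lparr>acv := acv A - 1\<rparr>) D H) (Seq (Loop Relax) (Loop Clean)) ?Q"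
  proof (rule hoare_pre)
    fix G1 assume I1: "IR c d k (A\<lparr>acv := acv A - 1\<rparr>) D G1"
    have kk: "Suc k \<le> n0 - 1" using I1 unfolding IR_def RCore_def by auto
    show "hoare ((=) G1) (Seq (Loop Relax) (Loop Clean)) ?Q"
    proof (rule hoare_seq[where M = "\<lambda>H. \<exists>a. IC c d k (fst a) (snd a) H"])
      show "hoare ((=) G1) (Loop Relax) (\<lambda>Res. case Res of Ok H \<Rightarrow> \<exists>a. IC c d k (fst a) (snd a) H | Fail \<Rightarrow> ?Q Fail)"
      proof (rule hoare_post[OF relax_loop[OF I1]])
        fix Res assume "\<exists>a H. Res = Ok H \<and> IR c d k (fst a) (snd a) H \<and> (\<forall>u\<in>V. amk (fst a) u \<noteq> NBlue)"
        then obtain a H where h: "Res = Ok H" "IR c d k (fst a) (snd a) H" "\<forall>u\<in>V. amk (fst a) u \<noteq> NBlue" by blast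
        have "IC c d k (fst a) (snd a) H" using relax_to_clean[OF h(2,3)] .
        then show "case Res of Ok H \<Rightarrow> \<exists>a. IC c d k (fst a) (snd a) H | Fail \<Rightarrow> ?Q Fail" using h(1) by auto
      qed
    next
      show "hoare (\<lambda>H. \<exists>a. IC c d k (fst a) (snd a) H) (Loop Clean) ?Q"
      proof (rule hoare_pre)
        fix G2 assume "\<exists>a. IC c d k (fst a) (snd a) G2"
        then obtain a where a: "IC c d k (fst a) (snd a) G2" by blast
        show "hoare ((=) G2) (Loop Clean) ?Q"
        proof (rule hoare_post[OF clean_loop[OF a]])
          fix Res assume "\<exists>a H. Res = Ok H \<and> IC c d k (fst a) (snd a) H \<and> (\<forall>u\<in>V. amk (fst a) u \<noteq> NGrey)"
          then obtain a' H where h: "Res = Ok H" "IC c d k (fst a') (snd a') H" "\<forall>u\<in>V. amk (fst a') u \<noteq> NGrey" by blast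
          have "IM c d (Suc k) (fst a') (snd a') H" using clean_to_main[OF h(2,3)] .
          moreover have "n0 - 1 - Suc k < n0 - 1 - k" using kk by simp
          ultimately show "?Q Res" using h(1) by (auto intro!: exI[of _ "(fst a', snd a', Suc k)"])
        qed
      qed
    qed
  qed
qed

lemma main_loop:
  assumes I: "IM c d k A D G"
  shows "hoare ((=) G) (Loop MainB) (\<lambda>Res. \<exists>a H. Res = Ok H \<and> IM c d (snd (snd a)) (fst a) (fst (snd a)) H \<and>
     snd (snd a) = n0 - 1)"
proof -
  have "hoare (\<lambda>G. \<exists>a. IM c d (snd (snd a)) (fst a) (fst (snd a)) G) (Loop MainB)
    (\<lambda>Res. \<exists>a H. Res = Ok H \<and> IM c d (snd (snd a)) (fst a) (fst (snd a)) H \<and> snd (snd a) = n0 - 1)"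
    by (rule hoare_loop[where \<mu> = "\<lambda>a. n0 - 1 - snd (snd a)"]) (rule main_body)
  then show ?thesis
    by (rule hoare_strengthen) (use I in \<open>auto intro!: exI[of _ "(A, D, k)"]\<close>)
qed

end

context bf0 begin

definition ICnt :: "nat \<Rightarrow> nat \<Rightarrow> ast \<Rightarrow> nat set \<Rightarrow> hgraph \<Rightarrow> bool" where
  "ICnt c d A B H \<longleftrightarrow> St c d A H \<and> B \<subseteq> V - {r} \<and>
    (\<forall>u\<in>V. alb A u = (if u = r then nlab G0 r @ [AInt 0] else if u \<in> B then nlab G0 u @ [AStr ''f''] else nlab G0 u)) \<and>
    (\<forall>u\<in>V. amk A u = (if u = r \<or> u \<in> B then NBlue else NGrey)) \<and> noroot A \<and>
    (\<forall>e\<in>E. aem A e = EUnmarked) \<and> acv A = int (card B)"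

lemma count_body:
  assumes I: "ICnt c d A B G"
  shows "hoare ((=) G) (R count) (\<lambda>Res. case Res of
     Ok H \<Rightarrow> (\<exists>a'. ICnt c d (fst a') (snd a') H \<and> card (V - snd a') < card (V - B))
   | Fail \<Rightarrow> B = V - {r})"
proof (rule hoare_call1I)
  have St: "St c d A G" using I unfolding ICnt_def by blast
  fix H assume "apply_rule count G H"
  then obtain v where v: "v \<in> V" "amk A v = NGrey"
    and St': "St c d (A\<lparr>alb := (alb A)(v := alb A v @ [AStr ''f'']), amk := (amk A)(v := NBlue), acv := acv A + 1\<rparr>) H"
    using count_step[OF St] by blast
  let ?A = "A\<lparr>alb := (alb A)(v := alb A v @ [AStr ''f'']), amk := (amk A)(v := NBlue), acv := acv A + 1\<rparr>"
  have vB: "v \<noteq> r" "v \<notin> B" using I v unfolding ICnt_def by (auto split: if_splits)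
  have fB: "finite B" using I finV unfolding ICnt_def by (meson finite_Diff finite_subset)
  have cB: "card (insert v B) = card B + 1" using fB vB by simp
  have "ICnt c d ?A (insert v B) H"
    using I St' v vB cB unfolding ICnt_def noroot_def by auto
  moreover have "card (V - insert v B) < card (V - B)"
  proof -
    have "V - insert v B = (V - B) - {v}" by auto
    moreover have "card ((V - B) - {v}) < card (V - B)"
      by (rule card_Diff1_less) (use finV v vB in auto)
    ultimately show ?thesis by simp
  qed
  ultimately show "\<exists>a'. ICnt c d (fst a') (snd a') H \<and> card (V - snd a') < card (V - B)"
    by (intro exI[of _ "(?A, insert v B)"]) simp
next
  have St: "St c d A G" using I unfolding ICnt_def by blast
  assume na: "\<not> (\<exists>H. apply_rule count G H)"
  then have "\<forall>u\<in>V. amk A u \<noteq> NGrey" using count_app[OF St] by blast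
  then have "\<forall>u\<in>V. u = r \<or> u \<in> B" using I unfolding ICnt_def by (metis nmark.distinct(13))
  then show "B = V - {r}" using I unfolding ICnt_def by auto
qed

lemma count_init: "St c d A0 H \<Longrightarrow> ICnt c d A0 {} H"
  unfolding ICnt_def A0_def noroot_def by auto

lemma count_exit:
  assumes I: "ICnt c d A (V - {r}) H"
  shows "IM c d 0 A D0 H"
proof -
  have lab: "\<forall>u\<in>V. alb A u = lbl D0 u" using I unfolding ICnt_def lbl_def D0_def by auto
  have ac: "acv A = int (n0 - 1 - 0)" using I rV finV unfolding ICnt_def by simp
  show ?thesis using I lab ac Q0 S0 unfolding ICnt_def IM_def noroot_def by auto
qed

lemma count_loop:
  assumes I: "St c d A0 G"
  shows "hoare ((=) G) (Loop (R count)) (\<lambda>Res. \<exists>A H. Res = Ok H \<and> IM c d 0 A D0 H)"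
proof -
  have "hoare (\<lambda>G. \<exists>a. ICnt c d (fst a) (snd a) G) (Loop (R count))
    (\<lambda>Res. \<exists>a H. Res = Ok H \<and> ICnt c d (fst a) (snd a) H \<and> snd a = V - {r})"
    by (rule hoare_loop[where \<mu> = "\<lambda>a. card (V - snd a)"]) (rule count_body)
  then show ?thesis
    by (rule hoare_post[OF hoare_strengthen]) (use I count_init count_exit in \<open>fastforce+\<close>)
qed

end

context bf0 begin

definition marksF :: "ast \<Rightarrow> bool" where
  "marksF A \<longleftrightarrow> (\<forall>u\<in>V. u \<notin> Iso \<longrightarrow> amk A u \<in> {NBlue, NGrey}) \<and>
     (\<forall>u\<in>V. u \<in> Iso \<longrightarrow> amk A u \<in> {NBlue, NUnmarked, NGrey})"

definition FC :: "nat \<Rightarrow> nat \<Rightarrow> (nat \<Rightarrow> int option) \<Rightarrow> ast \<Rightarrow> hgraph \<Rightarrow> bool" where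
  "FC c d D A H \<longleftrightarrow> St c d A H \<and> (\<forall>u\<in>V. alb A u = lbl D u) \<and> (acv A = 0 \<or> acv A = -1) \<and>
     (acv A = -1 \<longrightarrow> (\<exists>e\<in>E. redE D e)) \<and> (\<forall>e\<in>E. aem A e = EBlue \<and> redE D e \<longrightarrow> acv A = -1) \<and> marksF A"

definition IF :: "nat \<Rightarrow> nat \<Rightarrow> (nat \<Rightarrow> int option) \<Rightarrow> ast \<Rightarrow> hgraph \<Rightarrow> bool" where
  "IF c d D A H \<longleftrightarrow> FC c d D A H \<and> noroot A \<and> (\<forall>e\<in>E. erule A e)"

definition IFI :: "nat \<Rightarrow> nat \<Rightarrow> (nat \<Rightarrow> int option) \<Rightarrow> nat \<Rightarrow> nat \<Rightarrow> ast \<Rightarrow> hgraph \<Rightarrow> bool" where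
  "IFI c d D v N A H \<longleftrightarrow> FC c d D A H \<and> v \<in> V \<and> amk A v = NBlue \<and> onlyr A v \<and> bcount A = N \<and>
     (\<forall>e\<in>E. src G0 e \<noteq> v \<longrightarrow> erule A e) \<and> (\<forall>e\<in>E. src G0 e = v \<longrightarrow> aem A e \<in> {EUnmarked, EBlue})"

definition IFR :: "nat \<Rightarrow> nat \<Rightarrow> (nat \<Rightarrow> int option) \<Rightarrow> nat \<Rightarrow> nat \<Rightarrow> nat \<Rightarrow> nat \<Rightarrow> ast \<Rightarrow> hgraph \<Rightarrow> bool" where
  "IFR c d D v N Mx e0 A H \<longleftrightarrow> FC c d D A H \<and> v \<in> V \<and> amk A v = NBlue \<and> onlyr A v \<and> bcount A = N \<and>
     e0 \<in> E \<and> src G0 e0 = v \<and> aem A e0 = ERed \<and>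
     (\<forall>e\<in>E. src G0 e \<noteq> v \<longrightarrow> erule A e) \<and> (\<forall>e\<in>E. src G0 e = v \<and> e \<noteq> e0 \<longrightarrow> aem A e \<in> {EUnmarked, EBlue}) \<and>
     ucount A v < Mx"

lemma IFR_red: "IFR c d D v N Mx e0 A H \<Longrightarrow> e \<in> E \<Longrightarrow> aem A e = ERed \<Longrightarrow> e = e0"
  unfolding IFR_def erule_def by (metis emark.distinct insertE empty_iff)

lemma main_to_final:
  assumes I: "IM c d (n0 - 1) A D H"
  shows "IF c d D A H"
proof -
  have er: "\<forall>e\<in>E. erule A e"
  proof
    fix e assume e: "e \<in> E"
    have "amk A (src G0 e) = NBlue" using I eV(1)[OF e] eIso(1)[OF e] unfolding IM_def by auto
    then show "erule A e" using I e unfolding IM_def erule_def by auto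
  qed
  show ?thesis using I er unfolding IM_def IF_def FC_def marksF_def by auto
qed

lemma f_root1:
  assumes I: "IF c d D A G"
  shows "hoare ((=) G) (R root1) (\<lambda>Res. case Res of
     Ok H \<Rightarrow> (\<exists>v A'. IFI c d D v (bcount A) A' H) | Fail \<Rightarrow> (\<forall>u\<in>V. amk A u \<noteq> NBlue))"
proof (rule hoare_call1I)
  have St: "St c d A G" using I unfolding IF_def FC_def by blast
  fix H assume "apply_rule root1 G H"
  then obtain v where v: "v \<in> V" "amk A v = NBlue" and St': "St c d (A\<lparr>art := (art A)(v := True)\<rparr>) H"
    using root1_step[OF St] by blast
  have "IFI c d D v (bcount A) (A\<lparr>art := (art A)(v := True)\<rparr>) H"
    using I St' v unfolding IF_def IFI_def FC_def marksF_def onlyr_def noroot_def bcount_def erule_def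
    by auto
  then show "\<exists>v A'. IFI c d D v (bcount A) A' H" by blast
next
  have St: "St c d A G" using I unfolding IF_def FC_def by blast
  assume "\<not> (\<exists>H. apply_rule root1 G H)"
  then show "\<forall>u\<in>V. amk A u \<noteq> NBlue" using root1_app[OF St] by blast
qed

lemma f_unmarked:
  assumes I: "IFI c d D v N A G"
  shows "hoare ((=) G) (R unmarked_edge) (\<lambda>Res. case Res of
     Ok H \<Rightarrow> (\<exists>e0 A'. IFR c d D v N (ucount A v) e0 A' H)
   | Fail \<Rightarrow> (\<forall>e\<in>E. src G0 e = v \<longrightarrow> aem A e \<noteq> EUnmarked))"
proof (rule hoare_call1I)
  have St: "St c d A G" using I unfolding IFI_def FC_def by blast
  fix H assume "apply_rule unmarked_edge G H"
  then obtain e where e: "e \<in> E" "amk A (src G0 e) = NBlue" "art A (src G0 e)" "aem A e = EUnmarked"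
    and St': "St c d (A\<lparr>aem := (aem A)(e := ERed)\<rparr>) H"
    using unmarked_edge_step[OF St] by blast
  have sv: "src G0 e = v" using onlyr_eq[of A v "src G0 e"] I e eV unfolding IFI_def by blast
  let ?A = "A\<lparr>aem := (aem A)(e := ERed)\<rparr>"
  have "ucount ?A v < ucount A v" using ucount_less[OF e(1) sv e(4)] by simp
  then have "IFR c d D v N (ucount A v) e ?A H"
    using I St' e sv unfolding IFI_def IFR_def FC_def marksF_def onlyr_def bcount_def erule_def
    by auto
  then show "\<exists>e0 A'. IFR c d D v N (ucount A v) e0 A' H" by blast
next
  have St: "St c d A G" using I unfolding IFI_def FC_def by blast
  assume na: "\<not> (\<exists>H. apply_rule unmarked_edge G H)"
  show "\<forall>e\<in>E. src G0 e = v \<longrightarrow> aem A e \<noteq> EUnmarked"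
  proof (intro ballI impI notI)
    fix e assume "e \<in> E" "src G0 e = v" "aem A e = EUnmarked"
    then have "\<exists>H. apply_rule unmarked_edge G H"
      using unmarked_edge_app[OF St] I unfolding IFI_def onlyr_def by auto
    then show False using na by simp
  qed
qed

lemma f_reduce:
  assumes I: "IFR c d D v N Mx e0 A G"
  shows "hoare ((=) G) (R reduce) (\<lambda>Res. case Res of Ok H \<Rightarrow> redE D e0 | Fail \<Rightarrow> \<not> redE D e0)"
proof (rule hoare_call1I)
  have St: "St c d A G" using I unfolding IFR_def FC_def by blast
  have lab: "\<forall>u\<in>V. alb A u = lbl D u" using I unfolding IFR_def FC_def by blast
  fix H assume "apply_rule reduce G H"
  then obtain e x y s t where e: "e \<in> E" "aem A e = ERed" "alb A (src G0 e) = x @ [AInt s]"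
      "alb A (tgt G0 e) = y @ [AInt t]" "s + wt G0 e < t"
    using reduce_step[OF St] by blast
  have ee: "e = e0" using IFR_red[OF I e(1,2)] .
  have "D (src G0 e) = Some s" "D (tgt G0 e) = Some t"
    using e(3,4) lab eV[OF e(1)] by (auto simp: lbl_Int)
  then show "redE D e0" using e(5) ee unfolding redE_def by auto
next
  have St: "St c d A G" using I unfolding IFR_def FC_def by blast
  have lab: "\<forall>u\<in>V. alb A u = lbl D u" using I unfolding IFR_def FC_def by blast
  assume na: "\<not> (\<exists>H. apply_rule reduce G H)"
  show "\<not> redE D e0"
  proof
    assume "redE D e0"
    then obtain s t where st: "D (src G0 e0) = Some s" "D (tgt G0 e0) = Some t" "s + wt G0 e0 < t"
      unfolding redE_def by blast
    have e0: "e0 \<in> E" "src G0 e0 = v" "aem A e0 = ERed" "amk A v = NBlue" "art A v" using I unfolding IFR_def onlyr_def by auto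
    have "alb A (src G0 e0) = nlab G0 (src G0 e0) @ [AInt s]" "alb A (tgt G0 e0) = nlab G0 (tgt G0 e0) @ [AInt t]"
      using st lab eV[OF e0(1)] by (auto simp: lbl_def)
    then have "\<exists>H. apply_rule reduce G H"
      using reduce_app[OF St e0(1)] e0 st(3) by auto
    then show False using na by blast
  qed
qed

lemma f_setflag:
  assumes I: "IFR c d D v N Mx e0 A G" and rd: "redE D e0"
  shows "hoare ((=) G) (R set_flag) (\<lambda>Res. case Res of
     Ok H \<Rightarrow> (\<exists>A'. IFR c d D v N Mx e0 A' H \<and> (redE D e0 \<longrightarrow> acv A' = -1)) | Fail \<Rightarrow> False)"
proof (rule hoare_call1I)
  have St: "St c d A G" using I unfolding IFR_def FC_def by blast
  fix H assume "apply_rule set_flag G H"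
  then have St': "St c d (A\<lparr>acv := -1\<rparr>) H" using set_flag_step[OF St] by blast
  have "e0 \<in> E" using I unfolding IFR_def by blast
  then have "IFR c d D v N Mx e0 (A\<lparr>acv := -1\<rparr>) H"
    using I St' rd unfolding IFR_def FC_def marksF_def onlyr_def bcount_def erule_def ucount_def by auto
  then show "\<exists>A'. IFR c d D v N Mx e0 A' H \<and> (redE D e0 \<longrightarrow> acv A' = -1)" by (intro exI[of _ "A\<lparr>acv := -1\<rparr>"]) simp
next
  have St: "St c d A G" using I unfolding IFR_def FC_def by blast
  assume "\<not> (\<exists>H. apply_rule set_flag G H)"
  then show False using set_flag_app[OF St] by blast
qed

lemma f_finish:
  assumes I: "IFR c d D v N Mx e0 A G" and fl: "redE D e0 \<longrightarrow> acv A = -1"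
  shows "hoare ((=) G) (R finish) (\<lambda>Res. case Res of
     Ok H \<Rightarrow> (\<exists>A'. IFI c d D v N A' H \<and> ucount A' v < Mx) | Fail \<Rightarrow> False)"
proof (rule hoare_call1I)
  have St: "St c d A G" using I unfolding IFR_def FC_def by blast
  fix H assume "apply_rule finish G H"
  then obtain e where e: "e \<in> E" "aem A e = ERed" and St': "St c d (A\<lparr>aem := (aem A)(e := EBlue)\<rparr>) H"
    using finish_step[OF St] by blast
  have ee: "e = e0" using IFR_red[OF I e(1,2)] .
  let ?A = "A\<lparr>aem := (aem A)(e0 := EBlue)\<rparr>"
  have uc: "ucount ?A v = ucount A v"
  proof -
    have "{e\<in>E. src G0 e = v \<and> aem ?A e = EUnmarked} = {e\<in>E. src G0 e = v \<and> aem A e = EUnmarked}"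
      using e ee by auto
    then show ?thesis unfolding ucount_def by simp
  qed
  have "IFI c d D v N ?A H"
    using I St' ee fl unfolding IFR_def IFI_def FC_def marksF_def onlyr_def bcount_def erule_def
    by auto
  then show "\<exists>A'. IFI c d D v N A' H \<and> ucount A' v < Mx" using uc I unfolding IFR_def by auto
next
  have St: "St c d A G" using I unfolding IFR_def FC_def by blast
  assume na: "\<not> (\<exists>H. apply_rule finish G H)"
  have "\<exists>H. apply_rule finish G H" using finish_app[OF St] I unfolding IFR_def onlyr_def by auto
  then show False using na by blast
qed

definition FInner :: cmd where
  "FInner = Seq (R unmarked_edge) (Seq (If (R reduce) (R set_flag) Skip) (R finish))"

lemma f_inner_body:
  assumes I: "IFI c d D v N A G"
  shows "hoare ((=) G) FInner (\<lambda>Res. case Res of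
     Ok H \<Rightarrow> (\<exists>A'. IFI c d D v N A' H \<and> ucount A' v < ucount A v)
   | Fail \<Rightarrow> (\<forall>e\<in>E. src G0 e = v \<longrightarrow> aem A e \<noteq> EUnmarked))"
  unfolding FInner_def
proof (rule hoare_seq[where M = "\<lambda>H. \<exists>e0 A'. IFR c d D v N (ucount A v) e0 A' H"])
  show "hoare ((=) G) (R unmarked_edge) (\<lambda>Res. case Res of Ok H \<Rightarrow> \<exists>e0 A'. IFR c d D v N (ucount A v) e0 A' H
     | Fail \<Rightarrow> (case Fail of Ok H \<Rightarrow> (\<exists>A'. IFI c d D v N A' H \<and> ucount A' v < ucount A v)
        | Fail \<Rightarrow> (\<forall>e\<in>E. src G0 e = v \<longrightarrow> aem A e \<noteq> EUnmarked)))"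
    by (rule hoare_post[OF f_unmarked[OF I]]) (auto split: result.splits)
next
  let ?Mx = "ucount A v"
  let ?Q = "\<lambda>Res. case Res of
     Ok H \<Rightarrow> (\<exists>A'. IFI c d D v N A' H \<and> ucount A' v < ?Mx)
   | Fail \<Rightarrow> (\<forall>e\<in>E. src G0 e = v \<longrightarrow> aem A e \<noteq> EUnmarked)"
  show "hoare (\<lambda>H. \<exists>e0 A'. IFR c d D v N ?Mx e0 A' H) (Seq (If (R reduce) (R set_flag) Skip) (R finish)) ?Q"
  proof (rule hoare_pre)
    fix G1 assume "\<exists>e0 A'. IFR c d D v N ?Mx e0 A' G1"
    then obtain e0 A1 where I1: "IFR c d D v N ?Mx e0 A1 G1" by blast
    let ?M = "\<lambda>H. \<exists>A'. IFR c d D v N ?Mx e0 A' H \<and> (redE D e0 \<longrightarrow> acv A' = -1)"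
    show "hoare ((=) G1) (Seq (If (R reduce) (R set_flag) Skip) (R finish)) ?Q"
    proof (rule hoare_seq[where M = ?M])
      show "hoare ((=) G1) (If (R reduce) (R set_flag) Skip) (\<lambda>Res. case Res of Ok H \<Rightarrow> ?M H | Fail \<Rightarrow> ?Q Fail)"
      proof (rule hoare_if[where T = "\<lambda>G'. redE D e0" and F = "\<lambda>G'. \<not> redE D e0"])
        fix G2 assume h: "G1 = G2"
        show "hoare ((=) G2) (R reduce) (\<lambda>Res. case Res of Ok H \<Rightarrow> redE D e0 | Fail \<Rightarrow> \<not> redE D e0)"
          unfolding h[symmetric] by (rule f_reduce[OF I1])
      next
        fix G2 assume h: "G1 = G2" "redE D e0"
        show "hoare ((=) G2) (R set_flag) (\<lambda>Res. case Res of Ok H \<Rightarrow> ?M H | Fail \<Rightarrow> ?Q Fail)"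
          unfolding h(1)[symmetric] by (rule hoare_post[OF f_setflag[OF I1 h(2)]]) (auto split: result.splits)
      next
        fix G2 assume h: "G1 = G2" "\<not> redE D e0"
        show "hoare ((=) G2) Skip (\<lambda>Res. case Res of Ok H \<Rightarrow> ?M H | Fail \<Rightarrow> ?Q Fail)"
          using h I1 by (intro hoare_skip) auto
      qed
    next
      show "hoare ?M (R finish) ?Q"
      proof (rule hoare_pre)
        fix G2 assume "?M G2"
        then obtain A2 where I2: "IFR c d D v N ?Mx e0 A2 G2" "redE D e0 \<longrightarrow> acv A2 = -1" by blast
        show "hoare ((=) G2) (R finish) ?Q"
          by (rule hoare_post[OF f_finish[OF I2]]) (auto split: result.splits)
      qed
    qed
  qed
qed

lemma f_unroot1:
  assumes I: "IFI c d D v N A G" and X: "\<forall>e\<in>E. src G0 e = v \<longrightarrow> aem A e \<noteq> EUnmarked"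
  shows "hoare ((=) G) (R unroot1) (\<lambda>Res. case Res of
     Ok H \<Rightarrow> (\<exists>A'. IF c d D A' H \<and> bcount A' < N) | Fail \<Rightarrow> False)"
proof (rule hoare_call1I)
  have St: "St c d A G" using I unfolding IFI_def FC_def by blast
  fix H assume "apply_rule unroot1 G H"
  then obtain v' where v: "v' \<in> V" "amk A v' = NBlue" "art A v'"
    and St': "St c d (A\<lparr>amk := (amk A)(v' := NGrey), art := (art A)(v' := False)\<rparr>) H"
    using unroot1_step[OF St] by blast
  have vv: "v' = v" using v I unfolding IFI_def onlyr_def by auto
  let ?A = "A\<lparr>amk := (amk A)(v := NGrey), art := (art A)(v := False)\<rparr>"
  have er: "\<forall>e\<in>E. erule ?A e"
  proof
    fix e assume e: "e \<in> E"
    show "erule ?A e"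
    proof (cases "src G0 e = v")
      case True
      then have "aem A e = EBlue" using I X e unfolding IFI_def by auto
      then show ?thesis using True unfolding erule_def by simp
    next
      case False
      then show ?thesis using I e unfolding IFI_def erule_def by auto
    qed
  qed
  have "IF c d D ?A H"
    using I St' v vv er unfolding IF_def IFI_def FC_def marksF_def onlyr_def noroot_def
    by auto
  moreover have "bcount ?A < N" using bcount_less[of v A NGrey] v vv I unfolding IFI_def bcount_def by auto
  ultimately show "\<exists>A'. IF c d D A' H \<and> bcount A' < N" by blast
next
  have St: "St c d A G" using I unfolding IFI_def FC_def by blast
  assume na: "\<not> (\<exists>H. apply_rule unroot1 G H)"
  have "\<exists>H. apply_rule unroot1 G H" using unroot1_app[OF St] I unfolding IFI_def onlyr_def by auto
  then show False using na by blast
qed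

definition FBody :: cmd where
  "FBody = Seq (R root1) (Seq (Loop FInner) (R unroot1))"

lemma f_body:
  assumes I: "IF c d D A G"
  shows "hoare ((=) G) FBody (\<lambda>Res. case Res of
     Ok H \<Rightarrow> (\<exists>A'. IF c d D A' H \<and> bcount A' < bcount A)
   | Fail \<Rightarrow> (\<forall>u\<in>V. amk A u \<noteq> NBlue))"
  unfolding FBody_def
proof (rule hoare_seq[where M = "\<lambda>H. \<exists>v A'. IFI c d D v (bcount A) A' H"])
  show "hoare ((=) G) (R root1) (\<lambda>Res. case Res of Ok H \<Rightarrow> \<exists>v A'. IFI c d D v (bcount A) A' H
     | Fail \<Rightarrow> (case Fail of Ok H \<Rightarrow> (\<exists>A'. IF c d D A' H \<and> bcount A' < bcount A)
       | Fail \<Rightarrow> (\<forall>u\<in>V. amk A u \<noteq> NBlue)))"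
    by (rule hoare_post[OF f_root1[OF I]]) (auto split: result.splits)
next
  let ?N = "bcount A"
  let ?Q = "\<lambda>Res. case Res of
     Ok H \<Rightarrow> (\<exists>A'. IF c d D A' H \<and> bcount A' < ?N)
   | Fail \<Rightarrow> (\<forall>u\<in>V. amk A u \<noteq> NBlue)"
  show "hoare (\<lambda>H. \<exists>v A'. IFI c d D v ?N A' H) (Seq (Loop FInner) (R unroot1)) ?Q"
  proof (rule hoare_pre)
    fix G1 assume "\<exists>v A'. IFI c d D v ?N A' G1"
    then obtain v A1 where I1: "IFI c d D v ?N A1 G1" by blast
    show "hoare ((=) G1) (Seq (Loop FInner) (R unroot1)) ?Q"
    proof (rule hoare_seq[where M = "\<lambda>H. \<exists>A'. IFI c d D v ?N A' H \<and>
          (\<forall>e\<in>E. src G0 e = v \<longrightarrow> aem A' e \<noteq> EUnmarked)"])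
      have h: "hoare (\<lambda>G. \<exists>a. IFI c d D v ?N a G) (Loop FInner)
         (\<lambda>Res. \<exists>a H. Res = Ok H \<and> IFI c d D v ?N a H \<and> (\<forall>e\<in>E. src G0 e = v \<longrightarrow> aem a e \<noteq> EUnmarked))"
        by (rule hoare_loop[where \<mu> = "\<lambda>a. ucount a v"]) (rule f_inner_body)
      show "hoare ((=) G1) (Loop FInner) (\<lambda>Res. case Res of Ok H \<Rightarrow> \<exists>A'. IFI c d D v ?N A' H \<and>
          (\<forall>e\<in>E. src G0 e = v \<longrightarrow> aem A' e \<noteq> EUnmarked) | Fail \<Rightarrow> ?Q Fail)"
        by (rule hoare_post[OF hoare_strengthen[OF h]]) (use I1 in \<open>auto split: result.splits\<close>)
    next
      show "hoare (\<lambda>H. \<exists>A'. IFI c d D v ?N A' H \<and>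
          (\<forall>e\<in>E. src G0 e = v \<longrightarrow> aem A' e \<noteq> EUnmarked)) (R unroot1) ?Q"
      proof (rule hoare_pre)
        fix G3 assume "\<exists>A'. IFI c d D v ?N A' G3 \<and> (\<forall>e\<in>E. src G0 e = v \<longrightarrow> aem A' e \<noteq> EUnmarked)"
        then obtain A3 where a: "IFI c d D v ?N A3 G3" "\<forall>e\<in>E. src G0 e = v \<longrightarrow> aem A3 e \<noteq> EUnmarked" by blast
        show "hoare ((=) G3) (R unroot1) ?Q"
          by (rule hoare_post[OF f_unroot1[OF a]]) (auto split: result.splits)
      qed
    qed
  qed
qed

end

context bf0 begin

lemma f_loop:
  assumes I: "IF c d D A G"
  shows "hoare ((=) G) (Loop FBody) (\<lambda>Res. \<exists>A H. Res = Ok H \<and> IF c d D A H \<and> (\<forall>u\<in>V. amk A u \<noteq> NBlue))"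
proof -
  have "hoare (\<lambda>G. \<exists>a. IF c d D a G) (Loop FBody) (\<lambda>Res. \<exists>a H. Res = Ok H \<and> IF c d D a H \<and>
     (\<forall>u\<in>V. amk a u \<noteq> NBlue))"
    by (rule hoare_loop[where \<mu> = "\<lambda>a. bcount a"]) (rule f_body)
  then show ?thesis
    by (rule hoare_strengthen) (use I in auto)
qed

lemma f_exit:
  assumes I: "IF c d D A H" and nb: "\<forall>u\<in>V. amk A u \<noteq> NBlue"
  shows "\<forall>e\<in>E. aem A e = EBlue" "acv A = -1 \<longleftrightarrow> (\<exists>e\<in>E. redE D e)" "amk A r = NGrey"
proof -
  have g: "\<forall>u\<in>V. u \<notin> Iso \<longrightarrow> amk A u = NGrey" using I nb unfolding IF_def FC_def marksF_def by auto
  show eb: "\<forall>e\<in>E. aem A e = EBlue"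
  proof
    fix e assume e: "e \<in> E"
    have "amk A (src G0 e) = NGrey" using g eV(1)[OF e] eIso(1)[OF e] by auto
    then show "aem A e = EBlue" using I e unfolding IF_def erule_def by auto
  qed
  show "acv A = -1 \<longleftrightarrow> (\<exists>e\<in>E. redE D e)" using I eb unfolding IF_def FC_def by auto
  show "amk A r = NGrey" using g rV rIso by auto
qed

lemma f_flag:
  assumes I: "IF c d D A G"
  shows "hoare ((=) G) (R flag) (\<lambda>Res. case Res of Ok H \<Rightarrow> acv A = -1 | Fail \<Rightarrow> acv A \<noteq> -1)"
proof (rule hoare_call1I)
  have St: "St c d A G" using I unfolding IF_def FC_def by blast
  fix H assume "apply_rule flag G H"
  then show "acv A = -1" using flag_step[OF St] by blast
next
  have St: "St c d A G" using I unfolding IF_def FC_def by blast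
  assume "\<not> (\<exists>H. apply_rule flag G H)"
  then show "acv A \<noteq> -1" using flag_app[OF St] by blast
qed

definition IFin :: "(nat \<Rightarrow> int option) \<Rightarrow> ast \<Rightarrow> hgraph \<Rightarrow> bool" where
  "IFin D A H \<longleftrightarrow> FinSt A H \<and> (\<forall>u\<in>V. alb A u = lbl D u) \<and> (\<forall>u\<in>V. amk A u \<in> {NGrey, NUnmarked}) \<and>
     (\<forall>u\<in>V. art A u = (u = r)) \<and> (\<forall>e\<in>E. aem A e = EBlue)"

lemma f_delete:
  assumes I: "IF c d D A G" and nb: "\<forall>u\<in>V. amk A u \<noteq> NBlue"
  shows "hoare ((=) G) (R delete_counter) (\<lambda>Res. case Res of Ok H \<Rightarrow> (\<exists>A'. IFin D A' H) | Fail \<Rightarrow> False)"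
proof (rule hoare_call1I)
  have St: "St c d A G" using I unfolding IF_def FC_def by blast
  note ex = f_exit[OF I nb]
  fix H assume "apply_rule delete_counter G H"
  then have F: "FinSt (A\<lparr>art := (art A)(r := True)\<rparr>) H" using delete_counter_step[OF St] by blast
  have "IFin D (A\<lparr>art := (art A)(r := True)\<rparr>) H"
    using F I nb ex unfolding IFin_def IF_def FC_def marksF_def noroot_def by auto
  then show "\<exists>A'. IFin D A' H" by blast
next
  have St: "St c d A G" using I unfolding IF_def FC_def by blast
  note ex = f_exit[OF I nb]
  assume "\<not> (\<exists>H. apply_rule delete_counter G H)"
  then show False using delete_counter_app[OF St ex(3)] by blast
qed

definition ucnt :: "ast \<Rightarrow> nat" where "ucnt A = card {u\<in>V. amk A u = NUnmarked}"

lemma f_ndi: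
  assumes I: "IFin D A G"
  shows "hoare ((=) G) (R no_deg_inv) (\<lambda>Res. case Res of
     Ok H \<Rightarrow> (\<exists>A'. IFin D A' H \<and> ucnt A' < ucnt A) | Fail \<Rightarrow> (\<forall>u\<in>V. amk A u \<noteq> NUnmarked))"
proof (rule hoare_call1I)
  have St: "FinSt A G" using I unfolding IFin_def by blast
  fix H assume "apply_rule no_deg_inv G H"
  then obtain v where v: "v \<in> V" "amk A v = NUnmarked" and F: "FinSt (A\<lparr>amk := (amk A)(v := NGrey)\<rparr>) H"
    using no_deg_inv_step[OF St] by blast
  have "IFin D (A\<lparr>amk := (amk A)(v := NGrey)\<rparr>) H" using I F unfolding IFin_def by auto
  moreover have "ucnt (A\<lparr>amk := (amk A)(v := NGrey)\<rparr>) < ucnt A"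
  proof -
    have eq: "{u\<in>V. ((amk A)(v := NGrey)) u = NUnmarked} = {u\<in>V. amk A u = NUnmarked} - {v}" using v by auto
    have "card ({u\<in>V. amk A u = NUnmarked} - {v}) < card {u\<in>V. amk A u = NUnmarked}"
      by (rule card_Diff1_less) (use finV v in auto)
    then show ?thesis using eq unfolding ucnt_def by simp
  qed
  ultimately show "\<exists>A'. IFin D A' H \<and> ucnt A' < ucnt A" by blast
next
  have St: "FinSt A G" using I unfolding IFin_def by blast
  assume "\<not> (\<exists>H. apply_rule no_deg_inv G H)"
  then show "\<forall>u\<in>V. amk A u \<noteq> NUnmarked" using no_deg_inv_app[OF St] by blast
qed

lemma f_ndi_loop:
  assumes I: "IFin D A G"
  shows "hoare ((=) G) (Loop (R no_deg_inv)) (\<lambda>Res. \<exists>A H. Res = Ok H \<and> IFin D A H \<and> (\<forall>u\<in>V. amk A u = NGrey))"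
proof -
  have "hoare (\<lambda>G. \<exists>a. IFin D a G) (Loop (R no_deg_inv)) (\<lambda>Res. \<exists>a H. Res = Ok H \<and> IFin D a H \<and>
     (\<forall>u\<in>V. amk a u \<noteq> NUnmarked))"
    by (rule hoare_loop[where \<mu> = "\<lambda>a. ucnt a"]) (rule f_ndi)
  then have "hoare ((=) G) (Loop (R no_deg_inv)) (\<lambda>Res. \<exists>a H. Res = Ok H \<and> IFin D a H \<and>
     (\<forall>u\<in>V. amk a u \<noteq> NUnmarked))"
    by (rule hoare_strengthen) (use I in auto)
  then show ?thesis
    by (rule hoare_post) (auto simp: IFin_def, fastforce)
qed

lemma Final_eq: "Final = Seq (Loop FBody) (Seq (If (R flag) FailC Skip) (Seq (R delete_counter) (Loop (R no_deg_inv))))"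
  unfolding Final_def FBody_def FInner_def by simp

definition FPost :: "(nat \<Rightarrow> int option) \<Rightarrow> result \<Rightarrow> bool" where
  "FPost D Res \<longleftrightarrow> (Res = Fail \<and> (\<exists>e\<in>E. redE D e)) \<or>
     (\<exists>A H. Res = Ok H \<and> \<not> (\<exists>e\<in>E. redE D e) \<and> IFin D A H \<and> (\<forall>u\<in>V. amk A u = NGrey))"

lemma final_hoare:
  assumes I: "IF c d D A G"
  shows "hoare ((=) G) Final (FPost D)"
  unfolding Final_eq
proof (rule hoare_seq[where M = "\<lambda>H. \<exists>A. IF c d D A H \<and> (\<forall>u\<in>V. amk A u \<noteq> NBlue)"])
  show "hoare ((=) G) (Loop FBody) (\<lambda>Res. case Res of Ok H \<Rightarrow> \<exists>A. IF c d D A H \<and> (\<forall>u\<in>V. amk A u \<noteq> NBlue)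
     | Fail \<Rightarrow> FPost D Fail)"
    by (rule hoare_post[OF f_loop[OF I]]) auto
next
  show "hoare (\<lambda>H. \<exists>A. IF c d D A H \<and> (\<forall>u\<in>V. amk A u \<noteq> NBlue))
    (Seq (If (R flag) FailC Skip) (Seq (R delete_counter) (Loop (R no_deg_inv)))) (FPost D)"
  proof (rule hoare_pre)
    fix G1 assume "\<exists>A. IF c d D A G1 \<and> (\<forall>u\<in>V. amk A u \<noteq> NBlue)"
    then obtain A1 where I1: "IF c d D A1 G1" "\<forall>u\<in>V. amk A1 u \<noteq> NBlue" by blast
    note ex = f_exit[OF I1]
    show "hoare ((=) G1) (Seq (If (R flag) FailC Skip) (Seq (R delete_counter) (Loop (R no_deg_inv)))) (FPost D)"
    proof (rule hoare_seq[where M = "\<lambda>H. H = G1 \<and> \<not> (\<exists>e\<in>E. redE D e)"])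
      show "hoare ((=) G1) (If (R flag) FailC Skip) (\<lambda>Res. case Res of Ok H \<Rightarrow> H = G1 \<and> \<not> (\<exists>e\<in>E. redE D e)
         | Fail \<Rightarrow> FPost D Fail)"
      proof (rule hoare_if[where T = "\<lambda>G'. acv A1 = -1" and F = "\<lambda>G'. acv A1 \<noteq> -1"])
        fix G2 assume h: "G1 = G2"
        show "hoare ((=) G2) (R flag) (\<lambda>Res. case Res of Ok H \<Rightarrow> acv A1 = -1 | Fail \<Rightarrow> acv A1 \<noteq> -1)"
          unfolding h[symmetric] by (rule f_flag[OF I1(1)])
      next
        fix G2 assume h: "G1 = G2" "acv A1 = -1"
        show "hoare ((=) G2) FailC (\<lambda>Res. case Res of Ok H \<Rightarrow> H = G1 \<and> \<not> (\<exists>e\<in>E. redE D e) | Fail \<Rightarrow> FPost D Fail)"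
          by (rule hoare_failc) (use h ex in \<open>simp add: FPost_def\<close>)
      next
        fix G2 assume h: "G1 = G2" "acv A1 \<noteq> -1"
        show "hoare ((=) G2) Skip (\<lambda>Res. case Res of Ok H \<Rightarrow> H = G1 \<and> \<not> (\<exists>e\<in>E. redE D e) | Fail \<Rightarrow> FPost D Fail)"
          by (rule hoare_skip) (use h ex in auto)
      qed
    next
      show "hoare (\<lambda>H. H = G1 \<and> \<not> (\<exists>e\<in>E. redE D e)) (Seq (R delete_counter) (Loop (R no_deg_inv))) (FPost D)"
      proof (rule hoare_pre)
        fix G2 assume h: "G2 = G1 \<and> \<not> (\<exists>e\<in>E. redE D e)"
        show "hoare ((=) G2) (Seq (R delete_counter) (Loop (R no_deg_inv))) (FPost D)"
        proof (rule hoare_seq[where M = "\<lambda>H. \<exists>A'. IFin D A' H"])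
          show "hoare ((=) G2) (R delete_counter) (\<lambda>Res. case Res of Ok H \<Rightarrow> \<exists>A'. IFin D A' H | Fail \<Rightarrow> FPost D Fail)"
            unfolding conjunct1[OF h] by (rule hoare_post[OF f_delete[OF I1]]) (auto split: result.splits)
        next
          show "hoare (\<lambda>H. \<exists>A'. IFin D A' H) (Loop (R no_deg_inv)) (FPost D)"
          proof (rule hoare_pre)
            fix G3 assume "\<exists>A'. IFin D A' G3"
            then obtain A3 where "IFin D A3 G3" by blast
            show "hoare ((=) G3) (Loop (R no_deg_inv)) (FPost D)"
              by (rule hoare_post[OF f_ndi_loop[OF \<open>IFin D A3 G3\<close>]]) (use h in \<open>auto simp: FPost_def\<close>)
          qed
        qed
      qed
    qed
  qed
qed

end

context bf0 begin

lemma bf_eq: "bellman_ford = Seq (R set_counter) (Seq (Loop (R count)) (Seq (Loop MainB) Final))"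
  unfolding bellman_ford_def MainB_def by simp

lemma sc_hoare: "hoare ((=) G0) (R set_counter) (\<lambda>Res. case Res of Ok H \<Rightarrow> (\<exists>c d. St c d A0 H) | Fail \<Rightarrow> False)"
  by (rule hoare_call1I) (use set_counter_step set_counter_app in auto)

definition BPost :: "result \<Rightarrow> bool" where
  "BPost Res \<longleftrightarrow> (\<exists>D. Q (n0 - 1) D \<and> S D \<and> FPost D Res)"

lemma bf_hoare: "hoare ((=) G0) bellman_ford BPost"
  unfolding bf_eq
proof (rule hoare_seq[where M = "\<lambda>H. \<exists>c d. St c d A0 H"])
  show "hoare ((=) G0) (R set_counter) (\<lambda>Res. case Res of Ok H \<Rightarrow> \<exists>c d. St c d A0 H | Fail \<Rightarrow> BPost Fail)"
    by (rule hoare_post[OF sc_hoare]) (auto split: result.splits)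
next
  show "hoare (\<lambda>H. \<exists>c d. St c d A0 H) (Seq (Loop (R count)) (Seq (Loop MainB) Final)) BPost"
  proof (rule hoare_pre)
    fix G1 assume "\<exists>c d. St c d A0 G1"
    then obtain c d where I1: "St c d A0 G1" by blast
    show "hoare ((=) G1) (Seq (Loop (R count)) (Seq (Loop MainB) Final)) BPost"
    proof (rule hoare_seq[where M = "\<lambda>H. \<exists>A. IM c d 0 A D0 H"])
      show "hoare ((=) G1) (Loop (R count)) (\<lambda>Res. case Res of Ok H \<Rightarrow> \<exists>A. IM c d 0 A D0 H | Fail \<Rightarrow> BPost Fail)"
        by (rule hoare_post[OF count_loop[OF I1]]) auto
    next
      show "hoare (\<lambda>H. \<exists>A. IM c d 0 A D0 H) (Seq (Loop MainB) Final) BPost"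
      proof (rule hoare_pre)
        fix G2 assume "\<exists>A. IM c d 0 A D0 G2"
        then obtain A2 where I2: "IM c d 0 A2 D0 G2" by blast
        show "hoare ((=) G2) (Seq (Loop MainB) Final) BPost"
        proof (rule hoare_seq[where M = "\<lambda>H. \<exists>A D. IM c d (n0 - 1) A D H"])
          show "hoare ((=) G2) (Loop MainB) (\<lambda>Res. case Res of Ok H \<Rightarrow> \<exists>A D. IM c d (n0 - 1) A D H | Fail \<Rightarrow> BPost Fail)"
            by (rule hoare_post[OF main_loop[OF I2]]) fastforce
        next
          show "hoare (\<lambda>H. \<exists>A D. IM c d (n0 - 1) A D H) Final BPost"
          proof (rule hoare_pre)
            fix G3 assume "\<exists>A D. IM c d (n0 - 1) A D G3"
            then obtain A3 D3 where I3: "IM c d (n0 - 1) A3 D3 G3" by blast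
            have QS: "Q (n0 - 1) D3" "S D3" using I3 unfolding IM_def by auto
            show "hoare ((=) G3) Final BPost"
              by (rule hoare_post[OF final_hoare[OF main_to_final[OF I3]]]) (use QS in \<open>auto simp: BPost_def\<close>)
          qed
        qed
      qed
    qed
  qed
qed

lemma W:
  assumes Q: "Q (n0 - 1) D" and w: "walk G0 r es v"
  shows "\<exists>t. D v = Some t"
proof -
  obtain es' where "dpath G0 r es' v" using walk_to_dpath[OF w] by blast
  moreover then have "length es' \<le> n0 - 1" using dpath_length[OF finV] by fastforce
  ultimately show ?thesis using Q unfolding Q_def dpath_def by blast
qed

lemma NC_eq: "NC G0 r = neg_cycle_reachable G0 r"
  unfolding NC_def neg_cycle_reachable_def by simp

lemma walk_edges: "walk G u es v \<Longrightarrow> set es \<subseteq> edges G"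
  by (induction es arbitrary: u) auto

lemma neg_red:
  assumes Q: "Q (n0 - 1) D" and neg: "neg_cycle_reachable G0 r"
  shows "\<exists>e\<in>E. redE D e"
proof (rule ccontr)
  assume nr: "\<not> (\<exists>e\<in>E. redE D e)"
  obtain x cs p where cyc: "dcycle G0 x cs" "path_weight G0 cs < 0" "dpath G0 r p x"
    using neg unfolding neg_cycle_reachable_def reachable_def by blast
  have wc: "walk G0 x cs x" using cyc(1) unfolding dcycle_def by blast
  have wp: "walk G0 r p x" using cyc(3) unfolding dpath_def by blast
  let ?h = "\<lambda>y. the (D y)"
  have "\<forall>e\<in>set cs. ?h (tgt G0 e) \<le> ?h (src G0 e) + wt G0 e"
  proof
    fix e assume e: "e \<in> set cs"
    have eE: "e \<in> E" using walk_edges[OF wc] e by auto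
    obtain a b where ab: "cs = a @ e # b" "walk G0 x a (src G0 e)" "walk G0 (tgt G0 e) b x"
      using walk_split[OF wc e] by blast
    have w1: "walk G0 r (p @ a) (src G0 e)" using wp ab(2) walk_append by blast
    have w2: "walk G0 r ((p @ a) @ [e]) (tgt G0 e)"
      using w1 eE eV[OF eE] walk_snoc[of G0 r "p @ a" e "tgt G0 e"] by simp
    obtain s t where st: "D (src G0 e) = Some s" "D (tgt G0 e) = Some t" using W[OF Q w1] W[OF Q w2] by blast
    then have "\<not> (s + wt G0 e < t)" using nr eE unfolding redE_def by blast
    then show "?h (tgt G0 e) \<le> ?h (src G0 e) + wt G0 e" using st by simp
  qed
  then have "?h x \<le> ?h x + path_weight G0 cs" using telescope[of G0 x cs x ?h] wc by blast
  then show False using cyc(2) by simp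
qed

lemma noneg_nored:
  assumes Q: "Q (n0 - 1) D" and S: "S D" and nn: "\<not> neg_cycle_reachable G0 r"
  shows "\<not> (\<exists>e\<in>E. redE D e)"
proof
  assume "\<exists>e\<in>E. redE D e"
  then obtain e s t where e: "e \<in> E" "D (src G0 e) = Some s" "D (tgt G0 e) = Some t" "s + wt G0 e < t"
    unfolding redE_def by blast
  obtain es where es: "walk G0 r es (src G0 e)" "path_weight G0 es = s" using S e(2) unfolding S_def by blast
  have w: "walk G0 r (es @ [e]) (tgt G0 e)" using es(1) e(1) eV[OF e(1)] by (simp add: walk_snoc)
  obtain p where p: "dpath G0 r p (tgt G0 e)" "path_weight G0 p \<le> path_weight G0 (es @ [e])"
    using walk_to_dpath[OF w] nn NC_eq by blast
  have "length p \<le> n0 - 1" using dpath_length[OF finV p(1)] by simp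
  then have "t \<le> path_weight G0 p" using Q p(1) e(3) unfolding Q_def dpath_def by fastforce
  moreover have "path_weight G0 (es @ [e]) = s + wt G0 e" using es(2) by (simp add: path_weight_append path_weight_def)
  ultimately show False using p(2) e(4) by simp
qed

lemma noneg_dist:
  assumes Q: "Q (n0 - 1) D" and S: "S D" and nn: "\<not> neg_cycle_reachable G0 r" and v: "v \<in> V"
  shows "D v = (if reachable G0 r v then Some (dist G0 r v) else None)"
proof (cases "reachable G0 r v")
  case True
  then obtain p where p: "dpath G0 r p v" unfolding reachable_def by blast
  obtain t where t: "D v = Some t" using W[OF Q] p unfolding dpath_def by blast
  obtain es where es: "walk G0 r es v" "path_weight G0 es = t" using S t unfolding S_def by blast
  obtain q where q: "dpath G0 r q v" "path_weight G0 q \<le> t"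
    using walk_to_dpath[OF es(1)] nn NC_eq es(2) by fastforce
  have le: "\<And>q'. dpath G0 r q' v \<Longrightarrow> t \<le> path_weight G0 q'"
  proof -
    fix q' assume q': "dpath G0 r q' v"
    have "length q' \<le> n0 - 1" using dpath_length[OF finV q'] by simp
    then show "t \<le> path_weight G0 q'" using Q q' t unfolding Q_def dpath_def by fastforce
  qed
  have tq: "t = path_weight G0 q" using le[OF q(1)] q(2) by simp
  have fin: "finite {path_weight G0 es | es. dpath G0 r es v}"
  proof -
    have "{path_weight G0 es | es. dpath G0 r es v} = path_weight G0 ` {es. dpath G0 r es v}" by auto
    then show ?thesis using finite_dpaths[OF finE] by simp
  qed
  have "dist G0 r v = t"
    unfolding dist_def
    by (rule Min_eqI[OF fin]) (use le q(1) tq in auto)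
  then show ?thesis using True t by simp
next
  case False
  have "D v = None"
  proof (rule ccontr)
    assume "D v \<noteq> None"
    then obtain t where "D v = Some t" by blast
    then obtain es where "walk G0 r es v" using S unfolding S_def by blast
    then obtain p where "dpath G0 r p v" using walk_to_dpath by blast
    then show False using False unfolding reachable_def by blast
  qed
  then show ?thesis using False by simp
qed

lemma final_iso:
  assumes I: "IFin D A H" and g: "\<forall>u\<in>V. amk A u = NGrey"
    and dv: "\<forall>v\<in>V. D v = (if reachable G0 r v then Some (dist G0 r v) else None)"
  shows "iso H (bf_output G0 r)"
proof -
  have F: "FinSt A H" using I unfolding IFin_def by blast
  have inj: "inj_on (af A) V" and nodes: "nodes H = af A ` V" and edg: "edges H = E"
    and fixa: "\<forall>v\<in>V. v \<notin> Iso \<longrightarrow> af A v = v"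
    using F unfolding FinSt_def by auto
  let ?f = "inv_into V (af A)"
  have bij: "bij_betw ?f (nodes H) (nodes (bf_output G0 r))"
    unfolding nodes by (simp add: bf_output_def bij_betw_inv_into inj_on_imp_bij_betw[OF inj])
  have bije: "bij_betw id (edges H) (edges (bf_output G0 r))"
    unfolding edg by (simp add: bf_output_def)
  have fsrc: "\<And>e. e \<in> E \<Longrightarrow> ?f (src G0 e) = src G0 e"
  proof -
    fix e assume e: "e \<in> E"
    have "af A (src G0 e) = src G0 e" using fixa eV(1)[OF e] eIso(1)[OF e] by auto
    then show "?f (src G0 e) = src G0 e" using inv_into_f_f[OF inj eV(1)[OF e]] by simp
  qed
  have ftgt: "\<And>e. e \<in> E \<Longrightarrow> ?f (tgt G0 e) = tgt G0 e"
  proof -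
    fix e assume e: "e \<in> E"
    have "af A (tgt G0 e) = tgt G0 e" using fixa eV(2)[OF e] eIso(2)[OF e] by auto
    then show "?f (tgt G0 e) = tgt G0 e" using inv_into_f_f[OF inj eV(2)[OF e]] by simp
  qed
  have E1: "\<forall>e\<in>edges H. src (bf_output G0 r) (id e) = ?f (src H e) \<and> tgt (bf_output G0 r) (id e) = ?f (tgt H e) \<and>
                    elab (bf_output G0 r) (id e) = elab H e \<and> emark (bf_output G0 r) (id e) = emark H e"
    using F I fsrc ftgt unfolding FinSt_def IFin_def edg by (auto simp: bf_output_def)
  have N1: "\<forall>v\<in>nodes H. nlab (bf_output G0 r) (?f v) = nlab H v \<and> nmark (bf_output G0 r) (?f v) = nmark H v \<and>
                    isroot (bf_output G0 r) (?f v) = isroot H v"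
  proof
    fix v' assume "v' \<in> nodes H"
    then obtain v where v: "v \<in> V" "v' = af A v" using nodes by auto
    have fv: "?f v' = v" using inv_into_f_f[OF inj v(1)] v(2) by simp
    have l: "nlab H v' = lbl D v" "nmark H v' = NGrey" "isroot H v' = (v = r)"
      using F I g v unfolding FinSt_def IFin_def by auto
    have "nlab (bf_output G0 r) v = lbl D v"
      using dv v(1) unfolding bf_output_def lbl_def by auto
    moreover have "nmark (bf_output G0 r) v = NGrey" using allgrey v(1) by (simp add: bf_output_def)
    moreover have "isroot (bf_output G0 r) v = (v = r)" using onlyroot rroot v(1) by (auto simp: bf_output_def)
    ultimately show "nlab (bf_output G0 r) (?f v') = nlab H v' \<and> nmark (bf_output G0 r) (?f v') = nmark H v' \<and>
                    isroot (bf_output G0 r) (?f v') = isroot H v'" using fv l by simp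
  qed
  show ?thesis unfolding iso_def using bij bije E1 N1 by blast
qed

end


theorem mainTheorem7:
  fixes G :: hgraph and r :: nat
  assumes "wf_hgraph G"
    and "\<forall>v\<in>nodes G. nmark G v = NGrey"
    and "r \<in> nodes G" and "isroot G r" and "\<forall>v\<in>nodes G. isroot G v \<longrightarrow> v = r"
    and "\<forall>e\<in>edges G. emark G e = EUnmarked"
    and "\<forall>e\<in>edges G. \<exists>w. elab G e = [AInt w]"
    and "\<forall>e\<in>edges G. src G e \<noteq> tgt G e"
  shows "terminates bellman_ford G \<and>
    (if neg_cycle_reachable G r
     then exec bellman_ford G Fail \<and> (\<forall>Res. exec bellman_ford G Res \<longrightarrow> Res = Fail)
     else (\<exists>H. exec bellman_ford G (Ok H)) \<and>
          (\<forall>Res. exec bellman_ford G Res \<longrightarrow> (\<exists>H. Res = Ok H \<and> iso H (bf_output G r))))"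
proof -
  interpret bf0 G r by (rule bf0.intro) (use assms in blast)+
  have h: "hoare ((=) G) bellman_ford BPost" by (rule bf_hoare)
  then have TEA: "terminates bellman_ford G \<and> (\<exists>Res. exec bellman_ford G Res) \<and>
    (\<forall>Res. exec bellman_ford G Res \<longrightarrow> BPost Res)"
    unfolding hoare_def by blast
  have T: "terminates bellman_ford G" using TEA by blast
  have Ex: "\<exists>Res. exec bellman_ford G Res" using TEA by blast
  have All: "\<forall>Res. exec bellman_ford G Res \<longrightarrow> BPost Res" using TEA by blast
  show ?thesis
  proof (cases "neg_cycle_reachable G r")
    case True
    have allF: "\<forall>Res. exec bellman_ford G Res \<longrightarrow> Res = Fail"
    proof (intro allI impI)
      fix Res assume "exec bellman_ford G Res"
      then obtain D where QS: "Q (n0 - 1) D" "S D" and fp: "FPost D Res" using All unfolding BPost_def by blast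
      have "\<exists>e\<in>E. redE D e" using neg_red[OF QS(1) True] .
      then show "Res = Fail" using fp unfolding FPost_def by blast
    qed
    obtain Res where "exec bellman_ford G Res" using Ex by blast
    then have "exec bellman_ford G Fail" using allF by auto
    then show ?thesis using T allF True by (simp only: if_True, blast?)
  next
    case False
    have allO: "\<forall>Res. exec bellman_ford G Res \<longrightarrow> (\<exists>H. Res = Ok H \<and> iso H (bf_output G r))"
    proof (intro allI impI)
      fix Res assume "exec bellman_ford G Res"
      then obtain D where QS: "Q (n0 - 1) D" "S D" and fp: "FPost D Res" using All unfolding BPost_def by blast
      have nr: "\<not> (\<exists>e\<in>E. redE D e)" using noneg_nored[OF QS False] .
      then obtain A H where AH: "Res = Ok H" "IFin D A H" "\<forall>u\<in>V. amk A u = NGrey"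
        using fp unfolding FPost_def by blast
      have "\<forall>v\<in>V. D v = (if reachable G r v then Some (dist G r v) else None)"
        using noneg_dist[OF QS False] by blast
      then have "iso H (bf_output G r)" using final_iso[OF AH(2,3)] by blast
      then show "\<exists>H. Res = Ok H \<and> iso H (bf_output G r)" using AH(1) by blast
    qed
    obtain Res where "exec bellman_ford G Res" using Ex by blast
    then have "\<exists>H. exec bellman_ford G (Ok H)" using allO by blast
    then show ?thesis using T allO False by (simp only: if_False, blast?)
  qed
qed

end
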